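(* Let $L/K$ be a nontrivial finite extension inside $\bar K$, $G={\rm Gal}(\tilde L/K)$, $H={\rm Gal}(\tilde L/L)$, and $H^G$ the normal closure of $H$ in $G$. (1) $F=\tilde L^{H^G}$ is the unique intermediate field $K\subseteq F\subseteq L$ such that $F/K$ is Galois of maximum possible degree (among subfields of $L$ Galois over $K$). (2) Define the ascending index $t_K(L)=[F:K]$ and $u_K(L)=[L:F]$. Then $t_K(L)\,u_K(L)=[L:K]$, $t_K(L)=[G:H^G]$, $u_K(L)=[H^G:H]$, and $r_K(L)\mid t_K(L)\,r_F(L)$. (3) There is a unique strictly ascending chain of fields $K=F_0\subsetneq F_1\subsetneq\cdots\subsetneq F_k$ inside $L$ such that for all $i\ge1$, $F_i/F_{i-1}$ is Galois of maximum possible degree among subfields of $L$ Galois over $F_{i-1}$, the chain terminating at $F_k$ with $t_{F_k}(L)=1$. It corresponds (via $F_i=\tilde L^{G_i}$) to the unique strictly descending chain of subgroups $G=G_0\supsetneq G_1\supsetneq\cdots\supsetneq G_k$ with $G_i=H^{G_{i-1}}$ (the normal closure of $H$ in $G_{i-1}$) and $H^{G_k}=G_k$; moreover $t_{F_i}(L)=[G_i:G_{i+1}]$ and $u_{F_i}(L)=[G_{i+1}:H]$. (4) $F_k=L$ iff $L/F_{k-1}$ is Galois. (5) $t_K(L)=1$ iff $H^G=G$ iff the chain in (3) is the singleton $K$. (6) $L/K$ is Galois iff $H^G=1$ iff $H^G=H$ iff the chain in (3) is $K\subsetneq L$. (7) $H$ is a proper normal subgroup of $H^G$ iff ($H^G\ne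 G$, $H^G\neq H$ and $H\trianglelefteq H^G$) iff the chain in (3) is $K\subsetneq F\subsetneq L$.
   Context: $K$ is a perfect field with a fixed algebraic closure $\bar K$; all extensions are finite and contained in $\bar K$. For a finite extension $L/K$, $\tilde L$ denotes its Galois closure in $\bar K$. Writing $L=K(\alpha)$ with $f$ the minimal polynomial of $\alpha$ over $K$, the cluster size $r_K(L)$ is the number of roots of $f$ lying in $L$ (independent of $\alpha$; it equals $|{\rm Aut}(L/K)|$); for an intermediate field $E$, $r_E(L)$ and $t_E(L)$ are defined in the same way with base field $E$. For a subgroup $H$ of a group $G$, $H^G$ is the intersection of all normal subgroups of $G$ containing $H$. *)

theory Defs
  imports "HOL-Algebra.Coset" "HOL-Computational_Algebra.Polynomial"
begin

section \<open>Fields inside an ambient field (playing the role of the algebraic closure)\<close>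

definition is_subfield :: "'a::field set \<Rightarrow> bool" where
  "is_subfield S \<longleftrightarrow> 0 \<in> S \<and> 1 \<in> S \<and>
     (\<forall>x\<in>S. \<forall>y\<in>S. x + y \<in> S \<and> x - y \<in> S \<and> x * y \<in> S) \<and>
     (\<forall>x\<in>S. x \<noteq> 0 \<longrightarrow> inverse x \<in> S)"

definition poly_over :: "'a::field set \<Rightarrow> 'a poly \<Rightarrow> bool" where
  "poly_over E p \<longleftrightarrow> (\<forall>i. coeff p i \<in> E)"

definition irred_over :: "'a::field set \<Rightarrow> 'a poly \<Rightarrow> bool" where
  "irred_over E p \<longleftrightarrow> poly_over E p \<and> degree p \<ge> 1 \<and>
     \<not> (\<exists>q s. poly_over E q \<and> poly_over E s \<and> degree q \<ge> 1 \<and> degree s \<ge> 1 \<and> p = q * s)"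

definition minpoly :: "'a::field set \<Rightarrow> 'a \<Rightarrow> 'a poly" where
  "minpoly E x = (THE p. lead_coeff p = 1 \<and> irred_over E p \<and> poly p x = 0)"

definition algebraic_over :: "'a::field set \<Rightarrow> 'a \<Rightarrow> bool" where
  "algebraic_over E x \<longleftrightarrow> (\<exists>p. poly_over E p \<and> p \<noteq> 0 \<and> poly p x = 0)"

definition alg_closed_type :: "'a::field itself \<Rightarrow> bool" where
  "alg_closed_type _ \<longleftrightarrow> (\<forall>p::'a poly. degree p \<ge> 1 \<longrightarrow> (\<exists>z. poly p z = 0))"

definition is_alg_closure_of :: "'a::field set \<Rightarrow> bool" where
  "is_alg_closure_of K \<longleftrightarrow> alg_closed_type TYPE('a) \<and> (\<forall>x::'a. algebraic_over K x)"

definition perfect_subfield :: "'a::field set \<Rightarrow> bool" where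
  "perfect_subfield K \<longleftrightarrow> is_subfield K \<and>
     (CHAR('a) = 0 \<or> (\<forall>x\<in>K. \<exists>y\<in>K. y ^ CHAR('a) = x))"

definition span_over :: "'a::field set \<Rightarrow> 'a set \<Rightarrow> 'a set" where
  "span_over E B = {x. \<exists>c. (\<forall>b\<in>B. c b \<in> E) \<and> x = (\<Sum>b\<in>B. c b * b)}"

definition indep_over :: "'a::field set \<Rightarrow> 'a set \<Rightarrow> bool" where
  "indep_over E B \<longleftrightarrow> (\<forall>c. (\<forall>b\<in>B. c b \<in> E) \<and> (\<Sum>b\<in>B. c b * b) = 0 \<longrightarrow> (\<forall>b\<in>B. c b = 0))"

definition basis_over :: "'a::field set \<Rightarrow> 'a set \<Rightarrow> 'a set \<Rightarrow> bool" where
  "basis_over E M B \<longleftrightarrow> finite B \<and> B \<subseteq> M \<and> indep_over E B \<and> span_over E B = M"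

definition finite_ext :: "'a::field set \<Rightarrow> 'a set \<Rightarrow> bool" where
  "finite_ext E M \<longleftrightarrow> is_subfield E \<and> is_subfield M \<and> E \<subseteq> M \<and> (\<exists>B. basis_over E M B)"

definition ext_degree :: "'a::field set \<Rightarrow> 'a set \<Rightarrow> nat" where
  "ext_degree E M = (if finite_ext E M then card (SOME B. basis_over E M B) else 0)"

definition normal_ext :: "'a::field set \<Rightarrow> 'a set \<Rightarrow> bool" where
  "normal_ext E M \<longleftrightarrow> (\<forall>x\<in>M. \<forall>y. poly (minpoly E x) y = 0 \<longrightarrow> y \<in> M)"

definition separable_ext :: "'a::field set \<Rightarrow> 'a set \<Rightarrow> bool" where
  "separable_ext E M \<longleftrightarrow> (\<forall>x\<in>M. rsquarefree (minpoly E x))"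

definition galois_ext :: "'a::field set \<Rightarrow> 'a set \<Rightarrow> bool" where
  "galois_ext E M \<longleftrightarrow> finite_ext E M \<and> normal_ext E M \<and> separable_ext E M"

definition gal_closure :: "'a::field set \<Rightarrow> 'a set \<Rightarrow> 'a set" where
  "gal_closure E L = \<Inter> {M. L \<subseteq> M \<and> galois_ext E M}"

definition adjoin :: "'a::field set \<Rightarrow> 'a \<Rightarrow> 'a set" where
  "adjoin E a = \<Inter> {M. is_subfield M \<and> E \<subseteq> M \<and> a \<in> M}"

text \<open>Cluster size r_E(L): number of roots in L of the minimal polynomial over E of a
  primitive element of L/E.\<close>
definition cluster_size :: "'a::field set \<Rightarrow> 'a set \<Rightarrow> nat" where
  "cluster_size E L = (let a = (SOME a. a \<in> L \<and> adjoin E a = L)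
                        in card {y \<in> L. poly (minpoly E a) y = 0})"

definition aut :: "'a::field set \<Rightarrow> 'a set \<Rightarrow> ('a \<Rightarrow> 'a) set" where
  "aut M E = {\<sigma>. bij_betw \<sigma> M M \<and>
     (\<forall>x\<in>M. \<forall>y\<in>M. \<sigma> (x + y) = \<sigma> x + \<sigma> y \<and> \<sigma> (x * y) = \<sigma> x * \<sigma> y) \<and>
     (\<forall>x\<in>E. \<sigma> x = x) \<and> (\<forall>x. x \<notin> M \<longrightarrow> \<sigma> x = x)}"

definition galgrp :: "'a::field set \<Rightarrow> 'a set \<Rightarrow> ('a \<Rightarrow> 'a) monoid" where
  "galgrp M E = \<lparr>carrier = aut M E, monoid.mult = (\<lambda>f g. f \<circ> g), one = id\<rparr>"

definition fix_field :: "'a::field set \<Rightarrow> ('a \<Rightarrow> 'a) set \<Rightarrow> 'a set" where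
  "fix_field M S = {x \<in> M. \<forall>\<sigma>\<in>S. \<sigma> x = x}"

definition ncl :: "('g, 'b) monoid_scheme \<Rightarrow> 'g set \<Rightarrow> 'g set" where
  "ncl G H = \<Inter> {N. N \<lhd> G \<and> H \<subseteq> N}"

definition idx :: "('g, 'b) monoid_scheme \<Rightarrow> 'g set \<Rightarrow> nat" where
  "idx G H = card (rcosets\<^bsub>G\<^esub> H)"

definition asc_field :: "'a::field set \<Rightarrow> 'a set \<Rightarrow> 'a set" where
  "asc_field E L = (let M = gal_closure E L
                    in fix_field M (ncl (galgrp M E) (aut M L)))"

definition t_idx :: "'a::field set \<Rightarrow> 'a set \<Rightarrow> nat" where
  "t_idx E L = ext_degree E (asc_field E L)"

definition u_idx :: "'a::field set \<Rightarrow> 'a set \<Rightarrow> nat" where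
  "u_idx E L = ext_degree (asc_field E L) L"

definition asc_chain :: "'a::field set \<Rightarrow> 'a set \<Rightarrow> 'a set list \<Rightarrow> bool" where
  "asc_chain K L cs \<longleftrightarrow> cs \<noteq> [] \<and> cs ! 0 = K \<and>
     (\<forall>i. Suc i < length cs \<longrightarrow>
        cs ! i \<subset> cs ! Suc i \<and> cs ! Suc i \<subseteq> L \<and> galois_ext (cs ! i) (cs ! Suc i) \<and>
        (\<forall>E. cs ! i \<subseteq> E \<and> E \<subseteq> L \<and> galois_ext (cs ! i) E \<longrightarrow>
              ext_degree (cs ! i) E \<le> ext_degree (cs ! i) (cs ! Suc i))) \<and>
     t_idx (last cs) L = 1"

definition desc_chain :: "('g, 'b) monoid_scheme \<Rightarrow> 'g set \<Rightarrow> 'g set list \<Rightarrow> bool" where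
  "desc_chain G H gs \<longleftrightarrow> gs \<noteq> [] \<and> gs ! 0 = carrier G \<and>
     (\<forall>i. Suc i < length gs \<longrightarrow>
        gs ! Suc i = ncl (G\<lparr>carrier := gs ! i\<rparr>) H \<and> gs ! Suc i \<subset> gs ! i) \<and>
     ncl (G\<lparr>carrier := last gs\<rparr>) H = last gs"

end

theory Submission
  imports Defs "HOL-Computational_Algebra.Primes" "HOL-Algebra.Embedded_Algebras"
    "HOL-Algebra.Multiplicative_Group"
begin

hide_const (open) UnivPoly.monom UnivPoly.coeff Module.smult


lemma sf_zero: "is_subfield S \<Longrightarrow> 0 \<in> S" by (simp add: is_subfield_def)
lemma sf_one: "is_subfield S \<Longrightarrow> 1 \<in> S" by (simp add: is_subfield_def)
lemma sf_add: "is_subfield S \<Longrightarrow> x \<in> S \<Longrightarrow> y \<in> S \<Longrightarrow> x + y \<in> S" by (simp add: is_subfield_def)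
lemma sf_diff: "is_subfield S \<Longrightarrow> x \<in> S \<Longrightarrow> y \<in> S \<Longrightarrow> x - y \<in> S" by (simp add: is_subfield_def)
lemma sf_mult: "is_subfield S \<Longrightarrow> x \<in> S \<Longrightarrow> y \<in> S \<Longrightarrow> x * y \<in> S" by (simp add: is_subfield_def)
lemma sf_uminus: "is_subfield S \<Longrightarrow> x \<in> S \<Longrightarrow> - x \<in> S"
  using sf_diff[of S 0 x] sf_zero[of S] by simp
lemma sf_inverse: "is_subfield S \<Longrightarrow> x \<in> S \<Longrightarrow> inverse x \<in> S"
  by (cases "x = 0") (auto simp: is_subfield_def)
lemma sf_divide: "is_subfield S \<Longrightarrow> x \<in> S \<Longrightarrow> y \<in> S \<Longrightarrow> x / y \<in> S"
  by (simp add: divide_inverse sf_mult sf_inverse)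
lemma sf_power: "is_subfield S \<Longrightarrow> x \<in> S \<Longrightarrow> x ^ n \<in> S"
  by (induction n) (auto simp: sf_one sf_mult)
lemma sf_sum: "is_subfield S \<Longrightarrow> (\<And>i. i \<in> A \<Longrightarrow> f i \<in> S) \<Longrightarrow> sum f A \<in> S"
  by (induction A rule: infinite_finite_induct) (auto simp: sf_zero sf_add)
lemma sf_prod: "is_subfield S \<Longrightarrow> (\<And>i. i \<in> A \<Longrightarrow> f i \<in> S) \<Longrightarrow> prod f A \<in> S"
  by (induction A rule: infinite_finite_induct) (auto simp: sf_one sf_mult)
lemma sf_of_nat: "is_subfield S \<Longrightarrow> of_nat n \<in> S"
  by (induction n) (auto simp: sf_zero sf_one sf_add)
lemma sf_UNIV: "is_subfield UNIV" by (simp add: is_subfield_def)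
lemma sf_Inter: "(\<And>M. M \<in> \<M> \<Longrightarrow> is_subfield M) \<Longrightarrow> is_subfield (\<Inter>\<M>)"
  unfolding is_subfield_def by blast
lemma sf_Int: "is_subfield A \<Longrightarrow> is_subfield B \<Longrightarrow> is_subfield (A \<inter> B)"
  unfolding is_subfield_def by blast

lemma adjoin_sf: "is_subfield (adjoin E a)"
  unfolding adjoin_def by (rule sf_Inter) auto
lemma adjoin_base: "E \<subseteq> adjoin E a"
  unfolding adjoin_def by auto
lemma adjoin_gen: "a \<in> adjoin E a"
  unfolding adjoin_def by auto
lemma adjoin_least: "is_subfield M \<Longrightarrow> E \<subseteq> M \<Longrightarrow> a \<in> M \<Longrightarrow> adjoin E a \<subseteq> M"
  unfolding adjoin_def by auto

lemma po_coeff: "poly_over E p \<Longrightarrow> coeff p i \<in> E"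
  by (simp add: poly_over_def)
lemma po_mono: "poly_over E p \<Longrightarrow> E \<subseteq> E' \<Longrightarrow> poly_over E' p"
  by (auto simp: poly_over_def)
lemma po_0: "is_subfield E \<Longrightarrow> poly_over E 0"
  by (simp add: poly_over_def sf_zero)
lemma po_const: "is_subfield E \<Longrightarrow> c \<in> E \<Longrightarrow> poly_over E [:c:]"
  by (simp add: poly_over_def sf_zero coeff_pCons split: nat.splits)
lemma po_1: "is_subfield E \<Longrightarrow> poly_over E 1"
  by (simp add: one_pCons po_const sf_one)
lemma po_pCons: "is_subfield E \<Longrightarrow> poly_over E (pCons a p) \<longleftrightarrow> a \<in> E \<and> poly_over E p"
  unfolding poly_over_def
  by (auto simp: coeff_pCons split: nat.splits)
lemma po_add: "is_subfield E \<Longrightarrow> poly_over E p \<Longrightarrow> poly_over E q \<Longrightarrow> poly_over E (p + q)"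
  by (simp add: poly_over_def sf_add)
lemma po_diff: "is_subfield E \<Longrightarrow> poly_over E p \<Longrightarrow> poly_over E q \<Longrightarrow> poly_over E (p - q)"
  by (simp add: poly_over_def sf_diff)
lemma po_uminus: "is_subfield E \<Longrightarrow> poly_over E p \<Longrightarrow> poly_over E (- p)"
  by (simp add: poly_over_def sf_uminus)
lemma po_smult: "is_subfield E \<Longrightarrow> c \<in> E \<Longrightarrow> poly_over E p \<Longrightarrow> poly_over E (smult c p)"
  by (simp add: poly_over_def sf_mult)
lemma po_mult: "is_subfield E \<Longrightarrow> poly_over E p \<Longrightarrow> poly_over E q \<Longrightarrow> poly_over E (p * q)"
  unfolding poly_over_def coeff_mult by (auto intro!: sf_sum sf_mult)
lemma po_power: "is_subfield E \<Longrightarrow> poly_over E p \<Longrightarrow> poly_over E (p ^ n)"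
  by (induction n) (auto simp: po_1 po_mult)
lemma po_monom: "is_subfield E \<Longrightarrow> c \<in> E \<Longrightarrow> poly_over E (monom c n)"
  by (simp add: poly_over_def coeff_monom sf_zero)
lemma po_X: "is_subfield E \<Longrightarrow> poly_over E [:a, 1:] \<longleftrightarrow> a \<in> E"
  by (simp add: po_pCons po_const sf_one po_0)
lemma po_prod: "is_subfield E \<Longrightarrow> (\<And>i. i \<in> A \<Longrightarrow> poly_over E (f i)) \<Longrightarrow> poly_over E (prod f A)"
  by (induction A rule: infinite_finite_induct) (auto simp: po_1 po_mult)
lemma po_sum: "is_subfield E \<Longrightarrow> (\<And>i. i \<in> A \<Longrightarrow> poly_over E (f i)) \<Longrightarrow> poly_over E (sum f A)"
  by (induction A rule: infinite_finite_induct) (auto simp: po_0 po_add)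
lemma po_pcompose: "is_subfield E \<Longrightarrow> poly_over E p \<Longrightarrow> poly_over E q \<Longrightarrow> poly_over E (pcompose p q)"
  by (induction p) (auto simp: pcompose_pCons po_pCons po_add po_mult po_const po_0)
lemma po_pderiv: "is_subfield E \<Longrightarrow> poly_over E p \<Longrightarrow> poly_over E (pderiv p)"
  by (auto simp add: poly_over_def coeff_pderiv intro!: sf_mult sf_add sf_one sf_of_nat)
lemma po_poly: "is_subfield E \<Longrightarrow> poly_over E p \<Longrightarrow> x \<in> E \<Longrightarrow> poly p x \<in> E"
  by (induction p) (auto simp: po_pCons sf_add sf_mult sf_zero)
lemma po_lead_coeff: "poly_over E p \<Longrightarrow> lead_coeff p \<in> E"
  by (simp add: po_coeff)

lemma degree_cancel_lemma:
  fixes p m :: "'a::field poly"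
  assumes "m \<noteq> 0" "degree m \<le> degree p" "p \<noteq> 0"
  defines "c \<equiv> lead_coeff p / lead_coeff m"
  defines "d \<equiv> degree p - degree m"
  shows "p - monom c d * m = 0 \<or> degree (p - monom c d * m) < degree p"
proof -
  let ?q = "p - monom c d * m"
  have lm: "lead_coeff m \<noteq> 0" using assms by simp
  have dm: "degree (monom c d * m) \<le> degree p"
    by (metis add.commute assms(2) d_def degree_monom_le degree_mult_le dual_order.trans
        le_add_diff_inverse2 add_le_mono1 order_refl)
  have dq: "degree ?q \<le> degree p"
    using dm by (simp add: degree_diff_le)
  have "coeff (monom c d * m) (degree p) = c * lead_coeff m"
    using assms(2) by (simp add: coeff_monom_mult d_def)
  then have cq: "coeff ?q (degree p) = 0"
    using lm by (simp add: c_def)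
  show ?thesis
  proof (cases "?q = 0")
    case False
    then have "degree ?q \<noteq> degree p" using cq by (metis leading_coeff_0_iff)
    then show ?thesis using dq by simp
  qed simp
qed

lemma po_divmod:
  fixes p m :: "'a::field poly"
  assumes E: "is_subfield E" and p: "poly_over E p" and m: "poly_over E m"
  shows "poly_over E (p div m) \<and> poly_over E (p mod m)"
  using p
proof (induction "degree p" arbitrary: p rule: less_induct)
  case less
  show ?case
  proof (cases "m = 0 \<or> p = 0 \<or> degree p < degree m")
    case True
    then show ?thesis
      using less.prems E by (auto simp: div_poly_less mod_poly_less po_0)
  next
    case False
    then have m0: "m \<noteq> 0" and p0: "p \<noteq> 0" and dd: "degree m \<le> degree p" by auto
    define c where "c = lead_coeff p / lead_coeff m"
    define d where "d = degree p - degree m"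
    define q where "q = p - monom c d * m"
    have cE: "c \<in> E" unfolding c_def using less.prems m E by (simp add: po_coeff sf_divide)
    have qE: "poly_over E q" unfolding q_def
      by (intro po_diff po_mult po_monom E less.prems m cE)
    have pq: "p = q + monom c d * m" by (simp add: q_def)
    have div: "p div m = q div m + monom c d"
      using pq m0 by (metis div_mult_self1 add.commute mult.commute)
    have md: "p mod m = q mod m"
      using pq m0 by (metis mod_mult_self2 mult.commute)
    from degree_cancel_lemma[OF m0 dd p0]
    have "q = 0 \<or> degree q < degree p" unfolding q_def c_def d_def .
    then show ?thesis
    proof
      assume "q = 0" then show ?thesis
        using div md E cE by (simp add: po_monom po_0)
    next
      assume "degree q < degree p"
      from less.hyps[OF this qE] show ?thesis
        using div md E cE by (simp add: po_add po_monom)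
    qed
  qed
qed

lemma po_div: "is_subfield E \<Longrightarrow> poly_over E p \<Longrightarrow> poly_over E m \<Longrightarrow> poly_over E (p div m)"
  using po_divmod by blast
lemma po_mod: "is_subfield E \<Longrightarrow> poly_over E p \<Longrightarrow> poly_over E m \<Longrightarrow> poly_over E (p mod m)"
  using po_divmod by blast


section \<open>Minimal polynomials\<close>

definition minp_prop :: "'a::field set \<Rightarrow> 'a \<Rightarrow> 'a poly \<Rightarrow> bool" where
  "minp_prop E x m \<longleftrightarrow> poly_over E m \<and> lead_coeff m = 1 \<and> poly m x = 0 \<and>
     (\<forall>q. poly_over E q \<and> q \<noteq> 0 \<and> poly q x = 0 \<longrightarrow> degree m \<le> degree q)"

lemma minp_exists:
  assumes E: "is_subfield E" and alg: "algebraic_over E x"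
  shows "\<exists>m. minp_prop E x m"
proof -
  let ?S = "{q. poly_over E q \<and> q \<noteq> 0 \<and> poly q x = 0}"
  have ex: "\<exists>n. \<exists>q\<in>?S. degree q = n" using alg by (auto simp: algebraic_over_def)
  define n where "n = (LEAST n. \<exists>q\<in>?S. degree q = n)"
  obtain q where q: "q \<in> ?S" "degree q = n" using LeastI_ex[OF ex] unfolding n_def by blast
  have min: "n \<le> degree q'" if "q' \<in> ?S" for q'
    unfolding n_def using that by (auto intro: Least_le)
  define m where "m = smult (inverse (lead_coeff q)) q"
  have "q \<noteq> 0" using q(1) by simp
  then have lc: "lead_coeff q \<noteq> 0" by simp
  have "poly_over E m" unfolding m_def
    using q E by (intro po_smult sf_inverse po_lead_coeff) auto
  moreover have "lead_coeff m = 1" unfolding m_def using lc by simp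
  moreover have "poly m x = 0" unfolding m_def using q by simp
  moreover have "degree m = n" unfolding m_def using q lc by simp
  ultimately show ?thesis using min unfolding minp_prop_def by auto
qed

lemma minp_nz: "minp_prop E x m \<Longrightarrow> m \<noteq> 0"
  unfolding minp_prop_def by auto

lemma minp_dvd:
  assumes m: "minp_prop E x m" and E: "is_subfield E" and q: "poly_over E q" "poly q x = 0"
  shows "q = (q div m) * m"
proof -
  have m0: "m \<noteq> 0" using minp_nz[OF m] .
  have mE: "poly_over E m" using m unfolding minp_prop_def by auto
  have rE: "poly_over E (q mod m)" using po_mod[OF E q(1) mE] .
  have "poly (q mod m) x = 0"
  proof -
    have "q = q div m * m + q mod m" by simp
    then have "poly q x = poly (q div m) x * poly m x + poly (q mod m) x"
      by (metis poly_add poly_mult)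
    then show ?thesis using q m unfolding minp_prop_def by simp
  qed
  then have "q mod m = 0"
    using m rE degree_mod_less[OF m0, of q] unfolding minp_prop_def by force
  then show ?thesis by (metis add_0_right div_mult_mod_eq)
qed

lemma minp_deg: "minp_prop E x m \<Longrightarrow> degree m \<ge> 1"
proof (rule ccontr)
  assume m: "minp_prop E x m" and "\<not> degree m \<ge> 1"
  then have "degree m = 0" by simp
  then have "m = [:lead_coeff m:]" by (metis degree_0_id)
  then have "m = 1" using m unfolding minp_prop_def by (simp add: one_pCons)
  then show False using m unfolding minp_prop_def by simp
qed

lemma minp_irred:
  assumes m: "minp_prop E x m" and E: "is_subfield E"
  shows "irred_over E m"
proof -
  have m0: "m \<noteq> 0" using minp_nz[OF m] .
  have "\<not> (\<exists>q s. poly_over E q \<and> poly_over E s \<and> degree q \<ge> 1 \<and> degree s \<ge> 1 \<and> m = q * s)"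
  proof
    assume "\<exists>q s. poly_over E q \<and> poly_over E s \<and> degree q \<ge> 1 \<and> degree s \<ge> 1 \<and> m = q * s"
    then obtain q s where qs: "poly_over E q" "poly_over E s" "degree q \<ge> 1" "degree s \<ge> 1" "m = q * s"
      by blast
    have q0: "q \<noteq> 0" and s0: "s \<noteq> 0" using qs m0 by auto
    have dm: "degree m = degree q + degree s" using qs q0 s0 by (simp add: degree_mult_eq)
    have "poly q x * poly s x = 0" using m qs unfolding minp_prop_def by (metis poly_mult)
    then have "poly q x = 0 \<or> poly s x = 0" by simp
    then show False
    proof
      assume "poly q x = 0"
      then have "degree m \<le> degree q" using m qs q0 unfolding minp_prop_def by blast
      then show False using dm qs by simp
    next
      assume "poly s x = 0"
      then have "degree m \<le> degree s" using m qs s0 unfolding minp_prop_def by blast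
      then show False using dm qs by simp
    qed
  qed
  then show ?thesis using m minp_deg[OF m] unfolding irred_over_def minp_prop_def by blast
qed

lemma irred_monic_eq:
  assumes m: "minp_prop E x m" and E: "is_subfield E"
    and p: "lead_coeff p = 1" "irred_over E p" "poly p x = 0"
  shows "p = m"
proof -
  have pE: "poly_over E p" using p unfolding irred_over_def by auto
  have mE: "poly_over E m" using m unfolding minp_prop_def by auto
  have eq: "p = (p div m) * m" using minp_dvd[OF m E pE p(3)] .
  have dE: "poly_over E (p div m)" using po_div[OF E pE mE] .
  have "\<not> degree (p div m) \<ge> 1"
    using p(2) dE mE minp_deg[OF m] eq unfolding irred_over_def by blast
  then have "degree (p div m) = 0" by simp
  then obtain c where c: "p div m = [:c:]" by (metis degree_0_id)
  have "lead_coeff p = c * lead_coeff m" using eq c by (simp add: lead_coeff_mult)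
  then have "c = 1" using p m unfolding minp_prop_def by simp
  then show ?thesis using eq c by (simp add: one_pCons)
qed

lemma minpoly_eq:
  assumes m: "minp_prop E x m" and E: "is_subfield E"
  shows "minpoly E x = m"
  unfolding minpoly_def
proof (rule the_equality)
  show "lead_coeff m = 1 \<and> irred_over E m \<and> poly m x = 0"
    using m minp_irred[OF m E] unfolding minp_prop_def by auto
next
  fix p assume "lead_coeff p = 1 \<and> irred_over E p \<and> poly p x = 0"
  then show "p = m" using irred_monic_eq[OF m E] by blast
qed

lemma minpoly_prop:
  assumes E: "is_subfield E" and alg: "algebraic_over E x"
  shows "minp_prop E x (minpoly E x)"
  using minp_exists[OF E alg] minpoly_eq[OF _ E] by metis

lemma minpoly_over: "is_subfield E \<Longrightarrow> algebraic_over E x \<Longrightarrow> poly_over E (minpoly E x)"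
  using minpoly_prop unfolding minp_prop_def by blast
lemma minpoly_monic: "is_subfield E \<Longrightarrow> algebraic_over E x \<Longrightarrow> lead_coeff (minpoly E x) = 1"
  using minpoly_prop unfolding minp_prop_def by blast
lemma minpoly_root: "is_subfield E \<Longrightarrow> algebraic_over E x \<Longrightarrow> poly (minpoly E x) x = 0"
  using minpoly_prop unfolding minp_prop_def by blast
lemma minpoly_nz: "is_subfield E \<Longrightarrow> algebraic_over E x \<Longrightarrow> minpoly E x \<noteq> 0"
  using minpoly_prop minp_nz by blast
lemma minpoly_deg: "is_subfield E \<Longrightarrow> algebraic_over E x \<Longrightarrow> degree (minpoly E x) \<ge> 1"
  using minpoly_prop minp_deg by blast
lemma minpoly_min: "is_subfield E \<Longrightarrow> algebraic_over E x \<Longrightarrow> poly_over E q \<Longrightarrow> q \<noteq> 0 \<Longrightarrow> poly q x = 0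
   \<Longrightarrow> degree (minpoly E x) \<le> degree q"
  using minpoly_prop unfolding minp_prop_def by blast
lemma minpoly_irred: "is_subfield E \<Longrightarrow> algebraic_over E x \<Longrightarrow> irred_over E (minpoly E x)"
  using minpoly_prop minp_irred by blast
lemma minpoly_dvd: "is_subfield E \<Longrightarrow> algebraic_over E x \<Longrightarrow> poly_over E q \<Longrightarrow> poly q x = 0
   \<Longrightarrow> q = (q div minpoly E x) * minpoly E x"
  using minpoly_prop minp_dvd by blast
lemma minpoly_dvd': "is_subfield E \<Longrightarrow> algebraic_over E x \<Longrightarrow> poly_over E q \<Longrightarrow> poly q x = 0
   \<Longrightarrow> minpoly E x dvd q"
  by (metis dvd_triv_right minpoly_dvd)

lemma minpoly_unique:
  assumes E: "is_subfield E" and p: "lead_coeff p = 1" "irred_over E p" "poly p x = 0"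
  shows "minpoly E x = p"
proof -
  have "algebraic_over E x" using p unfolding algebraic_over_def irred_over_def by force
  from irred_monic_eq[OF minpoly_prop[OF E this] E p] show ?thesis by simp
qed

lemma minpoly_conj:
  assumes E: "is_subfield E" "algebraic_over E x" and y: "poly (minpoly E x) y = 0"
  shows "minpoly E y = minpoly E x"
  using minpoly_unique[OF E(1) minpoly_monic[OF E] minpoly_irred[OF E] y] .

lemma minpoly_in_base:
  assumes E: "is_subfield E" and x: "x \<in> E"
  shows "minpoly E x = [:-x, 1:]"
proof (rule minpoly_unique[OF E])
  show "lead_coeff [:- x, 1:] = 1" by simp
  show "poly [:- x, 1:] x = 0" by simp
  show "irred_over E [:- x, 1:]"
    unfolding irred_over_def
  proof (intro conjI notI)
    show "poly_over E [:- x, 1:]" using E x by (simp add: po_X sf_uminus)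
    show "1 \<le> degree [:- x, 1:]" by simp
    assume "\<exists>q s. poly_over E q \<and> poly_over E s \<and> 1 \<le> degree q \<and> 1 \<le> degree s \<and> [:- x, 1:] = q * s"
    then obtain q s where "1 \<le> degree q" "1 \<le> degree s" "[:- x, 1:] = q * s" by blast
    moreover from this have "q \<noteq> 0" "s \<noteq> 0" by auto
    moreover have "degree (q * s) = 1"
    proof -
      have "degree [:- x, 1:] = 1" by simp
      then show ?thesis using \<open>[:- x, 1:] = q * s\<close> by simp
    qed
    ultimately show False using degree_mult_eq[of q s] by simp
  qed
qed

lemma minpoly_mono_dvd:
  assumes E: "is_subfield E" "is_subfield E'" "E \<subseteq> E'" and alg: "algebraic_over E x"
  shows "minpoly E' x dvd minpoly E x"
proof -
  have alg': "algebraic_over E' x" using alg E unfolding algebraic_over_def by (auto intro: po_mono)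
  show ?thesis
    by (rule minpoly_dvd'[OF E(2) alg' po_mono[OF minpoly_over[OF E(1) alg] E(3)] minpoly_root[OF E(1) alg]])
qed

lemma order_ge2_pderiv:
  fixes p :: "'a::field poly"
  assumes "order a p \<ge> 2" "p \<noteq> 0"
  shows "poly (pderiv p) a = 0"
proof -
  have "[:-a,1:]^2 dvd p" using assms order_divides by blast
  then obtain r0 where "p = [:-a,1:]^2 * r0" by (elim dvdE)
  then have r: "p = [:-a,1:] * ([:-a,1:] * r0)" by (simp only: power2_eq_square mult.assoc)
  show ?thesis unfolding r pderiv_mult by (simp add: poly_mult)
qed

lemma rsq_dvd:
  fixes p q :: "'a::field poly"
  assumes "rsquarefree q" "p dvd q"
  shows "rsquarefree p"
proof -
  have q0: "q \<noteq> 0" using assms unfolding rsquarefree_def by auto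
  then have p0: "p \<noteq> 0" using assms by auto
  have "order a p \<le> order a q" for a using dvd_imp_order_le[OF q0 assms(2)] .
  then show ?thesis using assms p0 unfolding rsquarefree_def
    by (metis le_0_eq le_Suc_eq One_nat_def)
qed

lemma degree_pderiv_less:
  fixes p :: "'a::field poly"
  assumes "degree p \<ge> 1"
  shows "degree (pderiv p) < degree p"
proof -
  have "degree (pderiv p) \<le> degree p - 1"
    by (rule degree_le) (auto simp: coeff_pderiv coeff_eq_0)
  then show ?thesis using assms by simp
qed

lemma frob_root_poly:
  fixes m :: "'a::field poly"
  assumes K: "is_subfield K" and c: "CHAR('a) = c" "c > 0"
    and perf: "\<forall>y\<in>K. \<exists>z\<in>K. z ^ c = y"
    and mK: "poly_over K m" and dm: "pderiv m = 0"
  shows "\<exists>q. poly_over K q \<and> m = q ^ c"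
proof -
  have pc: "prime c" using c prime_CHAR_semidom[where 'a='a] by simp
  define b where "b j = (SOME z. z \<in> K \<and> z ^ c = coeff m (c * j))" for j
  have b: "b j \<in> K \<and> b j ^ c = coeff m (c * j)" for j
  proof -
    have "\<exists>z. z \<in> K \<and> z ^ c = coeff m (c * j)" using perf po_coeff[OF mK] by blast
    then show ?thesis unfolding b_def by (rule someI_ex)
  qed
  define q where "q = (\<Sum>j\<le>degree m. monom (b j) j)"
  have qK: "poly_over K q" unfolding q_def using b K by (intro po_sum po_monom) auto
  have "q ^ c = (\<Sum>j\<le>degree m. monom (b j) j ^ c)"
    unfolding q_def by (rule freshmans_dream_sum) (use pc c in auto)
  also have "\<dots> = (\<Sum>j\<le>degree m. monom (coeff m (c * j)) (j * c))"
    by (simp add: monom_power b)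
  also have "\<dots> = m"
  proof (rule poly_eqI)
    fix n
    have "coeff (\<Sum>j\<le>degree m. monom (coeff m (c * j)) (j * c)) n =
          (\<Sum>j\<le>degree m. if j * c = n then coeff m (c * j) else 0)"
      by (simp add: coeff_sum coeff_monom)
    also have "\<dots> = coeff m n"
    proof (cases "c dvd n")
      case True
      then obtain k where k: "n = c * k" by (auto elim: dvdE)
      have "(\<Sum>j\<le>degree m. if j * c = n then coeff m (c * j) else 0) =
            (\<Sum>j\<le>degree m. if j = k then coeff m (c * j) else 0)"
        using c(2) k by (intro sum.cong) (auto simp: mult.commute)
      also have "\<dots> = (if k \<le> degree m then coeff m (c * k) else 0)"
        by (simp add: sum.delta')
      also have "\<dots> = coeff m n"
      proof (cases "k \<le> degree m")
        case False
        then have "n > degree m" using k c(2)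
          by (metis dual_order.strict_trans1 mult_le_mono1 mult_1 not_le less_one
              linorder_not_less mult_0 Suc_leI)
        then show ?thesis using False by (simp add: coeff_eq_0)
      qed (simp add: k)
      finally show ?thesis .
    next
      case False
      then have "n \<noteq> 0" by (metis dvd_0_right)
      then obtain i where i: "n = Suc i" by (cases n) auto
      have "of_nat (Suc i) * coeff m (Suc i) = coeff (pderiv m) i" by (simp only: coeff_pderiv)
      then have "of_nat n * coeff m n = 0" using dm i by (simp del: of_nat_Suc)
      moreover have "of_nat n \<noteq> (0::'a)" using False c by (simp add: of_nat_eq_0_iff_char_dvd)
      ultimately have "coeff m n = 0" by simp
      moreover have "(\<Sum>j\<le>degree m. if j * c = n then coeff m (c * j) else 0) = 0"
        using False by (intro sum.neutral) auto
      ultimately show ?thesis by simp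
    qed
    finally show "coeff (\<Sum>j\<le>degree m. monom (coeff m (c * j)) (j * c)) n = coeff m n" .
  qed
  finally show ?thesis using qK by auto
qed

locale gs =
  fixes K :: "'a::field set"
  assumes perf: "perfect_subfield K" and clos: "is_alg_closure_of K"
begin

lemma K_sf: "is_subfield K"
  using perf unfolding perfect_subfield_def by auto

lemma alg_closed: "degree (p::'a poly) \<ge> 1 \<Longrightarrow> \<exists>z. poly p z = 0"
  using clos unfolding is_alg_closure_of_def alg_closed_type_def by auto

lemma alg_K: "algebraic_over K x"
  using clos unfolding is_alg_closure_of_def by auto

lemma alg_E: "is_subfield E \<Longrightarrow> K \<subseteq> E \<Longrightarrow> algebraic_over E x"
  using alg_K[of x] unfolding algebraic_over_def by (meson po_mono)

lemma sep_K: "rsquarefree (minpoly K x)"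
proof (rule ccontr)
  let ?m = "minpoly K x"
  assume ns: "\<not> rsquarefree ?m"
  have m0: "?m \<noteq> 0" using minpoly_nz[OF K_sf alg_K] .
  then obtain a where "order a ?m \<noteq> 0" "order a ?m \<noteq> 1" using ns unfolding rsquarefree_def by auto
  then have o2: "order a ?m \<ge> 2" by simp
  have ra: "poly ?m a = 0" using o2 m0 order_root by fastforce
  have da: "poly (pderiv ?m) a = 0" using order_ge2_pderiv[OF o2 m0] .
  have mina: "minpoly K a = ?m" using minpoly_conj[OF K_sf alg_K ra] .
  have mK: "poly_over K ?m" using minpoly_over[OF K_sf alg_K] .
  have dg: "degree ?m \<ge> 1" using minpoly_deg[OF K_sf alg_K] .
  have pd0: "pderiv ?m = 0"
  proof (rule ccontr)
    assume "pderiv ?m \<noteq> 0"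
    then have "degree (minpoly K a) \<le> degree (pderiv ?m)"
      using minpoly_min[OF K_sf alg_K po_pderiv[OF K_sf mK]] da by blast
    then show False using degree_pderiv_less[OF dg] mina by simp
  qed
  show False
  proof (cases "CHAR('a) = 0")
    case True
    have "coeff (pderiv ?m) (degree ?m - 1) = of_nat (degree ?m) * lead_coeff ?m"
      using dg by (simp add: coeff_pderiv)
    also have "\<dots> \<noteq> 0" using True dg m0 by (simp add: of_nat_eq_0_iff_char_dvd)
    finally show False using pd0 by simp
  next
    case False
    then have cpos: "CHAR('a) > 0" by simp
    have pf: "\<forall>y\<in>K. \<exists>z\<in>K. z ^ CHAR('a) = y" using perf False unfolding perfect_subfield_def by auto
    obtain q where q: "poly_over K q" "?m = q ^ CHAR('a)"
      using frob_root_poly[OF K_sf refl cpos pf mK pd0] by blast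
    have pc: "prime CHAR('a)" using cpos prime_CHAR_semidom[where 'a='a] by simp
    then have c2: "CHAR('a) \<ge> 2" by (simp add: prime_ge_2_nat)
    have q0: "q \<noteq> 0" using q m0 cpos by auto
    have dq: "degree ?m = CHAR('a) * degree q" using q by (simp add: degree_power_eq q0)
    then have dq1: "degree q \<ge> 1" using dg by (cases "degree q") auto
    have "?m = q * q ^ (CHAR('a) - 1)" using q c2
      by (metis One_nat_def Suc_diff_Suc less_le_trans numeral_2_eq_2 power_Suc pos2 diff_zero)
    moreover have "degree (q ^ (CHAR('a) - 1)) \<ge> 1"
      using dq1 c2 by (simp add: degree_power_eq q0)
    moreover have "poly_over K (q ^ (CHAR('a) - 1))" using po_power[OF K_sf q(1)] .
    ultimately show False using minpoly_irred[OF K_sf alg_K] q(1) dq1 unfolding irred_over_def by blast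
  qed
qed

lemma sep_E: "is_subfield E \<Longrightarrow> K \<subseteq> E \<Longrightarrow> rsquarefree (minpoly E x)"
  using rsq_dvd[OF sep_K minpoly_mono_dvd[OF K_sf _ _ alg_K]] by blast

lemma roots_card:
  fixes p :: "'a poly"
  assumes "rsquarefree p"
  shows "card {x. poly p x = 0} = degree p"
  using assms
proof (induction "degree p" arbitrary: p rule: less_induct)
  case less
  have p0: "p \<noteq> 0" using less.prems unfolding rsquarefree_def by auto
  show ?case
  proof (cases "degree p = 0")
    case True
    then obtain c where "p = [:c:]" by (metis degree_0_id)
    then show ?thesis using p0 True by simp
  next
    case False
    then obtain r where r: "poly p r = 0" using alg_closed by force
    then obtain q where q: "p = [:-r,1:] * q" using poly_eq_0_iff_dvd by (metis dvdE)
    have q0: "q \<noteq> 0" using p0 q by auto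
    have "q dvd p" using q dvd_triv_right by metis
    then have rq: "rsquarefree q" using rsq_dvd[OF less.prems] by blast
    have "order r p = order r [:-r,1:] + order r q" using q p0 order_mult by metis
    moreover have "order r [:-r,1:] = 1" using order_power_n_n[of r 1] by simp
    moreover have "order r p \<le> 1" using less.prems unfolding rsquarefree_def by (metis le_refl zero_le)
    ultimately have "order r q = 0" by simp
    then have nr: "poly q r \<noteq> 0" using q0 order_root by blast
    have roots: "{x. poly p x = 0} = insert r {x. poly q x = 0}" using q by auto
    have "degree p = degree [:-r,1:] + degree q" using q q0 degree_mult_eq[of "[:-r,1:]" q] by (simp del: mult_pCons_left)
    then have dq: "degree p = Suc (degree q)" by simp
    have "card {x. poly q x = 0} = degree q" using less.hyps[of q] dq rq by simp
    then show ?thesis using roots nr poly_roots_finite[OF q0] dq by simp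
  qed
qed

end


definition RR :: "'a::field ring" where
  "RR = \<lparr>carrier = UNIV, monoid.mult = (\<lambda>x y. x * y), one = 1, zero = 0, add = (\<lambda>x y. x + y)\<rparr>"

lemma RR_field: "field (RR :: 'a::field ring)"
proof -
  have "\<exists>y. x + y = 0" for x :: 'a
    using add.right_inverse by blast
  moreover have "x \<noteq> 0 \<Longrightarrow> \<exists>y. x * y = 1" for x :: 'a
    by (rule exI[of _ "inverse x"]) auto
  ultimately show ?thesis
    unfolding RR_def using add.right_inverse
    by unfold_locales (auto simp:algebra_simps Units_def)
qed

lemma RR_carrier[simp]: "carrier RR = UNIV" by (simp add: RR_def)
lemma RR_mult[simp]: "x \<otimes>\<^bsub>RR\<^esub> y = x * y" by (simp add: RR_def)
lemma RR_add[simp]: "x \<oplus>\<^bsub>RR\<^esub> y = x + y" by (simp add: RR_def)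
lemma RR_one[simp]: "\<one>\<^bsub>RR\<^esub> = 1" by (simp add: RR_def)
lemma RR_zero[simp]: "\<zero>\<^bsub>RR\<^esub> = 0" by (simp add: RR_def)

interpretation R: field "RR :: 'a::field ring" by (rule RR_field)

declare R.Span.simps[simp del]

lemma RR_ainv[simp]: "\<ominus>\<^bsub>RR\<^esub> x = - (x::'a::field)"
  by (rule R.minus_equality) auto

lemma RR_inv[simp]: "(x::'a::field) \<noteq> 0 \<Longrightarrow> inv\<^bsub>RR\<^esub> x = inverse x"
  by (rule R.comm_inv_char) auto

lemma sf_subfield: "is_subfield (E::'a::field set) \<Longrightarrow> subfield E RR"
  by (rule R.subfieldI'[OF R.subringI]) (auto simp: sf_one sf_uminus sf_mult sf_add sf_inverse)

lemma sf_subalgebra: "is_subfield (N::'a::field set) \<Longrightarrow> E \<subseteq> N \<Longrightarrow> subalgebra E N RR"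
proof -
  assume N: "is_subfield N" and EN: "E \<subseteq> N"
  have "subgroup N (add_monoid RR)"
    by (rule R.add.subgroupI) (use N sf_zero[OF N] in \<open>auto simp: sf_uminus sf_add\<close>)
  then show ?thesis
    unfolding subalgebra_def subalgebra_axioms_def using N EN by (auto simp: sf_mult)
qed

lemma comb_nth:
  "length Ks = length us \<Longrightarrow> R.combine Ks us = (\<Sum>i<length us. Ks ! i * us ! i)"
proof (induction us arbitrary: Ks)
  case Nil then show ?case by simp
next
  case (Cons u us)
  then obtain k Ks' where Ks: "Ks = k # Ks'" by (cases Ks) auto
  then show ?case using Cons by (simp add: sum.lessThan_Suc_shift del: sum.lessThan_Suc)
qed

lemma sum_set_nth:
  assumes "distinct us"
  shows "(\<Sum>b\<in>set us. f b) = (\<Sum>i<length us. f (us ! i))"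
proof -
  have "inj_on (nth us) {..<length us}" using assms by (simp add: inj_on_def nth_eq_iff_index_eq)
  moreover have "set us = nth us ` {..<length us}" by (auto simp: set_conv_nth)
  ultimately show ?thesis by (simp add: sum.reindex)
qed

definition idxf :: "'a list \<Rightarrow> 'a \<Rightarrow> nat" where
  "idxf us b = (THE i. i < length us \<and> us ! i = b)"

lemma idxf_nth: "distinct us \<Longrightarrow> i < length us \<Longrightarrow> idxf us (us ! i) = i"
  unfolding idxf_def by (rule the_equality) (auto simp: nth_eq_iff_index_eq)

lemma span_eq:
  assumes E: "is_subfield E" and d: "distinct us"
  shows "R.Span E us = span_over E (set us)"
proof
  note sfE = sf_subfield[OF E]
  show "R.Span E us \<subseteq> span_over E (set us)"
  proof
    fix a assume "a \<in> R.Span E us"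
    then obtain Ks where Ks: "set Ks \<subseteq> E" "length Ks = length us" "a = R.combine Ks us"
      using R.Span_mem_iff_length_version[OF sfE] by auto
    define c where "c b = Ks ! idxf us b" for b
    have cn: "c (us ! i) = Ks ! i" if "i < length us" for i
      using idxf_nth[OF d that] unfolding c_def by simp
    have "\<forall>b\<in>set us. c b \<in> E"
      using Ks cn by (auto simp: set_conv_nth)
    moreover have "a = (\<Sum>b\<in>set us. c b * b)"
      unfolding sum_set_nth[OF d] Ks(3) comb_nth[OF Ks(2)] using cn by simp
    ultimately show "a \<in> span_over E (set us)" unfolding span_over_def by blast
  qed
  show "span_over E (set us) \<subseteq> R.Span E us"
  proof
    fix a assume "a \<in> span_over E (set us)"
    then obtain c where c: "\<forall>b\<in>set us. c b \<in> E" "a = (\<Sum>b\<in>set us. c b * b)"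
      unfolding span_over_def by blast
    have "a = R.combine (map c us) us"
      unfolding c(2) sum_set_nth[OF d] by (subst comb_nth) auto
    moreover have "set (map c us) \<subseteq> E" using c by auto
    ultimately have "\<exists>Ks. set Ks \<subseteq> E \<and> length Ks = length us \<and> a = R.combine Ks us"
      by (intro exI[of _ "map c us"]) auto
    then show "a \<in> R.Span E us"
      using R.Span_mem_iff_length_version[OF sfE, of us a] by simp
  qed
qed

lemma indep_eq:
  assumes E: "is_subfield E" and d: "distinct us"
  shows "R.independent E us \<longleftrightarrow> indep_over E (set us)"
proof
  note sfE = sf_subfield[OF E]
  assume ind: "R.independent E us"
  show "indep_over E (set us)" unfolding indep_over_def
  proof (intro allI impI)
    fix c assume c: "(\<forall>b\<in>set us. c b \<in> E) \<and> (\<Sum>b\<in>set us. c b * b) = 0"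
    have "R.combine (map c us) us = 0"
      using c unfolding sum_set_nth[OF d] by (subst comb_nth) auto
    then have "set (take (length us) (map c us)) \<subseteq> {0}"
      using R.independent_imp_trivial_combine[OF sfE ind, of "map c us"] c by auto
    then show "\<forall>b\<in>set us. c b = 0" by auto
  qed
next
  note sfE = sf_subfield[OF E]
  assume ind: "indep_over E (set us)"
  show "R.independent E us"
  proof (rule R.trivial_combine_imp_independent[OF sfE])
    show "set us \<subseteq> carrier RR" by simp
    fix Ks assume Ks: "set Ks \<subseteq> E" "R.combine Ks us = \<zero>\<^bsub>RR\<^esub>"
    define Ks' where "Ks' = take (length us) Ks @ replicate (length us - length Ks) 0"
    have lK: "length Ks' = length us" unfolding Ks'_def by simp
    have "R.combine Ks' us = R.combine (take (length us) Ks) us"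
      unfolding Ks'_def using R.combine_append_replicate[of us "take (length us) Ks"] by simp
    also have "\<dots> = 0" using R.combine_take[of us Ks] Ks(2) by simp
    finally have c0: "R.combine Ks' us = 0" .
    have sK': "set Ks' \<subseteq> E" unfolding Ks'_def using Ks E
      by (auto simp: sf_zero dest: in_set_takeD)
    define c where "c b = Ks' ! idxf us b" for b
    have cn: "c (us ! i) = Ks' ! i" if "i < length us" for i
      using idxf_nth[OF d that] unfolding c_def by simp
    have cE: "\<forall>b\<in>set us. c b \<in> E"
      using sK' cn lK by (auto simp: set_conv_nth)
    have "(\<Sum>b\<in>set us. c b * b) = 0"
      unfolding sum_set_nth[OF d] using c0 comb_nth[OF lK] cn by simp
    then have z: "\<forall>b\<in>set us. c b = 0" using ind cE unfolding indep_over_def by blast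
    have "Ks' ! i = 0" if "i < length us" for i
      using z cn[OF that] that by (metis nth_mem)
    then have "set Ks' \<subseteq> {0}" using lK by (auto simp: set_conv_nth)
    moreover have "set (take (length us) Ks) \<subseteq> set Ks'"
      unfolding Ks'_def by simp
    ultimately show "set (take (length us) Ks) \<subseteq> {\<zero>\<^bsub>RR\<^esub>}"
      by auto
  qed
qed

lemma basis_dim:
  assumes E: "is_subfield E" and B: "basis_over E M B"
  shows "R.dimension (card B) E M"
proof -
  obtain us where us: "distinct us" "set us = B"
    using B finite_distinct_list unfolding basis_over_def by blast
  have "R.independent E us" using indep_eq[OF E us(1)] B us unfolding basis_over_def by simp
  moreover have "R.Span E us = M" using span_eq[OF E us(1)] B us unfolding basis_over_def by simp
  ultimately have "R.dimension (length us) E M" using R.dimensionI[OF sf_subfield[OF E]] by blast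
  then show ?thesis using us distinct_card by metis
qed

lemma dim_basis:
  assumes E: "is_subfield E" and d: "R.dimension n E M"
  shows "\<exists>B. basis_over E M B \<and> card B = n"
proof -
  obtain Vs where Vs: "R.independent E Vs" "length Vs = n" "R.Span E Vs = M"
    using R.exists_base[OF sf_subfield[OF E] d] by blast
  have dV: "distinct Vs" using R.independent_distinct[OF sf_subfield[OF E] Vs(1)] .
  have "set Vs \<subseteq> M" using R.Span_base_incl[OF sf_subfield[OF E], of Vs] Vs by simp
  then have "basis_over E M (set Vs)"
    unfolding basis_over_def using indep_eq[OF E dV] span_eq[OF E dV] Vs by auto
  then show ?thesis using dV Vs(2) distinct_card by blast
qed

lemma finite_ext_dim:
  assumes "finite_ext E M"
  shows "R.dimension (ext_degree E M) E M"
proof -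
  have ex: "\<exists>B. basis_over E M B" using assms unfolding finite_ext_def by blast
  have "basis_over E M (SOME B. basis_over E M B)" using someI_ex[OF ex] .
  then show ?thesis using basis_dim assms unfolding finite_ext_def ext_degree_def by auto
qed

lemma dim_finite_ext:
  assumes E: "is_subfield E" and M: "is_subfield M" and EM: "E \<subseteq> M" and d: "R.dimension n E M"
  shows "finite_ext E M \<and> ext_degree E M = n"
proof -
  obtain B where "basis_over E M B" using dim_basis[OF E d] by blast
  then have fe: "finite_ext E M" using E M EM unfolding finite_ext_def by blast
  then have "R.dimension (ext_degree E M) E M" by (rule finite_ext_dim)
  then have "ext_degree E M = n" using R.dimension_is_inj[OF sf_subfield[OF E] _ d] by blast
  then show ?thesis using fe by simp
qed

lemma finite_ext_sf: "finite_ext E M \<Longrightarrow> is_subfield E \<and> is_subfield M \<and> E \<subseteq> M"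
  unfolding finite_ext_def by auto

lemma tower:
  assumes "finite_ext E F" "finite_ext F M"
  shows "finite_ext E M \<and> ext_degree E M = ext_degree E F * ext_degree F M"
proof -
  have d: "R.dimension (ext_degree E F * ext_degree F M) E M"
    using R.telescopic_base[OF sf_subfield sf_subfield finite_ext_dim[OF assms(1)] finite_ext_dim[OF assms(2)]]
      assms unfolding finite_ext_def by auto
  show ?thesis using dim_finite_ext[OF _ _ _ d] assms unfolding finite_ext_def by auto
qed

lemma intermediate:
  assumes fe: "finite_ext E M" and N: "is_subfield N" "E \<subseteq> N" "N \<subseteq> M"
  shows "finite_ext E N \<and> finite_ext N M"
proof -
  have E: "is_subfield E" and M: "is_subfield M" using fe unfolding finite_ext_def by auto
  note sfE = sf_subfield[OF E]
  have fdM: "R.finite_dimension E M" using finite_ext_dim[OF fe] R.finite_dimensionI by blast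
  have "R.finite_dimension E N"
    using R.subalbegra_incl_imp_finite_dimension[OF sfE fdM sf_subalgebra[OF N(1,2)] N(3)] .
  then obtain n where "R.dimension n E N" by (auto simp: R.finite_dimension_def)
  then have fEN: "finite_ext E N" using dim_finite_ext[OF E N(1,2)] by blast
  obtain Vs where Vs: "R.Span E Vs = M"
    using R.exists_base[OF sfE finite_ext_dim[OF fe]] by blast
  have "set Vs \<subseteq> M" using R.Span_base_incl[OF sfE, of Vs] Vs by simp
  have "R.Span N Vs \<subseteq> M"
    using R.subalgebra_Span_incl[OF sf_subfield[OF N(1)] sf_subalgebra[OF M N(3)] \<open>set Vs \<subseteq> M\<close>] .
  moreover have "M \<subseteq> R.Span N Vs"
  proof
    fix a assume "a \<in> M"
    then obtain Ks where "set Ks \<subseteq> E" "length Ks = length Vs" "a = R.combine Ks Vs"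
      using R.Span_mem_iff_length_version[OF sfE, of Vs a] Vs by auto
    then show "a \<in> R.Span N Vs"
      using R.Span_mem_iff_length_version[OF sf_subfield[OF N(1)], of Vs a] N(2) by auto
  qed
  ultimately have "R.Span N Vs = M" by blast
  then have "R.finite_dimension N M"
    using R.Span_finite_dimension[OF sf_subfield[OF N(1)], of Vs] by simp
  then obtain m where "R.dimension m N M" by (auto simp: R.finite_dimension_def)
  then have "finite_ext N M" using dim_finite_ext[OF N(1) M N(3)] by blast
  then show ?thesis using fEN by blast
qed

lemma degree_pos: "finite_ext E M \<Longrightarrow> ext_degree E M \<ge> 1"
proof (rule ccontr)
  assume fe: "finite_ext E M" and "\<not> ext_degree E M \<ge> 1"
  then have "ext_degree E M = 0" by simp
  then have "R.dimension 0 E M" using finite_ext_dim[OF fe] by metis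
  then have "M = {0}" using R.dimension_zero[OF sf_subfield] fe unfolding finite_ext_def by force
  then show False using fe sf_one unfolding finite_ext_def by force
qed

lemma degree_self: "is_subfield E \<Longrightarrow> finite_ext E E \<and> ext_degree E E = 1"
  using dim_finite_ext[OF _ _ _ R.dimension_one[OF sf_subfield]] by auto

lemma degree_one:
  assumes fe: "finite_ext E M" and d1: "ext_degree E M = 1"
  shows "M = E"
proof -
  have E: "is_subfield E" and M: "is_subfield M" and EM: "E \<subseteq> M" using fe unfolding finite_ext_def by auto
  have d: "R.dimension 1 E M" using finite_ext_dim[OF fe] d1 by simp
  then have "R.dimension 1 E E" using R.dimension_one[OF sf_subfield[OF E]] by simp
  obtain B where "basis_over E M B" "card B = 1" using dim_basis[OF E d] by blast
  obtain B' where "basis_over E E B'" "card B' = 1" using dim_basis[OF E R.dimension_one[OF sf_subfield[OF E]]] by blast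
  have fM: "finite_ext E M" by (rule fe)
  show ?thesis
  proof (rule ccontr)
    assume "M \<noteq> E"
    then obtain v where v: "v \<in> M" "v \<notin> E" using EM by blast
    have "R.independent E [v, 1]"
    proof (intro R.independent.li_Cons)
      show "R.independent E []" by simp
      show "1 \<notin> R.Span E []" by (simp add: R.Span.simps)
      have "R.Span E [1] = E"
        using span_eq[OF E, of "[1]"] unfolding span_over_def by (auto intro: exI[of _ "\<lambda>_. x" for x])
      then show "v \<notin> R.Span E [1]" using v by simp
    qed auto
    then have "length [v, 1::'a] \<le> 1"
      using R.independent_length_le_dimension[OF sf_subfield[OF E] d \<open>R.independent E [v, 1]\<close>] v sf_one[OF M] by auto
    then show False by simp
  qed
qed

lemma degree_eq_imp_eq:
  assumes fe: "finite_ext E M" and N: "is_subfield N" "E \<subseteq> N" "N \<subseteq> M"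
    and eq: "ext_degree E N = ext_degree E M"
  shows "N = M"
proof -
  have i: "finite_ext E N" "finite_ext N M" using intermediate[OF fe N] by auto
  have "ext_degree E M = ext_degree E N * ext_degree N M" using tower[OF i] by simp
  then have "ext_degree N M = 1" using eq degree_pos[OF i(1)] by simp
  then show ?thesis using degree_one[OF i(2)] by simp
qed

lemma degree_mono:
  assumes fe: "finite_ext E M" and N: "is_subfield N" "E \<subseteq> N" "N \<subseteq> M"
  shows "ext_degree E N \<le> ext_degree E M" "ext_degree E N dvd ext_degree E M"
proof -
  have i: "finite_ext E N" "finite_ext N M" using intermediate[OF fe N] by auto
  have "ext_degree E M = ext_degree E N * ext_degree N M" using tower[OF i] by simp
  then show "ext_degree E N \<le> ext_degree E M" "ext_degree E N dvd ext_degree E M"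
    using degree_pos[OF i(2)] by auto
qed

lemma finite_ext_finite:
  assumes fe: "finite_ext E M" and fin: "finite E"
  shows "finite M"
proof -
  obtain B where B: "basis_over E M B" using fe unfolding finite_ext_def by blast
  have "M = (\<lambda>c. \<Sum>b\<in>B. c b * b) ` (PiE B (\<lambda>_. E))"
  proof
    show "M \<subseteq> (\<lambda>c. \<Sum>b\<in>B. c b * b) ` (PiE B (\<lambda>_. E))"
    proof
      fix x assume "x \<in> M"
      then obtain c where c: "\<forall>b\<in>B. c b \<in> E" "x = (\<Sum>b\<in>B. c b * b)"
        using B unfolding basis_over_def span_over_def by blast
      have "restrict c B \<in> PiE B (\<lambda>_. E)" using c by auto
      moreover have "x = (\<Sum>b\<in>B. restrict c B b * b)" using c by simp
      ultimately show "x \<in> (\<lambda>c. \<Sum>b\<in>B. c b * b) ` (PiE B (\<lambda>_. E))" by blast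
    qed
    show "(\<lambda>c. \<Sum>b\<in>B. c b * b) ` (PiE B (\<lambda>_. E)) \<subseteq> M"
      using B unfolding basis_over_def span_over_def by (auto simp: PiE_def)
  qed
  moreover have "finite (PiE B (\<lambda>_. E))" using B fin unfolding basis_over_def by (simp add: finite_PiE)
  ultimately show ?thesis by (metis finite_imageI)
qed




definition PE :: "'a::field set \<Rightarrow> 'a \<Rightarrow> 'a set" where
  "PE E a = {poly f a | f. poly_over E f}"

lemma PE_sub: "is_subfield M \<Longrightarrow> E \<subseteq> M \<Longrightarrow> a \<in> M \<Longrightarrow> PE E a \<subseteq> M"
  unfolding PE_def by (auto intro: po_poly po_mono)

lemma PE_base: "is_subfield E \<Longrightarrow> c \<in> E \<Longrightarrow> c \<in> PE E a"
  unfolding PE_def by (rule CollectI, rule exI[of _ "[:c:]"]) (auto simp: po_const)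

lemma PE_gen: "is_subfield E \<Longrightarrow> a \<in> PE E a"
  unfolding PE_def by (rule CollectI, rule exI[of _ "[:0,1:]"]) (auto simp: po_X sf_zero)

lemma basis_degree: "finite_ext E M \<Longrightarrow> basis_over E M B \<Longrightarrow> ext_degree E M = card B"
  using basis_dim finite_ext_dim R.dimension_is_inj sf_subfield unfolding finite_ext_def by metis

context gs
begin

lemma PE_inverse:
  assumes E: "is_subfield E" "K \<subseteq> E" and x: "x \<in> PE E a"
  shows "inverse x \<in> PE E a"
proof (cases "x = 0")
  case True
  then show ?thesis using x by simp
next
  case False
  obtain f where f: "poly_over E f" "x = poly f a" using x unfolding PE_def by blast
  have alg: "algebraic_over E x" using alg_E[OF E] .
  let ?m = "minpoly E x"
  obtain c0 m' where m: "?m = pCons c0 m'" by (cases "?m") auto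
  have mE: "poly_over E ?m" using minpoly_over[OF E(1) alg] .
  then have c0: "c0 \<in> E" and m'E: "poly_over E m'" using m po_pCons[OF E(1)] by auto
  have root: "c0 + x * poly m' x = 0" using minpoly_root[OF E(1) alg] m by simp
  have "c0 \<noteq> 0"
  proof
    assume c00: "c0 = 0"
    then have "poly m' x = 0" using root False by simp
    moreover have m'0: "m' \<noteq> 0" using minpoly_nz[OF E(1) alg] m c00 by auto
    ultimately have "degree ?m \<le> degree m'" using minpoly_min[OF E(1) alg m'E] by blast
    moreover have "degree ?m = Suc (degree m')" using m m'0 by simp
    ultimately show False by simp
  qed
  have "x * ((- 1 / c0) * poly m' x) = 1"
  proof -
    have "x * poly m' x = - c0" using root by (simp add: eq_neg_iff_add_eq_0 add.commute)
    then have "x * ((- 1 / c0) * poly m' x) = (- 1 / c0) * (- c0)" by (metis mult.left_commute)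
    then show ?thesis using \<open>c0 \<noteq> 0\<close> by simp
  qed
  then have "inverse x = (- 1 / c0) * poly m' x" by (rule inverse_unique)
  also have "\<dots> = poly (smult (- 1 / c0) (pcompose m' f)) a"
    using f(2) by (simp add: poly_pcompose)
  finally have inv: "inverse x = poly (smult (- 1 / c0) (pcompose m' f)) a" .
  have "poly_over E (smult (- 1 / c0) (pcompose m' f))"
    using E c0 m'E f by (intro po_smult po_pcompose sf_divide sf_uminus sf_one) auto
  then show ?thesis using inv unfolding PE_def by blast
qed

lemma PE_subfield:
  assumes E: "is_subfield E" "K \<subseteq> E"
  shows "is_subfield (PE E a)"
proof -
  have add: "x + y \<in> PE E a" "x - y \<in> PE E a" "x * y \<in> PE E a" if xy: "x \<in> PE E a" "y \<in> PE E a" for x y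
  proof -
    obtain f g where fg: "poly_over E f" "x = poly f a" "poly_over E g" "y = poly g a"
      using xy unfolding PE_def by blast
    have "x + y = poly (f + g) a" "x - y = poly (f - g) a" "x * y = poly (f * g) a"
      using fg by auto
    then show "x + y \<in> PE E a" "x - y \<in> PE E a" "x * y \<in> PE E a"
      unfolding PE_def using po_add[OF E(1) fg(1) fg(3)] po_diff[OF E(1) fg(1) fg(3)]
        po_mult[OF E(1) fg(1) fg(3)] by blast+
  qed
  have i: "inverse x \<in> PE E a" if "x \<in> PE E a" for x using PE_inverse[OF E that] .
  have z: "0 \<in> PE E a" "1 \<in> PE E a"
    using PE_base[OF E(1) sf_zero[OF E(1)]] PE_base[OF E(1) sf_one[OF E(1)]] by auto
  show ?thesis unfolding is_subfield_def
    using add i z by simp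
qed

lemma adjoin_PE:
  assumes E: "is_subfield E" "K \<subseteq> E"
  shows "adjoin E a = PE E a"
proof
  show "adjoin E a \<subseteq> PE E a"
    using adjoin_least[OF PE_subfield[OF E]] PE_base[OF E(1)] PE_gen[OF E(1)] by blast
  show "PE E a \<subseteq> adjoin E a"
    using PE_sub[OF adjoin_sf adjoin_base adjoin_gen] .
qed

lemma adjoin_mem:
  assumes E: "is_subfield E" "K \<subseteq> E"
  shows "x \<in> adjoin E a \<longleftrightarrow> (\<exists>f. poly_over E f \<and> x = poly f a)"
  using adjoin_PE[OF E] unfolding PE_def by blast

lemma powers_inj:
  assumes E: "is_subfield E" "K \<subseteq> E"
  shows "inj_on (\<lambda>i. a ^ i) {..<degree (minpoly E a)}"
proof (rule inj_onI, rule ccontr)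
  let ?n = "degree (minpoly E a)"
  have alg: "algebraic_over E a" using alg_E[OF E] .
  fix i j assume ij: "i \<in> {..<?n}" "j \<in> {..<?n}" "a ^ i = a ^ j" "i \<noteq> j"
  let ?q = "monom (1::'a) i - monom 1 j"
  have "coeff ?q i = 1" using ij by (simp add: coeff_monom)
  then have q0: "?q \<noteq> 0" by (metis coeff_0 one_neq_zero)
  have "degree ?q \<le> max i j"
    by (metis degree_diff_le degree_monom_le le_max_iff_disj)
  then have dq: "degree ?q < ?n" using ij by auto
  have "poly ?q a = 0" using ij by (simp add: poly_monom)
  moreover have "poly_over E ?q" using E by (intro po_diff po_monom sf_one) auto
  ultimately have "?n \<le> degree ?q" using minpoly_min[OF E(1) alg _ q0] by blast
  then show False using dq by simp
qed

lemma simple_ext: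
  assumes E: "is_subfield E" "K \<subseteq> E"
  shows "finite_ext E (adjoin E a) \<and> ext_degree E (adjoin E a) = degree (minpoly E a)"
proof -
  let ?m = "minpoly E a"
  let ?n = "degree ?m"
  let ?B = "(\<lambda>i. a ^ i) ` {..<?n}"
  have alg: "algebraic_over E a" using alg_E[OF E] .
  have inj: "inj_on (\<lambda>i. a ^ i) {..<?n}" using powers_inj[OF E] .
  have n1: "?n \<ge> 1" using minpoly_deg[OF E(1) alg] .
  have reidx: "(\<Sum>b\<in>?B. c b * b) = (\<Sum>i<?n. c (a ^ i) * a ^ i)" for c
    using inj by (simp add: sum.reindex)
  have Bsub: "?B \<subseteq> adjoin E a"
    using adjoin_sf adjoin_gen sf_power by blast
  have indep: "indep_over E ?B"
    unfolding indep_over_def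
  proof (intro allI impI)
    fix c assume c: "(\<forall>b\<in>?B. c b \<in> E) \<and> (\<Sum>b\<in>?B. c b * b) = 0"
    define f where "f = (\<Sum>i<?n. monom (c (a ^ i)) i)"
    have fE: "poly_over E f" unfolding f_def using c E by (intro po_sum po_monom) auto
    have "poly f a = 0" using c reidx unfolding f_def by (simp add: poly_sum poly_monom)
    have cf: "coeff f k = (if k < ?n then c (a ^ k) else 0)" for k
      unfolding f_def by (simp add: coeff_sum coeff_monom)
    have "f = 0"
    proof (rule ccontr)
      assume f0: "f \<noteq> 0"
      have "degree f \<le> ?n - 1" by (rule degree_le) (auto simp: cf)
      moreover have "?n \<le> degree f" using minpoly_min[OF E(1) alg fE f0 \<open>poly f a = 0\<close>] .
      ultimately show False using n1 by simp
    qed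
    then show "\<forall>b\<in>?B. c b = 0" using cf by (metis (no_types, lifting) coeff_0 imageE lessThan_iff)
  qed
  have span: "span_over E ?B = adjoin E a"
  proof
    show "span_over E ?B \<subseteq> adjoin E a"
      unfolding span_over_def using Bsub adjoin_base[of E a]
      by (auto intro!: sf_sum[OF adjoin_sf] sf_mult[OF adjoin_sf])
    show "adjoin E a \<subseteq> span_over E ?B"
    proof
      fix x assume "x \<in> adjoin E a"
      then obtain g where g: "poly_over E g" "x = poly g a" using adjoin_mem[OF E] by blast
      define r where "r = g mod ?m"
      have rE: "poly_over E r" unfolding r_def using po_mod[OF E(1) g(1) minpoly_over[OF E(1) alg]] .
      have "g = g div ?m * ?m + r" unfolding r_def by (rule div_mult_mod_eq[symmetric])
      then have "poly g a = poly r a"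
        using minpoly_root[OF E(1) alg] by (metis add_0 mult_zero_right poly_add poly_mult)
      have "r = 0 \<or> degree r < ?n" unfolding r_def using degree_mod_less[OF minpoly_nz[OF E(1) alg]] by blast
      then have dr: "degree r \<le> ?n - 1" using n1 by auto
      have "r = (\<Sum>i\<le>?n - 1. monom (coeff r i) i)" using poly_as_sum_of_monoms'[OF dr] by simp
      also have "{..?n - 1} = {..<?n}" using n1 by auto
      finally have "poly r a = (\<Sum>i<?n. coeff r i * a ^ i)"
        by (metis (no_types, lifting) poly_monom poly_sum sum.cong)
      define c where "c b = coeff r (inv_into {..<?n} (\<lambda>i. a ^ i) b)" for b
      have ci: "c (a ^ i) = coeff r i" if "i < ?n" for i
        unfolding c_def using inv_into_f_f[OF inj] that by simp
      have "x = (\<Sum>b\<in>?B. c b * b)"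
        unfolding reidx using ci g \<open>poly g a = poly r a\<close> \<open>poly r a = _\<close> by simp
      moreover have "\<forall>b\<in>?B. c b \<in> E" using ci rE po_coeff by fastforce
      ultimately show "x \<in> span_over E ?B" unfolding span_over_def by blast
    qed
  qed
  have basis: "basis_over E (adjoin E a) ?B"
    unfolding basis_over_def using indep span Bsub by auto
  have fe: "finite_ext E (adjoin E a)"
    unfolding finite_ext_def using basis E adjoin_sf adjoin_base by blast
  have "card ?B = ?n" using inj by (simp add: card_image)
  then show ?thesis using basis_degree[OF fe basis] fe by simp
qed

section \<open>Primitive element theorem\<close>

lemma monic_single_root:
  fixes p :: "'a poly"
  assumes rsq: "rsquarefree p" and monic: "lead_coeff p = 1" and roots: "{x. poly p x = 0} = {b}"
  shows "p = [:-b, 1:]"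
proof -
  have "degree p = 1" using roots_card[OF rsq] roots by simp
  then obtain c0 where p: "p = [:c0, 1:]" using monic
    by (metis One_nat_def degree_pCons_eq_if nat.distinct(1) pCons_cases degree_0_id
        lead_coeff_pCons(1) coeff_pCons_0 diff_Suc_1 zero_neq_one)
  have "poly p b = 0" using roots by auto
  then have "b + c0 = 0" using p by (simp add: add.commute)
  then have "c0 = - b" by (simp add: eq_neg_iff_add_eq_0 add.commute)
  then show ?thesis using p by simp
qed

lemma PE2:
  assumes E: "is_subfield E" "K \<subseteq> E" and inf: "infinite E"
  shows "\<exists>c\<in>E. a \<in> adjoin E (a + c * b) \<and> b \<in> adjoin E (a + c * b)"
proof -
  have algA: "algebraic_over E a" and algB: "algebraic_over E b" using alg_E[OF E] by auto
  let ?f = "minpoly E a" and ?g = "minpoly E b"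
  let ?Ra = "{x. poly ?f x = 0}" and ?Rb = "{x. poly ?g x = 0}"
  have fRa: "finite ?Ra" using poly_roots_finite[OF minpoly_nz[OF E(1) algA]] .
  have fRb: "finite ?Rb" using poly_roots_finite[OF minpoly_nz[OF E(1) algB]] .
  define bad where "bad = (\<lambda>(\<alpha>, \<beta>). (\<alpha> - a) / (b - \<beta>)) ` (?Ra \<times> ?Rb)"
  have "finite bad" unfolding bad_def using fRa fRb by simp
  then obtain c where c: "c \<in> E" "c \<notin> bad" using inf by (metis ex_in_conv finite_Diff2 infinite_remove
        Diff_iff finite.emptyI infinite_imp_nonempty subsetI finite_subset)
  define \<theta> where "\<theta> = a + c * b"
  define F where "F = adjoin E \<theta>"
  have F: "is_subfield F" "E \<subseteq> F" "\<theta> \<in> F" unfolding F_def using adjoin_sf[of E \<theta>] adjoin_base[of E \<theta>] adjoin_gen[of \<theta> E] by auto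
  have KF: "K \<subseteq> F" using F E by auto
  have algBF: "algebraic_over F b" using alg_E[OF F(1) KF] .
  let ?\<mu> = "minpoly F b"
  define h where "h = pcompose ?f [:\<theta>, -c:]"
  have hF: "poly_over F h" unfolding h_def
    using F c E by (intro po_pcompose po_mono[OF minpoly_over[OF E(1) algA]])
      (auto simp: po_pCons po_const sf_uminus po_0)
  have hb: "poly h b = 0" unfolding h_def \<theta>_def by (simp add: poly_pcompose minpoly_root[OF E(1) algA])
  have gF: "poly_over F ?g" using po_mono[OF minpoly_over[OF E(1) algB] F(2)] .
  have dg: "?\<mu> dvd ?g" using minpoly_dvd'[OF F(1) algBF gF minpoly_root[OF E(1) algB]] .
  have dh: "?\<mu> dvd h" using minpoly_dvd'[OF F(1) algBF hF hb] .
  have roots: "{x. poly ?\<mu> x = 0} = {b}"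
  proof
    show "{b} \<subseteq> {x. poly ?\<mu> x = 0}" using minpoly_root[OF F(1) algBF] by simp
    show "{x. poly ?\<mu> x = 0} \<subseteq> {b}"
    proof
      fix y assume "y \<in> {x. poly ?\<mu> x = 0}"
      then have y: "poly ?\<mu> y = 0" by simp
      have gy: "poly ?g y = 0" using dg y by (metis dvd_def mult_zero_left poly_mult)
      have hy: "poly h y = 0" using dh y by (metis dvd_def mult_zero_left poly_mult)
      then have "poly ?f (\<theta> - c * y) = 0" unfolding h_def by (simp add: poly_pcompose mult.commute)
      show "y \<in> {b}"
      proof (rule ccontr)
        assume "y \<notin> {b}"
        then have "b - y \<noteq> 0" by simp
        have "c = ((\<theta> - c * y) - a) / (b - y)"
          using \<open>b - y \<noteq> 0\<close> unfolding \<theta>_def by (simp add: field_simps)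
        then have "c \<in> bad" unfolding bad_def
          using \<open>poly ?f (\<theta> - c * y) = 0\<close> gy by force
        then show False using c by simp
      qed
    qed
  qed
  have "?\<mu> = [:-b, 1:]"
    using monic_single_root[OF sep_E[OF F(1) KF] minpoly_monic[OF F(1) algBF] roots] .
  then have "coeff ?\<mu> 0 = - b" by simp
  then have "- b \<in> F" using po_coeff[OF minpoly_over[OF F(1) algBF], of 0] by simp
  then have bF: "b \<in> F" using sf_uminus[OF F(1)] by fastforce
  have aF: "a \<in> F" using sf_diff[OF F(1) F(3) sf_mult[OF F(1) _ bF]] c F(2)
    unfolding \<theta>_def by force
  show ?thesis using c aF bF unfolding F_def \<theta>_def by blast
qed

lemma finite_field_gen:
  assumes M: "is_subfield M" and fin: "finite M"
  shows "\<exists>g\<in>M. \<forall>x\<in>M. x \<noteq> 0 \<longrightarrow> (\<exists>i::nat. x = g ^ i)"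
proof -
  have sf: "subfield M RR" using sf_subfield[OF M] .
  interpret F: field "RR\<lparr>carrier := M\<rparr>" using R.subfield_iff(2)[OF sf] .
  have pw: "x [^]\<^bsub>RR\<lparr>carrier := M\<rparr>\<^esub> i = x ^ i" for x and i :: nat
    by (induction i) (auto simp: RR_def)
  have fc: "finite (carrier (RR\<lparr>carrier := M\<rparr>))" using fin by simp
  from F.finite_field_mult_group_has_gen[OF fc]
  obtain g where g: "g \<in> carrier (mult_of (RR\<lparr>carrier := M\<rparr>))"
    "carrier (mult_of (RR\<lparr>carrier := M\<rparr>)) = {g [^]\<^bsub>RR\<lparr>carrier := M\<rparr>\<^esub> i | i::nat. i \<in> UNIV}"
    by (rule bexE)
  have "g \<in> M" using g(1) by (simp add: mult_of_def RR_def)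
  moreover have "\<forall>x\<in>M. x \<noteq> 0 \<longrightarrow> (\<exists>i::nat. x = g ^ i)"
  proof (intro ballI impI)
    fix x assume "x \<in> M" "x \<noteq> 0"
    then have "x \<in> carrier (mult_of (RR\<lparr>carrier := M\<rparr>))" by (simp add: mult_of_def RR_def)
    then show "\<exists>i::nat. x = g ^ i" using g(2) pw by auto
  qed
  ultimately show ?thesis by blast
qed

theorem primitive_element:
  assumes fe: "finite_ext E M" and KE: "K \<subseteq> E"
  shows "\<exists>\<theta>\<in>M. adjoin E \<theta> = M"
proof -
  have E: "is_subfield E" and M: "is_subfield M" and EM: "E \<subseteq> M" using fe unfolding finite_ext_def by auto
  show ?thesis
  proof (cases "finite E")
    case True
    then have "finite M" using finite_ext_finite[OF fe] by simp
    then obtain g where g: "g \<in> M" "\<forall>x\<in>M. x \<noteq> 0 \<longrightarrow> (\<exists>i::nat. x = g ^ i)"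
      using finite_field_gen[OF M] by blast
    have "M \<subseteq> adjoin E g"
    proof
      fix x assume "x \<in> M"
      show "x \<in> adjoin E g"
      proof (cases "x = 0")
        case True then show ?thesis using sf_zero[OF adjoin_sf] by simp
      next
        case False
        then obtain i where "x = g ^ i" using g \<open>x \<in> M\<close> by blast
        then show ?thesis using sf_power[OF adjoin_sf adjoin_gen] by simp
      qed
    qed
    moreover have "adjoin E g \<subseteq> M" using adjoin_least[OF M EM g(1)] .
    ultimately show ?thesis using g(1) by blast
  next
    case False
    have key: "finite S \<Longrightarrow> S \<subseteq> M \<Longrightarrow> \<exists>\<theta>\<in>M. S \<subseteq> adjoin E \<theta>" for S
    proof (induction S rule: finite_induct)
      case empty then show ?case using sf_zero[OF M] by blast
    next
      case (insert x S)
      then obtain \<theta> where th: "\<theta> \<in> M" "S \<subseteq> adjoin E \<theta>" by auto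
      obtain c where c: "c \<in> E" "\<theta> \<in> adjoin E (\<theta> + c * x)" "x \<in> adjoin E (\<theta> + c * x)"
        using PE2[OF E KE False] by blast
      have th': "\<theta> + c * x \<in> M" using th insert c EM sf_add[OF M] sf_mult[OF M] by auto
      have "adjoin E \<theta> \<subseteq> adjoin E (\<theta> + c * x)"
        using adjoin_least[OF adjoin_sf adjoin_base c(2)] .
      then show ?case using th' th c by blast
    qed
    obtain B where B: "basis_over E M B" using fe unfolding finite_ext_def by blast
    then obtain \<theta> where th: "\<theta> \<in> M" "B \<subseteq> adjoin E \<theta>"
      using key unfolding basis_over_def by blast
    have "M \<subseteq> adjoin E \<theta>"
    proof -
      have "span_over E B \<subseteq> adjoin E \<theta>"
        unfolding span_over_def using th(2) adjoin_base[of E \<theta>]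
        by (auto intro!: sf_sum[OF adjoin_sf] sf_mult[OF adjoin_sf])
      then show ?thesis using B unfolding basis_over_def by simp
    qed
    moreover have "adjoin E \<theta> \<subseteq> M" using adjoin_least[OF M EM th(1)] .
    ultimately show ?thesis using th(1) by blast
  qed
qed

end


lemma aut_bij: "\<sigma> \<in> aut M E \<Longrightarrow> bij_betw \<sigma> M M" by (simp add: aut_def)
lemma aut_add: "\<sigma> \<in> aut M E \<Longrightarrow> x \<in> M \<Longrightarrow> y \<in> M \<Longrightarrow> \<sigma> (x + y) = \<sigma> x + \<sigma> y" by (simp add: aut_def)
lemma aut_mult: "\<sigma> \<in> aut M E \<Longrightarrow> x \<in> M \<Longrightarrow> y \<in> M \<Longrightarrow> \<sigma> (x * y) = \<sigma> x * \<sigma> y" by (simp add: aut_def)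
lemma aut_fix: "\<sigma> \<in> aut M E \<Longrightarrow> x \<in> E \<Longrightarrow> \<sigma> x = x" by (simp add: aut_def)
lemma aut_out: "\<sigma> \<in> aut M E \<Longrightarrow> x \<notin> M \<Longrightarrow> \<sigma> x = x" by (simp add: aut_def)
lemma aut_in: "\<sigma> \<in> aut M E \<Longrightarrow> x \<in> M \<Longrightarrow> \<sigma> x \<in> M"
  by (meson aut_bij bij_betw_apply)
lemma aut_inj: "\<sigma> \<in> aut M E \<Longrightarrow> inj_on \<sigma> M"
  by (simp add: aut_def bij_betw_def)
lemma aut_image: "\<sigma> \<in> aut M E \<Longrightarrow> \<sigma> ` M = M"
  by (simp add: aut_def bij_betw_def)

lemma aut_0: assumes "\<sigma> \<in> aut M E" "is_subfield M" shows "\<sigma> 0 = 0"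
proof -
  have "\<sigma> (0 + 0) = \<sigma> 0 + \<sigma> 0" using aut_add[OF assms(1)] sf_zero[OF assms(2)] by blast
  then have "\<sigma> 0 + 0 = \<sigma> 0 + \<sigma> 0" by simp
  then show ?thesis by (metis add_left_cancel)
qed

lemma aut_1: assumes "\<sigma> \<in> aut M E" "is_subfield M" shows "\<sigma> 1 = 1"
proof -
  have "\<sigma> (1 * 1) = \<sigma> 1 * \<sigma> 1" using aut_mult[OF assms(1)] sf_one[OF assms(2)] by blast
  moreover have "\<sigma> 1 \<noteq> 0"
  proof
    assume "\<sigma> 1 = 0"
    then have "\<sigma> 1 = \<sigma> 0" using aut_0[OF assms] by simp
    then show False using aut_inj[OF assms(1)] sf_zero[OF assms(2)] sf_one[OF assms(2)]
      by (metis inj_onD one_neq_zero)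
  qed
  ultimately show ?thesis by (metis mult_cancel_left2 mult_1_right)
qed

lemma aut_uminus: assumes "\<sigma> \<in> aut M E" "is_subfield M" "x \<in> M" shows "\<sigma> (- x) = - \<sigma> x"
proof -
  have "\<sigma> (x + - x) = \<sigma> x + \<sigma> (- x)" using aut_add[OF assms(1) assms(3) sf_uminus[OF assms(2,3)]] .
  then show ?thesis using aut_0[OF assms(1,2)] by (simp add: eq_neg_iff_add_eq_0 add.commute)
qed

lemma aut_diff: assumes "\<sigma> \<in> aut M E" "is_subfield M" "x \<in> M" "y \<in> M" shows "\<sigma> (x - y) = \<sigma> x - \<sigma> y"
  using aut_add[OF assms(1,3) sf_uminus[OF assms(2,4)]] aut_uminus[OF assms(1,2,4)] by simp

lemma aut_inverse: assumes "\<sigma> \<in> aut M E" "is_subfield M" "x \<in> M" shows "\<sigma> (inverse x) = inverse (\<sigma> x)"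
proof (cases "x = 0")
  case True then show ?thesis using aut_0[OF assms(1,2)] by simp
next
  case False
  have "\<sigma> (x * inverse x) = \<sigma> x * \<sigma> (inverse x)" using aut_mult[OF assms(1,3) sf_inverse[OF assms(2,3)]] .
  then have "\<sigma> x * \<sigma> (inverse x) = 1" using False aut_1[OF assms(1,2)] by simp
  then show ?thesis by (metis inverse_unique)
qed

lemma aut_sum: assumes "\<sigma> \<in> aut M E" "is_subfield M" "\<And>i. i \<in> A \<Longrightarrow> f i \<in> M"
  shows "\<sigma> (sum f A) = (\<Sum>i\<in>A. \<sigma> (f i))"
  using assms(3)
proof (induction A rule: infinite_finite_induct)
  case (infinite A) then show ?case using aut_0[OF assms(1,2)] by simp
next
  case empty then show ?case using aut_0[OF assms(1,2)] by simp
next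
  case (insert x F)
  have "f x \<in> M" using insert.prems by auto
  have "sum f F \<in> M" by (rule sf_sum[OF assms(2)]) (use insert.prems in auto)
  have "\<sigma> (f x + sum f F) = \<sigma> (f x) + \<sigma> (sum f F)" by (rule aut_add[OF assms(1) \<open>f x \<in> M\<close> \<open>sum f F \<in> M\<close>])
  then show ?case using insert.IH insert.prems insert.hyps by simp
qed

lemma aut_power: assumes "\<sigma> \<in> aut M E" "is_subfield M" "x \<in> M" shows "\<sigma> (x ^ n) = \<sigma> x ^ n"
  by (induction n) (auto simp: aut_1[OF assms(1,2)] aut_mult[OF assms(1) assms(3) sf_power[OF assms(2,3)]])

lemma aut_poly:
  assumes s: "\<sigma> \<in> aut M E" and M: "is_subfield M" and EM: "E \<subseteq> M" and f: "poly_over E f" and x: "x \<in> M"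
  shows "\<sigma> (poly f x) = poly f (\<sigma> x)"
proof -
  have c: "coeff f i \<in> M" for i using po_coeff[OF f] EM by blast
  have "\<sigma> (poly f x) = (\<Sum>i\<le>degree f. \<sigma> (coeff f i * x ^ i))"
    unfolding poly_altdef using c x M by (intro aut_sum[OF s M]) (auto intro: sf_mult sf_power)
  also have "\<dots> = (\<Sum>i\<le>degree f. coeff f i * \<sigma> x ^ i)"
    using c x M aut_mult[OF s] aut_power[OF s M x] aut_fix[OF s] po_coeff[OF f]
    by (intro sum.cong) (auto simp: sf_power)
  finally show ?thesis unfolding poly_altdef .
qed

lemma id_aut: "id \<in> aut M E"
  unfolding aut_def by auto

lemma aut_comp: assumes "\<sigma> \<in> aut M E" "\<tau> \<in> aut M E" shows "\<sigma> \<circ> \<tau> \<in> aut M E"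
  using assms unfolding aut_def by (auto intro: bij_betw_trans simp: bij_betw_apply)

definition ainv :: "'a set \<Rightarrow> ('a \<Rightarrow> 'a) \<Rightarrow> 'a \<Rightarrow> 'a" where
  "ainv M \<sigma> = (\<lambda>x. if x \<in> M then inv_into M \<sigma> x else x)"

lemma ainv_left: assumes "\<sigma> \<in> aut M E" shows "ainv M \<sigma> \<circ> \<sigma> = id"
proof
  fix x show "(ainv M \<sigma> \<circ> \<sigma>) x = id x"
  proof (cases "x \<in> M")
    case True then show ?thesis
      using aut_in[OF assms] aut_inj[OF assms] by (simp add: ainv_def inv_into_f_f)
  next
    case False then show ?thesis using aut_out[OF assms] by (simp add: ainv_def)
  qed
qed

lemma ainv_right: assumes "\<sigma> \<in> aut M E" shows "\<sigma> \<circ> ainv M \<sigma> = id"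
proof
  fix x show "(\<sigma> \<circ> ainv M \<sigma>) x = id x"
  proof (cases "x \<in> M")
    case True then show ?thesis
      using aut_image[OF assms] by (simp add: ainv_def f_inv_into_f)
  next
    case False then show ?thesis using aut_out[OF assms] by (simp add: ainv_def)
  qed
qed

lemma ainv_aut: assumes s: "\<sigma> \<in> aut M E" and M: "is_subfield M" shows "ainv M \<sigma> \<in> aut M E"
proof -
  let ?t = "ainv M \<sigma>"
  have tM: "?t x \<in> M" if "x \<in> M" for x
    using that aut_image[OF s] by (simp add: ainv_def inv_into_into)
  have st: "\<sigma> (?t x) = x" for x using ainv_right[OF s] by (metis comp_apply id_apply)
  have inj: "inj_on \<sigma> M" using aut_inj[OF s] .
  have bij: "bij_betw ?t M M"
  proof -
    have "bij_betw (inv_into M \<sigma>) M M" using bij_betw_inv_into[OF aut_bij[OF s]] .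
    then show ?thesis by (rule bij_betw_cong[THEN iffD1, rotated]) (simp add: ainv_def)
  qed
  have hom: "?t (x + y) = ?t x + ?t y \<and> ?t (x * y) = ?t x * ?t y" if "x \<in> M" "y \<in> M" for x y
  proof -
    have "\<sigma> (?t x + ?t y) = x + y" using aut_add[OF s tM[OF that(1)] tM[OF that(2)]] st by simp
    moreover have "\<sigma> (?t x * ?t y) = x * y" using aut_mult[OF s tM[OF that(1)] tM[OF that(2)]] st by simp
    moreover have "?t x + ?t y \<in> M" "?t x * ?t y \<in> M" "?t (x + y) \<in> M" "?t (x * y) \<in> M"
      using tM that sf_add[OF M] sf_mult[OF M] by auto
    ultimately show ?thesis using st inj by (metis inj_onD)
  qed
  have fixE: "?t x = x" if "x \<in> E" for x
  proof (cases "x \<in> M")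
    case True
    have "\<sigma> x = x" using aut_fix[OF s that] .
    then show ?thesis using True inj by (simp add: ainv_def inv_into_f_eq)
  next
    case False then show ?thesis by (simp add: ainv_def)
  qed
  show ?thesis unfolding aut_def using bij hom fixE by (auto simp: ainv_def)
qed

lemma galgrp_carrier[simp]: "carrier (galgrp M E) = aut M E" by (simp add: galgrp_def)
lemma galgrp_mult[simp]: "\<sigma> \<otimes>\<^bsub>galgrp M E\<^esub> \<tau> = \<sigma> \<circ> \<tau>" by (simp add: galgrp_def)
lemma galgrp_one[simp]: "\<one>\<^bsub>galgrp M E\<^esub> = id" by (simp add: galgrp_def)

lemma galgrp_group: assumes M: "is_subfield M" shows "group (galgrp M E)"
proof (rule groupI)
  show "\<one>\<^bsub>galgrp M E\<^esub> \<in> carrier (galgrp M E)" using id_aut by simp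
  fix x assume x: "x \<in> carrier (galgrp M E)"
  show "\<one>\<^bsub>galgrp M E\<^esub> \<otimes>\<^bsub>galgrp M E\<^esub> x = x" by simp
  show "\<exists>y\<in>carrier (galgrp M E). y \<otimes>\<^bsub>galgrp M E\<^esub> x = \<one>\<^bsub>galgrp M E\<^esub>"
    using x ainv_aut[OF _ M] ainv_left by fastforce
next
  fix x y assume "x \<in> carrier (galgrp M E)" "y \<in> carrier (galgrp M E)"
  then show "x \<otimes>\<^bsub>galgrp M E\<^esub> y \<in> carrier (galgrp M E)" using aut_comp by simp
next
  fix x y z
  show "x \<otimes>\<^bsub>galgrp M E\<^esub> y \<otimes>\<^bsub>galgrp M E\<^esub> z = x \<otimes>\<^bsub>galgrp M E\<^esub> (y \<otimes>\<^bsub>galgrp M E\<^esub> z)"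
    by (simp add: comp_assoc)
qed

lemma galgrp_inv: "is_subfield M \<Longrightarrow> \<sigma> \<in> aut M E \<Longrightarrow> inv\<^bsub>galgrp M E\<^esub> \<sigma> = ainv M \<sigma>"
  by (rule group.inv_equality[OF galgrp_group]) (simp_all add: ainv_left ainv_aut)

lemma aut_mono: "E \<subseteq> N \<Longrightarrow> aut M N \<subseteq> aut M E"
  unfolding aut_def by auto

lemma aut_subgroup: assumes "E \<subseteq> N" and M: "is_subfield M" shows "subgroup (aut M N) (galgrp M E)"
proof (rule group.subgroupI[OF galgrp_group[OF M]])
  show "aut M N \<subseteq> carrier (galgrp M E)" using aut_mono[OF assms(1)] by simp
  show "aut M N \<noteq> {}" using id_aut by blast
  fix a assume a: "a \<in> aut M N"
  then have "a \<in> aut M E" using aut_mono[OF assms(1)] by blast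
  then have "inv\<^bsub>galgrp M E\<^esub> a = ainv M a" using galgrp_inv[OF M] by blast
  then show "inv\<^bsub>galgrp M E\<^esub> a \<in> aut M N" using ainv_aut[OF a M] by simp
next
  fix a b assume "a \<in> aut M N" "b \<in> aut M N"
  then show "a \<otimes>\<^bsub>galgrp M E\<^esub> b \<in> aut M N" using aut_comp by simp
qed

lemma galgrp_update: "(galgrp M E)\<lparr>carrier := aut M N\<rparr> = galgrp M N"
  by (simp add: galgrp_def)

lemma aut_map_poly_mult:
  assumes s: "\<sigma> \<in> aut M E" and M: "is_subfield M" and p: "poly_over M p" and q: "poly_over M q"
  shows "map_poly \<sigma> (p * q) = map_poly \<sigma> p * map_poly \<sigma> q"
proof (rule poly_eqI)
  fix n
  have s0: "\<sigma> 0 = 0" using aut_0[OF s M] .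
  have "coeff (map_poly \<sigma> (p * q)) n = \<sigma> (\<Sum>i\<le>n. coeff p i * coeff q (n - i))"
    by (simp add: coeff_map_poly s0 coeff_mult)
  also have "\<dots> = (\<Sum>i\<le>n. \<sigma> (coeff p i) * \<sigma> (coeff q (n - i)))"
    using po_coeff[OF p] po_coeff[OF q] aut_mult[OF s]
    by (subst aut_sum[OF s M]) (auto intro: sf_mult[OF M])
  also have "\<dots> = coeff (map_poly \<sigma> p * map_poly \<sigma> q) n"
    by (simp add: coeff_map_poly s0 coeff_mult)
  finally show "coeff (map_poly \<sigma> (p * q)) n = coeff (map_poly \<sigma> p * map_poly \<sigma> q) n" .
qed

lemma aut_map_prod:
  assumes s: "\<sigma> \<in> aut M E" and M: "is_subfield M" and Y: "finite Y" "Y \<subseteq> M"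
  shows "map_poly \<sigma> (\<Prod>y\<in>Y. [:-y, 1:]) = (\<Prod>y\<in>Y. [:- \<sigma> y, 1:])"
  using Y
proof (induction Y rule: finite_induct)
  case empty
  then show ?case using aut_0[OF s M] aut_1[OF s M] by (simp add: one_pCons map_poly_pCons)
next
  case (insert y Y)
  have py: "poly_over M [:-y, 1:]" using insert M by (simp add: po_X sf_uminus)
  have pY: "poly_over M (\<Prod>y\<in>Y. [:-y, 1:])" using insert M by (intro po_prod) (auto simp: po_X sf_uminus)
  have "map_poly \<sigma> [:-y, 1:] = [:- \<sigma> y, 1:]"
    using aut_0[OF s M] aut_1[OF s M] aut_uminus[OF s M] insert by (simp add: map_poly_pCons)
  then show ?case using insert aut_map_poly_mult[OF s M py pY] by simp
qed

lemma orbit_poly: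
  assumes M: "is_subfield M" and S: "subgroup S (galgrp M E)" and fS: "finite S" and x: "x \<in> M"
  defines "Y \<equiv> (\<lambda>\<sigma>. \<sigma> x) ` S"
  defines "Q \<equiv> \<Prod>y\<in>Y. [:-y, 1:]"
  shows "poly_over (fix_field M S) Q" "poly Q x = 0" "\<And>z. poly Q z = 0 \<longleftrightarrow> z \<in> Y" "Q \<noteq> 0"
    "Y \<subseteq> M"
proof -
  have SA: "S \<subseteq> aut M E" using subgroup.subset[OF S] by simp
  have fY: "finite Y" unfolding Y_def using fS by simp
  show YM: "Y \<subseteq> M" unfolding Y_def using SA aut_in x by blast
  have QM: "poly_over M Q" unfolding Q_def using YM M by (intro po_prod) (auto simp: po_X sf_uminus)
  have perm: "\<tau> ` Y = Y" if t: "\<tau> \<in> S" for \<tau>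
  proof
    show "\<tau> ` Y \<subseteq> Y"
    proof
      fix z assume "z \<in> \<tau> ` Y"
      then obtain \<sigma> where \<sigma>: "\<sigma> \<in> S" "z = \<tau> (\<sigma> x)" unfolding Y_def by blast
      have "\<tau> \<circ> \<sigma> \<in> S" using subgroup.m_closed[OF S t \<sigma>(1)] by simp
      then show "z \<in> Y" unfolding Y_def using \<sigma>(2) by (metis comp_apply image_eqI)
    qed
    show "Y \<subseteq> \<tau> ` Y"
    proof
      fix y assume "y \<in> Y"
      then obtain \<sigma> where \<sigma>: "\<sigma> \<in> S" "y = \<sigma> x" unfolding Y_def by blast
      let ?r = "ainv M \<tau> \<circ> \<sigma>"
      have "ainv M \<tau> \<in> S" using subgroup.m_inv_closed[OF S t] galgrp_inv[OF M] SA t by auto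
      then have "?r \<in> S" using subgroup.m_closed[OF S _ \<sigma>(1)] by simp
      moreover have "\<tau> (?r x) = y" using ainv_right[of \<tau> M E] SA t \<sigma>
        by (metis comp_apply id_apply subsetD)
      ultimately show "y \<in> \<tau> ` Y" unfolding Y_def by blast
    qed
  qed
  have fixQ: "map_poly \<tau> Q = Q" if t: "\<tau> \<in> S" for \<tau>
  proof -
    have ta: "\<tau> \<in> aut M E" using t SA by blast
    have "map_poly \<tau> Q = (\<Prod>y\<in>Y. [:- \<tau> y, 1:])"
      unfolding Q_def using aut_map_prod[OF ta M fY YM] .
    also have "\<dots> = (\<Prod>y\<in>\<tau> ` Y. [:- y, 1:])"
      using aut_inj[OF ta] YM by (subst prod.reindex) (auto intro: inj_on_subset)
    also have "\<dots> = Q" unfolding Q_def perm[OF t] ..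
    finally show ?thesis .
  qed
  show "poly_over (fix_field M S) Q"
    unfolding poly_over_def fix_field_def
  proof (intro allI CollectI conjI ballI)
    fix i show "coeff Q i \<in> M" using po_coeff[OF QM] .
    fix \<tau> assume t: "\<tau> \<in> S"
    have "coeff (map_poly \<tau> Q) i = \<tau> (coeff Q i)"
      using aut_0[OF _ M] t SA by (intro coeff_map_poly) blast
    then show "\<tau> (coeff Q i) = coeff Q i" using fixQ[OF t] by simp
  qed
  show roots: "poly Q z = 0 \<longleftrightarrow> z \<in> Y" for z
    unfolding Q_def poly_prod using fY by simp
  have "id \<in> S" using subgroup.one_closed[OF S] by simp
  then have "x \<in> Y" unfolding Y_def by (metis id_apply image_eqI)
  then show "poly Q x = 0" using roots by blast
  show "Q \<noteq> 0" unfolding Q_def using fY by simp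
qed

context gs
begin

lemma aut_det:
  assumes E: "is_subfield E" "K \<subseteq> E" and M: "M = adjoin E \<theta>"
    and s: "\<sigma> \<in> aut M E" and t: "\<tau> \<in> aut M E" and eq: "\<sigma> \<theta> = \<tau> \<theta>"
  shows "\<sigma> = \<tau>"
proof
  fix x
  have Msf: "is_subfield M" and EM: "E \<subseteq> M" and thM: "\<theta> \<in> M" using M adjoin_sf[of E \<theta>] adjoin_base[of E \<theta>] adjoin_gen[of \<theta> E] by auto
  show "\<sigma> x = \<tau> x"
  proof (cases "x \<in> M")
    case True
    then obtain f where f: "poly_over E f" "x = poly f \<theta>" using adjoin_mem[OF E] M by blast
    then show ?thesis using aut_poly[OF s Msf EM f(1) thM] aut_poly[OF t Msf EM f(1) thM] eq by simp
  next
    case False then show ?thesis using aut_out s t by metis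
  qed
qed

lemma aut_root:
  assumes E: "is_subfield E" "K \<subseteq> E" and s: "\<sigma> \<in> aut M E" and Msf: "is_subfield M" and EM: "E \<subseteq> M"
    and thM: "\<theta> \<in> M"
  shows "poly (minpoly E \<theta>) (\<sigma> \<theta>) = 0"
proof -
  have alg: "algebraic_over E \<theta>" using alg_E[OF E] .
  have "\<sigma> (poly (minpoly E \<theta>) \<theta>) = poly (minpoly E \<theta>) (\<sigma> \<theta>)"
    using aut_poly[OF s Msf EM minpoly_over[OF E(1) alg] thM] .
  then show ?thesis using minpoly_root[OF E(1) alg] aut_0[OF s Msf] by simp
qed

lemma aut_extend:
  assumes E: "is_subfield E" "K \<subseteq> E" and M: "M = adjoin E \<theta>"
    and \<beta>: "\<beta> \<in> M" "poly (minpoly E \<theta>) \<beta> = 0"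
  shows "\<exists>\<sigma>\<in>aut M E. \<sigma> \<theta> = \<beta>"
proof -
  have Msf: "is_subfield M" and EM: "E \<subseteq> M" and thM: "\<theta> \<in> M" using M adjoin_sf[of E \<theta>] adjoin_base[of E \<theta>] adjoin_gen[of \<theta> E] by auto
  have alg: "algebraic_over E \<theta>" using alg_E[OF E] .
  let ?g = "minpoly E \<theta>"
  have gb: "minpoly E \<beta> = ?g" using minpoly_conj[OF E(1) alg \<beta>(2)] .
  have algb: "algebraic_over E \<beta>" using alg_E[OF E] .
  have rep: "\<exists>f. poly_over E f \<and> x = poly f \<theta>" if "x \<in> M" for x using adjoin_mem[OF E] M that by blast
  define pf where "pf x = (SOME f. poly_over E f \<and> x = poly f \<theta>)" for x
  have pf: "poly_over E (pf x) \<and> x = poly (pf x) \<theta>" if "x \<in> M" for x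
    unfolding pf_def using someI_ex[OF rep[OF that]] .
  define \<sigma> where "\<sigma> x = (if x \<in> M then poly (pf x) \<beta> else x)" for x
  have wd: "poly f \<beta> = poly f' \<beta>" if "poly_over E f" "poly_over E f'" "poly f \<theta> = poly f' \<theta>" for f f'
  proof -
    have "poly (f - f') \<theta> = 0" using that by simp
    then have "?g dvd (f - f')" using minpoly_dvd'[OF E(1) alg po_diff[OF E(1) that(1,2)]] by blast
    then have "poly (f - f') \<beta> = 0" using \<beta>(2) by (metis dvd_def mult_zero_left poly_mult)
    then show ?thesis by simp
  qed
  have sf: "\<sigma> (poly f \<theta>) = poly f \<beta>" if "poly_over E f" for f
  proof -
    have x: "poly f \<theta> \<in> M" using po_poly[OF Msf po_mono[OF that EM] thM] .
    then show ?thesis unfolding \<sigma>_def using wd[OF _ that] pf[OF x] by auto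
  qed
  have hom: "\<sigma> (x + y) = \<sigma> x + \<sigma> y \<and> \<sigma> (x * y) = \<sigma> x * \<sigma> y" if xy: "x \<in> M" "y \<in> M" for x y
  proof -
    obtain f f' where "poly_over E f" "x = poly f \<theta>" "poly_over E f'" "y = poly f' \<theta>"
      using rep xy by blast
    then show ?thesis using sf po_add[OF E(1)] po_mult[OF E(1)] by (metis poly_add poly_mult)
  qed
  have fixE: "\<sigma> x = x" if "x \<in> E" for x
    using sf[OF po_const[OF E(1) that]] by simp
  have inj: "inj_on \<sigma> M"
  proof (rule inj_onI)
    fix x y assume xy: "x \<in> M" "y \<in> M" "\<sigma> x = \<sigma> y"
    obtain f f' where ff: "poly_over E f" "x = poly f \<theta>" "poly_over E f'" "y = poly f' \<theta>"
      using rep xy by blast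
    have "poly (f - f') \<beta> = 0" using sf ff xy by simp
    then have "?g dvd (f - f')" using minpoly_dvd'[OF E(1) algb po_diff[OF E(1) ff(1,3)]] gb by simp
    then have "poly (f - f') \<theta> = 0" using minpoly_root[OF E(1) alg] by (metis dvd_def mult_zero_left poly_mult)
    then show "x = y" using ff by simp
  qed
  have img: "\<sigma> ` M = adjoin E \<beta>"
  proof
    show "\<sigma> ` M \<subseteq> adjoin E \<beta>"
    proof
      fix z assume "z \<in> \<sigma> ` M"
      then obtain x where "x \<in> M" "z = \<sigma> x" by blast
      then obtain f where "poly_over E f" "x = poly f \<theta>" using rep by blast
      then show "z \<in> adjoin E \<beta>" using sf \<open>z = \<sigma> x\<close> adjoin_mem[OF E] by auto
    qed
    show "adjoin E \<beta> \<subseteq> \<sigma> ` M"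
    proof
      fix z assume "z \<in> adjoin E \<beta>"
      then obtain f where f: "poly_over E f" "z = poly f \<beta>" using adjoin_mem[OF E] by blast
      then have "z = \<sigma> (poly f \<theta>)" using sf by simp
      moreover have "poly f \<theta> \<in> M" using po_poly[OF Msf po_mono[OF f(1) EM] thM] .
      ultimately show "z \<in> \<sigma> ` M" by blast
    qed
  qed
  have "adjoin E \<beta> = M"
  proof (rule degree_eq_imp_eq)
    show fe: "finite_ext E M" using simple_ext[OF E] M by simp
    show "is_subfield (adjoin E \<beta>)" "E \<subseteq> adjoin E \<beta>" by (auto simp: adjoin_sf adjoin_base)
    show "adjoin E \<beta> \<subseteq> M" using adjoin_least[OF Msf EM \<beta>(1)] .
    show "ext_degree E (adjoin E \<beta>) = ext_degree E M"
      using simple_ext[OF E, of \<beta>] simple_ext[OF E, of \<theta>] M gb by simp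
  qed
  then have "bij_betw \<sigma> M M" using inj img unfolding bij_betw_def by simp
  then have "\<sigma> \<in> aut M E" unfolding aut_def using hom fixE by (auto simp: \<sigma>_def)
  moreover have "\<sigma> \<theta> = \<beta>" using sf[OF po_X[OF E(1), THEN iffD2, OF sf_zero[OF E(1)]]] by simp
  ultimately show ?thesis by blast
qed

lemma aut_roots_bij:
  assumes E: "is_subfield E" "K \<subseteq> E" and M: "M = adjoin E \<theta>"
  shows "bij_betw (\<lambda>\<sigma>. \<sigma> \<theta>) (aut M E) {\<beta> \<in> M. poly (minpoly E \<theta>) \<beta> = 0}"
proof -
  have Msf: "is_subfield M" and EM: "E \<subseteq> M" and thM: "\<theta> \<in> M" using M adjoin_sf[of E \<theta>] adjoin_base[of E \<theta>] adjoin_gen[of \<theta> E] by auto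
  show ?thesis unfolding bij_betw_def
  proof
    show "inj_on (\<lambda>\<sigma>. \<sigma> \<theta>) (aut M E)" using aut_det[OF E M] by (auto intro: inj_onI)
    show "(\<lambda>\<sigma>. \<sigma> \<theta>) ` aut M E = {\<beta> \<in> M. poly (minpoly E \<theta>) \<beta> = 0}"
      using aut_in thM aut_root[OF E _ Msf EM thM] aut_extend[OF E M] by fastforce
  qed
qed

lemma aut_finite_card:
  assumes fe: "finite_ext E M" and KE: "K \<subseteq> E"
  shows "finite (aut M E) \<and> card (aut M E) \<le> ext_degree E M"
proof -
  have E: "is_subfield E" using fe unfolding finite_ext_def by auto
  obtain \<theta> where th: "\<theta> \<in> M" "adjoin E \<theta> = M" using primitive_element[OF fe KE] by blast
  have alg: "algebraic_over E \<theta>" using alg_E[OF E KE] .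
  have b: "bij_betw (\<lambda>\<sigma>. \<sigma> \<theta>) (aut M E) {\<beta> \<in> M. poly (minpoly E \<theta>) \<beta> = 0}"
    using aut_roots_bij[OF E KE th(2)[symmetric]] .
  have fin: "finite {\<beta> \<in> M. poly (minpoly E \<theta>) \<beta> = 0}"
    using poly_roots_finite[OF minpoly_nz[OF E alg]] by (rule finite_subset[rotated]) auto
  have "card {\<beta> \<in> M. poly (minpoly E \<theta>) \<beta> = 0} \<le> card {\<beta>. poly (minpoly E \<theta>) \<beta> = 0}"
    using poly_roots_finite[OF minpoly_nz[OF E alg]] by (rule card_mono) auto
  also have "\<dots> \<le> degree (minpoly E \<theta>)" using card_poly_roots_bound[OF minpoly_nz[OF E alg]] .
  also have "\<dots> = ext_degree E M" using simple_ext[OF E KE, of \<theta>] th by simp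
  finally have le: "card {\<beta> \<in> M. poly (minpoly E \<theta>) \<beta> = 0} \<le> ext_degree E M" .
  have "card (aut M E) = card {\<beta> \<in> M. poly (minpoly E \<theta>) \<beta> = 0}" using bij_betw_same_card[OF b] .
  moreover have "finite (aut M E)" using bij_betw_finite[OF b] fin by simp
  ultimately show ?thesis using le by simp
qed

section \<open>Artin's theorem\<close>

lemma fix_field_sf:
  assumes M: "is_subfield M" and S: "S \<subseteq> aut M E"
  shows "is_subfield (fix_field M S)"
proof -
  let ?F = "fix_field M S"
  have s: "\<sigma> \<in> aut M E" if "\<sigma> \<in> S" for \<sigma> using S that by blast
  have z: "0 \<in> ?F" "1 \<in> ?F" unfolding fix_field_def using aut_0[OF s M] aut_1[OF s M] sf_zero[OF M] sf_one[OF M] by auto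
  have a: "x + y \<in> ?F \<and> x - y \<in> ?F \<and> x * y \<in> ?F" if "x \<in> ?F" "y \<in> ?F" for x y
    using that unfolding fix_field_def
    by (auto simp: sf_add[OF M] sf_diff[OF M] sf_mult[OF M] aut_add[OF s] aut_diff[OF s M] aut_mult[OF s])
  have i: "inverse x \<in> ?F" if "x \<in> ?F" for x
    using that unfolding fix_field_def by (auto simp: sf_inverse[OF M] aut_inverse[OF s M])
  show ?thesis unfolding is_subfield_def using z a i by blast
qed

theorem artin:
  assumes fe: "finite_ext E M" and KE: "K \<subseteq> E" and S: "subgroup S (galgrp M E)"
  shows "aut M (fix_field M S) = S \<and> ext_degree (fix_field M S) M = card S \<and>
         finite_ext (fix_field M S) M \<and> E \<subseteq> fix_field M S \<and> fix_field M S \<subseteq> M \<and>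
         is_subfield (fix_field M S)"
proof -
  have E: "is_subfield E" and Msf: "is_subfield M" and EM: "E \<subseteq> M" using fe unfolding finite_ext_def by auto
  let ?F = "fix_field M S"
  have SA: "S \<subseteq> aut M E" using subgroup.subset[OF S] by simp
  have F: "is_subfield ?F" using fix_field_sf[OF Msf SA] .
  have EF: "E \<subseteq> ?F" unfolding fix_field_def using EM SA aut_fix by fastforce
  have FM: "?F \<subseteq> M" unfolding fix_field_def by auto
  have KF: "K \<subseteq> ?F" using KE EF by auto
  have feF: "finite_ext ?F M" using intermediate[OF fe F EF FM] by blast
  obtain \<theta> where th: "\<theta> \<in> M" "adjoin E \<theta> = M" using primitive_element[OF fe KE] by blast
  have thF: "adjoin ?F \<theta> = M"
  proof
    show "adjoin ?F \<theta> \<subseteq> M" using adjoin_least[OF Msf FM th(1)] .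
    show "M \<subseteq> adjoin ?F \<theta>" using th(2) adjoin_least[OF adjoin_sf, of E ?F \<theta> \<theta>] EF adjoin_base adjoin_gen
      by blast
  qed
  have fA: "finite (aut M E)" using aut_finite_card[OF fe KE] by blast
  have fS: "finite S" using finite_subset[OF SA fA] .
  note op = orbit_poly[OF Msf S fS th(1)]
  let ?Y = "(\<lambda>\<sigma>. \<sigma> \<theta>) ` S"
  let ?Q = "\<Prod>y\<in>?Y. [:-y, 1:]"
  have algF: "algebraic_over ?F \<theta>" using alg_E[OF F KF] .
  have "ext_degree ?F M = degree (minpoly ?F \<theta>)" using simple_ext[OF F KF, of \<theta>] thF by simp
  also have "\<dots> \<le> degree ?Q" using minpoly_min[OF F algF op(1) op(4) op(2)] .
  also have "degree ?Q = card ?Y" by (subst degree_prod_eq_sum_degree) auto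
  also have "\<dots> \<le> card S" using card_image_le[OF fS] .
  finally have le1: "ext_degree ?F M \<le> card S" .
  have SF: "S \<subseteq> aut M ?F" unfolding aut_def fix_field_def using SA unfolding aut_def by auto
  have afF: "finite (aut M ?F) \<and> card (aut M ?F) \<le> ext_degree ?F M" using aut_finite_card[OF feF KF] .
  have le2: "card S \<le> card (aut M ?F)" using card_mono[OF _ SF] afF by blast
  have eq: "card S = card (aut M ?F)" using le1 le2 afF by linarith
  have "S = aut M ?F" using card_subset_eq[OF _ SF eq] afF by blast
  then show ?thesis using eq le1 le2 afF feF EF FM F by auto
qed

lemma gal_card:
  assumes g: "galois_ext E M" and KE: "K \<subseteq> E"
  shows "card (aut M E) = ext_degree E M"
proof -
  have fe: "finite_ext E M" using g unfolding galois_ext_def by auto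
  have E: "is_subfield E" using fe unfolding finite_ext_def by auto
  obtain \<theta> where th: "\<theta> \<in> M" "adjoin E \<theta> = M" using primitive_element[OF fe KE] by blast
  have b: "bij_betw (\<lambda>\<sigma>. \<sigma> \<theta>) (aut M E) {\<beta> \<in> M. poly (minpoly E \<theta>) \<beta> = 0}"
    using aut_roots_bij[OF E KE th(2)[symmetric]] .
  have "{\<beta> \<in> M. poly (minpoly E \<theta>) \<beta> = 0} = {\<beta>. poly (minpoly E \<theta>) \<beta> = 0}"
    using g th(1) unfolding galois_ext_def normal_ext_def by auto
  then have "card (aut M E) = card {\<beta>. poly (minpoly E \<theta>) \<beta> = 0}" using b bij_betw_same_card by metis
  also have "\<dots> = degree (minpoly E \<theta>)" using roots_card[OF sep_E[OF E KE]] .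
  also have "\<dots> = ext_degree E M" using simple_ext[OF E KE, of \<theta>] th by simp
  finally show ?thesis .
qed

lemma card_fix:
  assumes fe: "finite_ext E M" and KE: "K \<subseteq> E" and c: "card (aut M E) = ext_degree E M"
  shows "fix_field M (aut M E) = E"
proof -
  have Msf: "is_subfield M" using fe unfolding finite_ext_def by auto
  have S: "subgroup (aut M E) (galgrp M E)" using group.subgroup_self[OF galgrp_group[OF Msf], of E] by simp
  note A = artin[OF fe KE S]
  let ?F = "fix_field M (aut M E)"
  have i: "finite_ext E ?F" using intermediate[OF fe] A by blast
  have "ext_degree E M = ext_degree E ?F * ext_degree ?F M" using tower[OF i] A by blast
  moreover have "ext_degree ?F M = ext_degree E M" using A c by simp
  ultimately have "ext_degree E M = ext_degree E ?F * ext_degree E M" by simp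
  then have "ext_degree E ?F = 1" using degree_pos[OF fe] by simp
  then show ?thesis using degree_one[OF i] by simp
qed

lemma fix_gal:
  assumes fe: "finite_ext E M" and KE: "K \<subseteq> E" and f: "fix_field M (aut M E) = E"
  shows "galois_ext E M"
proof -
  have E: "is_subfield E" and Msf: "is_subfield M" using fe unfolding finite_ext_def by auto
  have S: "subgroup (aut M E) (galgrp M E)" using group.subgroup_self[OF galgrp_group[OF Msf], of E] by simp
  have fA: "finite (aut M E)" using aut_finite_card[OF fe KE] by blast
  have "normal_ext E M" unfolding normal_ext_def
  proof (intro ballI allI impI)
    fix x y assume x: "x \<in> M" and y: "poly (minpoly E x) y = 0"
    note op = orbit_poly[OF Msf S fA x]
    let ?Q = "\<Prod>y\<in>(\<lambda>\<sigma>. \<sigma> x) ` aut M E. [:-y, 1:]"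
    have alg: "algebraic_over E x" using alg_E[OF E KE] .
    have "minpoly E x dvd ?Q" using minpoly_dvd'[OF E alg _ op(2)] op(1) f by simp
    then have "poly ?Q y = 0" using y by (metis dvd_def mult_zero_left poly_mult)
    then show "y \<in> M" using op(3) op(5) by blast
  qed
  then show ?thesis unfolding galois_ext_def separable_ext_def using fe sep_E[OF E KE] by blast
qed

lemma gal_fix: "galois_ext E M \<Longrightarrow> K \<subseteq> E \<Longrightarrow> fix_field M (aut M E) = E"
  using gal_card card_fix galois_ext_def by metis

lemma gal_iff_card: "finite_ext E M \<Longrightarrow> K \<subseteq> E \<Longrightarrow> galois_ext E M \<longleftrightarrow> card (aut M E) = ext_degree E M"
  using gal_card card_fix fix_gal by metis

lemma gal_upper:
  assumes g: "galois_ext E M" and KE: "K \<subseteq> E" and N: "is_subfield N" "E \<subseteq> N" "N \<subseteq> M"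
  shows "galois_ext N M"
proof -
  have fe: "finite_ext E M" using g unfolding galois_ext_def by auto
  have E: "is_subfield E" using fe unfolding finite_ext_def by auto
  have fN: "finite_ext N M" using intermediate[OF fe N] by blast
  have "normal_ext N M" unfolding normal_ext_def
  proof (intro ballI allI impI)
    fix x y assume x: "x \<in> M" and y: "poly (minpoly N x) y = 0"
    have "minpoly N x dvd minpoly E x" using minpoly_mono_dvd[OF E N(1,2) alg_E[OF E KE]] .
    then have "poly (minpoly E x) y = 0" using y by (metis dvd_def mult_zero_left poly_mult)
    then show "y \<in> M" using g x unfolding galois_ext_def normal_ext_def by blast
  qed
  moreover have "separable_ext N M" unfolding separable_ext_def using sep_E[OF N(1)] KE N by auto
  ultimately show ?thesis using fN unfolding galois_ext_def by blast
qed

lemma gal_fix_aut: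
  assumes g: "galois_ext E M" and KE: "K \<subseteq> E" and N: "is_subfield N" "E \<subseteq> N" "N \<subseteq> M"
  shows "fix_field M (aut M N) = N"
  using gal_fix[OF gal_upper[OF assms]] KE N by auto

end


lemma ncl_props:
  assumes G: "group G" and H: "subgroup H G"
  shows "ncl G H \<lhd> G" "H \<subseteq> ncl G H" "\<And>N. N \<lhd> G \<Longrightarrow> H \<subseteq> N \<Longrightarrow> ncl G H \<subseteq> N"
    "ncl G H \<subseteq> carrier G"
proof -
  let ?A = "{N. N \<lhd> G \<and> H \<subseteq> N}"
  have cA: "carrier G \<in> ?A" using group.normal_self[OF G] subgroup.subset[OF H] by blast
  have sub: "subgroup (\<Inter>?A) G"
    by (rule group.subgroups_Inter[OF G]) (use cA normal_imp_subgroup in auto)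
  have "\<forall>x\<in>carrier G. \<forall>h\<in>\<Inter>?A. x \<otimes>\<^bsub>G\<^esub> h \<otimes>\<^bsub>G\<^esub> inv\<^bsub>G\<^esub> x \<in> \<Inter>?A"
    using group.normal_inv_iff[OF G] by blast
  then show "ncl G H \<lhd> G" unfolding ncl_def using group.normal_inv_iff[OF G] sub by blast
  show "H \<subseteq> ncl G H" unfolding ncl_def by blast
  show "\<And>N. N \<lhd> G \<Longrightarrow> H \<subseteq> N \<Longrightarrow> ncl G H \<subseteq> N" unfolding ncl_def by blast
  show "ncl G H \<subseteq> carrier G" unfolding ncl_def using cA by blast
qed

lemma ncl_normal_eq: "group G \<Longrightarrow> H \<lhd> G \<Longrightarrow> ncl G H = H"
  using ncl_props[of G H] normal_imp_subgroup by blast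

lemma aut_fixI: "\<sigma> \<in> aut M E \<Longrightarrow> (\<And>x. x \<in> N \<Longrightarrow> \<sigma> x = x) \<Longrightarrow> \<sigma> \<in> aut M N"
  unfolding aut_def by auto

lemma fix_field_anti: "S \<subseteq> T \<Longrightarrow> fix_field M T \<subseteq> fix_field M S"
  unfolding fix_field_def by auto

lemma card_fibers:
  assumes fA: "finite A" and k: "\<And>a. a \<in> A \<Longrightarrow> card {b \<in> A. f b = f a} = k"
  shows "card A = card (f ` A) * k"
proof -
  have A: "A = (\<Union>y\<in>f ` A. {b \<in> A. f b = y})" by auto
  have "card A = (\<Sum>y\<in>f ` A. card {b \<in> A. f b = y})"
    by (subst A, rule card_UN_disjoint) (use fA in auto)
  also have "\<dots> = (\<Sum>y\<in>f ` A. k)" using k by (intro sum.cong) auto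
  finally show ?thesis by simp
qed

definition maxgal :: "'a::field set \<Rightarrow> 'a set \<Rightarrow> 'a set \<Rightarrow> bool" where
  "maxgal E L F \<longleftrightarrow> E \<subseteq> F \<and> F \<subseteq> L \<and> galois_ext E F \<and>
     (\<forall>E'. E \<subseteq> E' \<and> E' \<subseteq> L \<and> galois_ext E E' \<longrightarrow> E' \<subseteq> F)"

lemma maxgal_unique:
  assumes a: "maxgal E L F" and b: "maxgal E L F'"
  shows "F = F'"
proof -
  have a1: "E \<subseteq> F" "F \<subseteq> L" "galois_ext E F" and a2: "\<forall>E'. E \<subseteq> E' \<and> E' \<subseteq> L \<and> galois_ext E E' \<longrightarrow> E' \<subseteq> F"
    using a unfolding maxgal_def by simp_all
  have b1: "E \<subseteq> F'" "F' \<subseteq> L" "galois_ext E F'" and b2: "\<forall>E'. E \<subseteq> E' \<and> E' \<subseteq> L \<and> galois_ext E E' \<longrightarrow> E' \<subseteq> F'"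
    using b unfolding maxgal_def by simp_all
  have "F \<subseteq> F'" using b2 a1 by simp
  moreover have "F' \<subseteq> F" using a2 b1 by simp
  ultimately show ?thesis by (rule subset_antisym)
qed

context gs
begin

lemma conj_exists:
  assumes g: "galois_ext E M" and KE: "K \<subseteq> E" and x: "x \<in> M" and y: "poly (minpoly E x) y = 0"
  shows "\<exists>\<sigma>\<in>aut M E. \<sigma> x = y"
proof -
  have fe: "finite_ext E M" using g unfolding galois_ext_def by auto
  have E: "is_subfield E" and Msf: "is_subfield M" using fe unfolding finite_ext_def by auto
  have S: "subgroup (aut M E) (galgrp M E)" using group.subgroup_self[OF galgrp_group[OF Msf], of E] by simp
  have fA: "finite (aut M E)" using aut_finite_card[OF fe KE] by blast
  note op = orbit_poly[OF Msf S fA x]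
  have f: "fix_field M (aut M E) = E" using gal_fix[OF g KE] .
  have alg: "algebraic_over E x" using alg_E[OF E KE] .
  have "minpoly E x dvd (\<Prod>y\<in>(\<lambda>\<sigma>. \<sigma> x) ` aut M E. [:-y, 1:])"
    using minpoly_dvd'[OF E alg _ op(2)] op(1) f by simp
  then have "poly (\<Prod>y\<in>(\<lambda>\<sigma>. \<sigma> x) ` aut M E. [:-y, 1:]) y = 0"
    using y by (metis dvd_def mult_zero_left poly_mult)
  then have "y \<in> (\<lambda>\<sigma>. \<sigma> x) ` aut M E" using op(3)[of y] by simp
  then show ?thesis by auto
qed

lemma aut_maps_normal:
  assumes gE': "galois_ext E E'" and KE: "K \<subseteq> E" and s: "\<sigma> \<in> aut M E" and Msf: "is_subfield M"
    and EM: "E \<subseteq> M" and E'M: "E' \<subseteq> M" and x: "x \<in> E'"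
  shows "\<sigma> x \<in> E'"
proof -
  have E: "is_subfield E" using gE' unfolding galois_ext_def finite_ext_def by auto
  have "poly (minpoly E x) (\<sigma> x) = 0" using aut_root[OF E KE s Msf EM] x E'M by blast
  then show ?thesis using gE' x unfolding galois_ext_def normal_ext_def by blast
qed

section \<open>The maximal Galois subextension\<close>

theorem keyA:
  assumes gM: "galois_ext E M" and KE: "K \<subseteq> E" and L: "is_subfield L" "E \<subseteq> L" "L \<subseteq> M"
  defines "N \<equiv> ncl (galgrp M E) (aut M L)"
  defines "F \<equiv> fix_field M N"
  shows "N \<lhd> galgrp M E" "aut M L \<subseteq> N" "aut M F = N" "maxgal E L F"
    "ext_degree E F = idx (galgrp M E) N"
    "ext_degree F L = idx ((galgrp M E)\<lparr>carrier := N\<rparr>) (aut M L)"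
    "is_subfield F" "finite_ext E F" "finite_ext F L"
proof -
  have fe: "finite_ext E M" using gM unfolding galois_ext_def by auto
  have E: "is_subfield E" and Msf: "is_subfield M" and EM: "E \<subseteq> M" using fe unfolding finite_ext_def by auto
  have G: "group (galgrp M E)" using galgrp_group[OF Msf] .
  have Hs: "subgroup (aut M L) (galgrp M E)" using aut_subgroup[OF L(2) Msf] .
  note np = ncl_props[OF G Hs, folded N_def]
  show Nn: "N \<lhd> galgrp M E" and HN: "aut M L \<subseteq> N" using np by auto
  have Ns: "subgroup N (galgrp M E)" using Nn normal_imp_subgroup by blast
  note A = artin[OF fe KE Ns, folded F_def]
  show aF: "aut M F = N" using A by blast
  show Fsf: "is_subfield F" using A by blast
  have EF: "E \<subseteq> F" and FM: "F \<subseteq> M" using A by auto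
  have fixL: "fix_field M (aut M L) = L" using gal_fix_aut[OF gM KE L] .
  have FL: "F \<subseteq> L" unfolding F_def using fix_field_anti[OF HN] fixL by blast
  show fEF: "finite_ext E F" using intermediate[OF fe Fsf EF FM] by blast
  have fEL: "finite_ext E L" using intermediate[OF fe L] by blast
  show fFL: "finite_ext F L" using intermediate[OF fEL Fsf EF FL] by blast
  have KF: "K \<subseteq> F" using KE EF by blast
  have NA: "N \<subseteq> aut M E" using np(4) by simp
  have normal: "normal_ext E F" unfolding normal_ext_def
  proof (intro ballI allI impI)
    fix x y assume x: "x \<in> F" and y: "poly (minpoly E x) y = 0"
    obtain \<sigma> where \<sigma>: "\<sigma> \<in> aut M E" "\<sigma> x = y" using conj_exists[OF gM KE _ y] x FM by blast
    have yM: "y \<in> M" using aut_in[OF \<sigma>(1)] x FM \<sigma>(2) by blast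
    have "\<tau> y = y" if t: "\<tau> \<in> N" for \<tau>
    proof -
      have iv: "inv\<^bsub>galgrp M E\<^esub> \<sigma> = ainv M \<sigma>" using galgrp_inv[OF Msf \<sigma>(1)] .
      have ia: "ainv M \<sigma> \<in> aut M E" using ainv_aut[OF \<sigma>(1) Msf] .
      have "inv\<^bsub>galgrp M E\<^esub> (ainv M \<sigma>) = \<sigma>"
        using group.inv_inv[OF G, of \<sigma>] \<sigma>(1) iv by simp
      then have "ainv M \<sigma> \<circ> \<tau> \<circ> \<sigma> \<in> N"
        using group.normal_inv_iff[OF G, of N] Nn ia t by fastforce
      then have "(ainv M \<sigma> \<circ> \<tau> \<circ> \<sigma>) x = x" using x unfolding F_def fix_field_def by blast
      then have "\<sigma> ((ainv M \<sigma> \<circ> \<tau> \<circ> \<sigma>) x) = \<sigma> x" by simp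
      then show ?thesis using ainv_right[OF \<sigma>(1)] \<sigma>(2) by (metis comp_apply id_apply)
    qed
    then show "y \<in> F" unfolding F_def fix_field_def using yM by blast
  qed
  have gF: "galois_ext E F" unfolding galois_ext_def separable_ext_def
    using fEF normal sep_E[OF E KE] by blast
  have maxi: "E' \<subseteq> F" if E': "E \<subseteq> E'" "E' \<subseteq> L" "galois_ext E E'" for E'
  proof -
    have E'sf: "is_subfield E'" using E'(3) unfolding galois_ext_def finite_ext_def by auto
    have E'M: "E' \<subseteq> M" using E'(2) L(3) by blast
    have sE': "subgroup (aut M E') (galgrp M E)" using aut_subgroup[OF E'(1) Msf] .
    have "aut M E' \<lhd> galgrp M E"
      unfolding group.normal_inv_iff[OF G]
    proof (intro conjI ballI)
      show "subgroup (aut M E') (galgrp M E)" by (rule sE')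
      fix \<sigma> \<tau> assume \<sigma>: "\<sigma> \<in> carrier (galgrp M E)" and \<tau>: "\<tau> \<in> aut M E'"
      have s: "\<sigma> \<in> aut M E" using \<sigma> by simp
      have iv: "inv\<^bsub>galgrp M E\<^esub> \<sigma> = ainv M \<sigma>" using galgrp_inv[OF Msf s] .
      have ia: "ainv M \<sigma> \<in> aut M E" using ainv_aut[OF s Msf] .
      have tE: "\<tau> \<in> aut M E" using \<tau> aut_mono[OF E'(1)] by blast
      have comp: "\<sigma> \<circ> \<tau> \<circ> ainv M \<sigma> \<in> aut M E" using aut_comp[OF aut_comp[OF s tE] ia] .
      have "(\<sigma> \<circ> \<tau> \<circ> ainv M \<sigma>) e = e" if e: "e \<in> E'" for e
      proof -
        have "ainv M \<sigma> e \<in> E'" using aut_maps_normal[OF E'(3) KE ia Msf EM E'M e] .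
        then have "\<tau> (ainv M \<sigma> e) = ainv M \<sigma> e" using aut_fix[OF \<tau>] by blast
        then show ?thesis using ainv_right[OF s] by (metis comp_apply id_apply)
      qed
      then have "\<sigma> \<circ> \<tau> \<circ> ainv M \<sigma> \<in> aut M E'" using aut_fixI[OF comp] by blast
      then show "\<sigma> \<otimes>\<^bsub>galgrp M E\<^esub> \<tau> \<otimes>\<^bsub>galgrp M E\<^esub> inv\<^bsub>galgrp M E\<^esub> \<sigma> \<in> aut M E'" using iv by simp
    qed
    moreover have "aut M L \<subseteq> aut M E'" using aut_mono[OF E'(2)] .
    ultimately have "N \<subseteq> aut M E'" using np(3) by blast
    then have "fix_field M (aut M E') \<subseteq> F" unfolding F_def by (rule fix_field_anti)
    moreover have "fix_field M (aut M E') = E'" using gal_fix_aut[OF gM KE E'sf E'(1) E'M] .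
    ultimately show ?thesis by simp
  qed
  show "maxgal E L F" unfolding maxgal_def using EF FL gF maxi by blast
  have fA: "finite (aut M E)" using aut_finite_card[OF fe KE] by blast
  have fN: "finite N" using finite_subset[OF NA fA] .
  have cN: "card N > 0" using fN subgroup.one_closed[OF Ns] by (auto simp: card_gt_0_iff)
  have dME: "ext_degree E M = card (aut M E)" using gal_card[OF gM KE] by simp
  have dMF: "ext_degree F M = card N" using A by blast
  have fFM: "finite_ext F M" using A by blast
  have t1: "ext_degree E M = ext_degree E F * ext_degree F M" using tower[OF fEF fFM] by blast
  have lag1: "card (rcosets\<^bsub>galgrp M E\<^esub> N) * card N = card (aut M E)"
    using group.lagrange[OF G Ns] by (simp add: Coset.order_def)
  show "ext_degree E F = idx (galgrp M E) N"
    unfolding idx_def using t1 dME dMF lag1 cN by (metis mult_right_cancel not_gr0)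
  have gL: "galois_ext L M" using gal_upper[OF gM KE L] .
  have KL: "K \<subseteq> L" using KE L by blast
  have dML: "ext_degree L M = card (aut M L)" using gal_card[OF gL KL] by simp
  have fLM: "finite_ext L M" using intermediate[OF fe L] by blast
  have t2: "ext_degree F M = ext_degree F L * ext_degree L M" using tower[OF fFL fLM] by blast
  have GN: "group ((galgrp M E)\<lparr>carrier := N\<rparr>)" using group.subgroup_imp_group[OF G Ns] .
  have HsN: "subgroup (aut M L) ((galgrp M E)\<lparr>carrier := N\<rparr>)"
    using group.subgroup_incl[OF G Hs Ns HN] .
  have lag2: "card (rcosets\<^bsub>(galgrp M E)\<lparr>carrier := N\<rparr>\<^esub> (aut M L)) * card (aut M L) = card N"
    using group.lagrange[OF GN HsN] by (simp add: Coset.order_def)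
  have cH: "card (aut M L) > 0"
    using subgroup.one_closed[OF Hs] finite_subset[OF aut_mono[OF L(2)] fA] by (auto simp: card_gt_0_iff)
  show "ext_degree F L = idx ((galgrp M E)\<lparr>carrier := N\<rparr>) (aut M L)"
    unfolding idx_def using t2 dMF dML lag2 cH by (metis mult_right_cancel not_gr0)
qed

section \<open>Existence of Galois closures\<close>

lemma gen_exists:
  assumes E: "is_subfield E" "K \<subseteq> E" and R: "finite R"
  shows "\<exists>N. is_subfield N \<and> E \<subseteq> N \<and> R \<subseteq> N \<and> finite_ext E N \<and>
             (\<forall>M. is_subfield M \<and> E \<subseteq> M \<and> R \<subseteq> M \<longrightarrow> N \<subseteq> M)"
  using R
proof (induction R rule: finite_induct)
  case empty
  then show ?case using E degree_self[OF E(1)] by blast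
next
  case (insert r R)
  then obtain N where N: "is_subfield N" "E \<subseteq> N" "R \<subseteq> N" "finite_ext E N"
    "\<forall>M. is_subfield M \<and> E \<subseteq> M \<and> R \<subseteq> M \<longrightarrow> N \<subseteq> M" by blast
  let ?N' = "adjoin N r"
  have KN: "K \<subseteq> N" using N E by blast
  have "finite_ext N ?N'" using simple_ext[OF N(1) KN] by blast
  then have f: "finite_ext E ?N'" using tower[OF N(4)] by blast
  have NN: "N \<subseteq> ?N'" using adjoin_base .
  have rN: "r \<in> ?N'" using adjoin_gen .
  have mini: "\<forall>M. is_subfield M \<and> E \<subseteq> M \<and> insert r R \<subseteq> M \<longrightarrow> ?N' \<subseteq> M"
  proof (intro allI impI)
    fix M assume M: "is_subfield M \<and> E \<subseteq> M \<and> insert r R \<subseteq> M"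
    then have "R \<subseteq> M" "r \<in> M" by auto
    then have "N \<subseteq> M" using N(5) M by blast
    then show "?N' \<subseteq> M" using adjoin_least[of M N r] M \<open>r \<in> M\<close> by blast
  qed
  have sfN': "is_subfield ?N'" by (rule adjoin_sf)
  have EN': "E \<subseteq> ?N'" using N(2) NN by (rule subset_trans)
  have RN': "insert r R \<subseteq> ?N'" using N(3) NN rN by blast
  show ?case using sfN' EN' RN' f mini by blast
qed

lemma emb_exists:
  assumes E: "is_subfield E" "K \<subseteq> E" and \<beta>: "poly (minpoly E \<theta>) \<beta> = 0"
  shows "\<exists>\<sigma>. \<forall>f. poly_over E f \<longrightarrow> \<sigma> (poly f \<theta>) = poly f \<beta>"
proof -
  have alg: "algebraic_over E \<theta>" using alg_E[OF E] .
  define \<sigma> where "\<sigma> x = poly (SOME f. poly_over E f \<and> x = poly f \<theta>) \<beta>" for x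
  have "\<sigma> (poly f \<theta>) = poly f \<beta>" if f: "poly_over E f" for f
  proof -
    have ex: "\<exists>g. poly_over E g \<and> poly f \<theta> = poly g \<theta>" using f by blast
    define g where "g = (SOME g. poly_over E g \<and> poly f \<theta> = poly g \<theta>)"
    have g: "poly_over E g" "poly f \<theta> = poly g \<theta>" using someI_ex[OF ex] unfolding g_def by auto
    have "poly (f - g) \<theta> = 0" using g by simp
    then have "minpoly E \<theta> dvd (f - g)" using minpoly_dvd'[OF E(1) alg po_diff[OF E(1) f g(1)]] by blast
    then have "poly (f - g) \<beta> = 0" using \<beta> by (metis dvd_def mult_zero_left poly_mult)
    then show ?thesis unfolding \<sigma>_def g_def[symmetric] by simp
  qed
  then show ?thesis by blast
qed

theorem galois_exists:
  assumes fe: "finite_ext E L" and KE: "K \<subseteq> E"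
  shows "\<exists>N. L \<subseteq> N \<and> galois_ext E N"
proof -
  have E: "is_subfield E" using fe unfolding finite_ext_def by auto
  obtain \<theta> where th: "\<theta> \<in> L" "adjoin E \<theta> = L" using primitive_element[OF fe KE] by blast
  have alg: "algebraic_over E \<theta>" using alg_E[OF E KE] .
  let ?f = "minpoly E \<theta>"
  let ?R = "{x. poly ?f x = 0}"
  have fR: "finite ?R" using poly_roots_finite[OF minpoly_nz[OF E alg]] .
  obtain N where N: "is_subfield N" "E \<subseteq> N" "?R \<subseteq> N" "finite_ext E N"
    "\<forall>M. is_subfield M \<and> E \<subseteq> M \<and> ?R \<subseteq> M \<longrightarrow> N \<subseteq> M"
    using gen_exists[OF E KE fR] by blast
  have thN: "\<theta> \<in> N" using N(3) minpoly_root[OF E alg] by blast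
  have LN: "L \<subseteq> N" using adjoin_least[OF N(1) N(2) thN] th by simp
  obtain \<eta> where eta: "\<eta> \<in> N" "adjoin E \<eta> = N" using primitive_element[OF N(4) KE] by blast
  let ?g = "minpoly E \<eta>"
  have algeta: "algebraic_over E \<eta>" using alg_E[OF E KE] .
  have roots_in: "\<eta>' \<in> N" if r: "poly ?g \<eta>' = 0" for \<eta>'
  proof -
    obtain \<sigma> where \<sigma>: "\<And>h. poly_over E h \<Longrightarrow> \<sigma> (poly h \<eta>) = poly h \<eta>'"
      using emb_exists[OF E KE r] by blast
    have rep: "\<exists>h. poly_over E h \<and> x = poly h \<eta>" if "x \<in> N" for x
      using adjoin_mem[OF E KE] eta that by blast
    have hom: "\<sigma> (x + y) = \<sigma> x + \<sigma> y \<and> \<sigma> (x * y) = \<sigma> x * \<sigma> y \<and> \<sigma> (x - y) = \<sigma> x - \<sigma> y"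
      if xy: "x \<in> N" "y \<in> N" for x y
    proof -
      obtain h h' where hh: "poly_over E h" "x = poly h \<eta>" "poly_over E h'" "y = poly h' \<eta>"
        using rep xy by blast
      have "\<sigma> (x + y) = \<sigma> x + \<sigma> y" using \<sigma>[OF po_add[OF E hh(1,3)]] \<sigma>[OF hh(1)] \<sigma>[OF hh(3)] hh by simp
      moreover have "\<sigma> (x * y) = \<sigma> x * \<sigma> y" using \<sigma>[OF po_mult[OF E hh(1,3)]] \<sigma>[OF hh(1)] \<sigma>[OF hh(3)] hh by simp
      moreover have "\<sigma> (x - y) = \<sigma> x - \<sigma> y" using \<sigma>[OF po_diff[OF E hh(1,3)]] \<sigma>[OF hh(1)] \<sigma>[OF hh(3)] hh by simp
      ultimately show ?thesis by blast
    qed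
    have const: "\<sigma> c = c" if "c \<in> E" for c using \<sigma>[OF po_const[OF E that]] by simp
    have s1: "\<sigma> 1 = 1" using const sf_one[OF E] by blast
    have s0: "\<sigma> 0 = 0" using const sf_zero[OF E] by blast
    have sR: "\<sigma> r \<in> ?R" if "r \<in> ?R" for r
    proof -
      have rN: "r \<in> N" using that N(3) by blast
      obtain h where h: "poly_over E h" "r = poly h \<eta>" using rep[OF rN] by blast
      have pc: "poly_over E (pcompose ?f h)" using po_pcompose[OF E minpoly_over[OF E alg] h(1)] .
      have "poly (pcompose ?f h) \<eta> = 0" using that h(2) by (simp add: poly_pcompose)
      then have "\<sigma> (poly (pcompose ?f h) \<eta>) = 0" using s0 by simp
      then have "poly (pcompose ?f h) \<eta>' = 0" using \<sigma>[OF pc] by simp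
      then show ?thesis using \<sigma>[OF h(1)] h(2) by (simp add: poly_pcompose)
    qed
    define P where "P = {x \<in> N. \<sigma> x \<in> N}"
    have Psf: "is_subfield P" unfolding is_subfield_def P_def
    proof (intro conjI ballI impI)
      show "0 \<in> {x \<in> N. \<sigma> x \<in> N}" using s0 sf_zero[OF N(1)] by simp
      show "1 \<in> {x \<in> N. \<sigma> x \<in> N}" using s1 sf_one[OF N(1)] by simp
      fix x y assume x: "x \<in> {x \<in> N. \<sigma> x \<in> N}" and y: "y \<in> {x \<in> N. \<sigma> x \<in> N}"
      then show "x + y \<in> {x \<in> N. \<sigma> x \<in> N}" "x - y \<in> {x \<in> N. \<sigma> x \<in> N}" "x * y \<in> {x \<in> N. \<sigma> x \<in> N}"
        using hom[of x y] sf_add[OF N(1)] sf_diff[OF N(1)] sf_mult[OF N(1)] by auto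
    next
      fix x assume x: "x \<in> {x \<in> N. \<sigma> x \<in> N}" and x0: "x \<noteq> 0"
      have iN: "inverse x \<in> N" using x sf_inverse[OF N(1)] by blast
      have "\<sigma> x * \<sigma> (inverse x) = 1" using hom[of x "inverse x"] x iN x0 s1 by auto
      then have "\<sigma> (inverse x) = inverse (\<sigma> x)" by (metis inverse_unique)
      then show "inverse x \<in> {x \<in> N. \<sigma> x \<in> N}" using iN x sf_inverse[OF N(1)] by auto
    qed
    have "E \<subseteq> P" unfolding P_def using N(2) const by auto
    moreover have "?R \<subseteq> P" unfolding P_def using N(3) sR by blast
    ultimately have "N \<subseteq> P" using N(5) Psf by blast
    then have "\<sigma> \<eta> \<in> N" using eta(1) unfolding P_def by blast
    moreover have "\<sigma> \<eta> = \<eta>'" using \<sigma>[OF po_X[OF E, THEN iffD2, OF sf_zero[OF E]]] by simp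
    ultimately show ?thesis by simp
  qed
  have b: "bij_betw (\<lambda>\<sigma>. \<sigma> \<eta>) (aut N E) {\<beta> \<in> N. poly ?g \<beta> = 0}"
    using aut_roots_bij[OF E KE eta(2)[symmetric]] .
  have "{\<beta> \<in> N. poly ?g \<beta> = 0} = {\<beta>. poly ?g \<beta> = 0}" using roots_in by blast
  then have "card (aut N E) = card {\<beta>. poly ?g \<beta> = 0}" using bij_betw_same_card[OF b] by simp
  also have "\<dots> = degree ?g" using roots_card[OF sep_E[OF E KE]] .
  also have "\<dots> = ext_degree E N" using simple_ext[OF E KE, of \<eta>] eta by simp
  finally have "galois_ext E N" using gal_iff_card[OF N(4) KE] by simp
  then show ?thesis using LN by blast
qed

theorem gal_closure_props:
  assumes fe: "finite_ext E L" and KE: "K \<subseteq> E"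
  shows "galois_ext E (gal_closure E L)" "L \<subseteq> gal_closure E L"
    "\<And>M. L \<subseteq> M \<Longrightarrow> galois_ext E M \<Longrightarrow> gal_closure E L \<subseteq> M"
proof -
  have E: "is_subfield E" and EL: "E \<subseteq> L" using fe unfolding finite_ext_def by auto
  obtain N0 where N0: "L \<subseteq> N0" "galois_ext E N0" using galois_exists[OF fe KE] by blast
  let ?A = "{M. L \<subseteq> M \<and> galois_ext E M}"
  let ?Lt = "gal_closure E L"
  have Lt: "?Lt = \<Inter>?A" unfolding gal_closure_def ..
  show LLt: "L \<subseteq> ?Lt" unfolding Lt by blast
  show min: "\<And>M. L \<subseteq> M \<Longrightarrow> galois_ext E M \<Longrightarrow> ?Lt \<subseteq> M" unfolding Lt by blast
  have sf: "is_subfield ?Lt" unfolding Lt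
    by (rule sf_Inter) (auto simp: galois_ext_def finite_ext_def)
  have fN0: "finite_ext E N0" using N0 unfolding galois_ext_def by auto
  have "finite_ext E ?Lt" using intermediate[OF fN0 sf] LLt EL min[OF N0] by blast
  moreover have "normal_ext E ?Lt" unfolding normal_ext_def Lt
    by (auto simp: galois_ext_def normal_ext_def)
  moreover have "separable_ext E ?Lt" unfolding separable_ext_def using sep_E[OF E KE] by blast
  ultimately show "galois_ext E (gal_closure E L)" unfolding galois_ext_def by blast
qed

theorem asc_field_maxgal:
  assumes fe: "finite_ext E L" and KE: "K \<subseteq> E"
  shows "maxgal E L (asc_field E L)"
proof -
  have L: "is_subfield L" "E \<subseteq> L" using fe unfolding finite_ext_def by auto
  note C = gal_closure_props[OF fe KE]
  have "L \<subseteq> gal_closure E L" using C by blast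
  moreover have "gal_closure E L \<subseteq> gal_closure E L" ..
  ultimately show ?thesis
    using keyA(4)[OF C(1) KE L(1) L(2)] unfolding asc_field_def Let_def by blast
qed

lemma maxgal_props:
  assumes "maxgal E L F"
  shows "E \<subseteq> F" "F \<subseteq> L" "galois_ext E F" "\<And>E'. E \<subseteq> E' \<Longrightarrow> E' \<subseteq> L \<Longrightarrow> galois_ext E E' \<Longrightarrow> E' \<subseteq> F"
  using assms unfolding maxgal_def by blast+

lemma cluster_aut:
  assumes fe: "finite_ext E L" and KE: "K \<subseteq> E"
  shows "cluster_size E L = card (aut L E)"
proof -
  have E: "is_subfield E" using fe unfolding finite_ext_def by auto
  have ex: "\<exists>a. a \<in> L \<and> adjoin E a = L" using primitive_element[OF fe KE] by blast
  define a where "a = (SOME a. a \<in> L \<and> adjoin E a = L)"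
  have a: "a \<in> L" "adjoin E a = L" using someI_ex[OF ex] unfolding a_def by auto
  have "card (aut L E) = card {y \<in> L. poly (minpoly E a) y = 0}"
    using bij_betw_same_card[OF aut_roots_bij[OF E KE a(2)[symmetric]]] .
  then show ?thesis unfolding cluster_size_def Let_def a_def[symmetric] by simp
qed

lemma restr_dvd:
  assumes fe: "finite_ext K L" and gF: "galois_ext K F" and KF: "K \<subseteq> F" and FL: "F \<subseteq> L"
  shows "card (aut L K) dvd ext_degree K F * card (aut L F)"
proof -
  have Lsf: "is_subfield L" and KL: "K \<subseteq> L" using fe unfolding finite_ext_def by auto
  have Fsf: "is_subfield F" using gF unfolding galois_ext_def finite_ext_def by auto
  define \<rho> where "\<rho> \<sigma> = (\<lambda>x. if x \<in> F then \<sigma> x else x)" for \<sigma> :: "'a \<Rightarrow> 'a"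
  have mapsF: "\<sigma> x \<in> F" if "\<sigma> \<in> aut L K" "x \<in> F" for \<sigma> x
    using aut_maps_normal[OF gF order_refl that(1) Lsf KL FL that(2)] .
  have rho_aut: "\<rho> \<sigma> \<in> aut F K" if s: "\<sigma> \<in> aut L K" for \<sigma>
  proof -
    have inj: "inj_on (\<rho> \<sigma>) F" using aut_inj[OF s] FL unfolding \<rho>_def
      by (auto simp: inj_on_def)
    have img: "\<rho> \<sigma> ` F = F"
    proof
      show "\<rho> \<sigma> ` F \<subseteq> F" using mapsF[OF s] unfolding \<rho>_def by auto
      show "F \<subseteq> \<rho> \<sigma> ` F"
      proof
        fix y assume y: "y \<in> F"
        have ia: "ainv L \<sigma> \<in> aut L K" using ainv_aut[OF s Lsf] .
        have "ainv L \<sigma> y \<in> F" using mapsF[OF ia y] .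
        moreover have "\<sigma> (ainv L \<sigma> y) = y" using ainv_right[OF s] by (metis comp_apply id_apply)
        ultimately show "y \<in> \<rho> \<sigma> ` F" unfolding \<rho>_def by force
      qed
    qed
    show ?thesis unfolding aut_def
      using inj img aut_add[OF s] aut_mult[OF s] aut_fix[OF s] KF FL sf_add[OF Fsf] sf_mult[OF Fsf]
      by (auto simp: bij_betw_def \<rho>_def subset_iff)
  qed
  have rho_comp: "\<rho> (\<sigma> \<circ> \<tau>) = \<rho> \<sigma> \<circ> \<rho> \<tau>" if "\<sigma> \<in> aut L K" "\<tau> \<in> aut L K" for \<sigma> \<tau>
    using mapsF[OF that(2)] unfolding \<rho>_def by (auto simp: fun_eq_iff)
  have ker: "\<rho> \<sigma> = id \<longleftrightarrow> \<sigma> \<in> aut L F" if s: "\<sigma> \<in> aut L K" for \<sigma>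
  proof
    assume r: "\<rho> \<sigma> = id"
    have "\<sigma> x = x" if x: "x \<in> F" for x
    proof -
      have "\<rho> \<sigma> x = id x" using r by simp
      then show ?thesis using x unfolding \<rho>_def by simp
    qed
    then show "\<sigma> \<in> aut L F" using aut_fixI[OF s] by blast
  next
    assume "\<sigma> \<in> aut L F"
    then show "\<rho> \<sigma> = id" unfolding \<rho>_def using aut_fix by (auto simp: fun_eq_iff)
  qed
  have fA: "finite (aut L K)" using aut_finite_card[OF fe order_refl] by blast
  have fib: "card {b \<in> aut L K. \<rho> b = \<rho> a} = card (aut L F)" if a: "a \<in> aut L K" for a
  proof -
    have "{b \<in> aut L K. \<rho> b = \<rho> a} = (\<lambda>\<tau>. a \<circ> \<tau>) ` aut L F"
    proof
      show "{b \<in> aut L K. \<rho> b = \<rho> a} \<subseteq> (\<lambda>\<tau>. a \<circ> \<tau>) ` aut L F"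
      proof
        fix b assume b: "b \<in> {b \<in> aut L K. \<rho> b = \<rho> a}"
        let ?t = "ainv L a \<circ> b"
        have ia: "ainv L a \<in> aut L K" using ainv_aut[OF a Lsf] .
        have tK: "?t \<in> aut L K" using aut_comp[OF ia] b by blast
        have "\<rho> ?t = \<rho> (ainv L a) \<circ> \<rho> b" using rho_comp[OF ia] b by blast
        also have "\<dots> = \<rho> (ainv L a) \<circ> \<rho> a" using b by simp
        also have "\<dots> = \<rho> (ainv L a \<circ> a)" using rho_comp[OF ia a] by simp
        also have "\<dots> = id" using ainv_left[OF a] unfolding \<rho>_def by (simp add: fun_eq_iff)
        finally have "?t \<in> aut L F" using ker[OF tK] by blast
        moreover have "b = a \<circ> ?t" using ainv_right[OF a] by (simp add: comp_assoc[symmetric])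
        ultimately show "b \<in> (\<lambda>\<tau>. a \<circ> \<tau>) ` aut L F" by (intro image_eqI[where x = "?t"])
      qed
      show "(\<lambda>\<tau>. a \<circ> \<tau>) ` aut L F \<subseteq> {b \<in> aut L K. \<rho> b = \<rho> a}"
      proof
        fix b assume "b \<in> (\<lambda>\<tau>. a \<circ> \<tau>) ` aut L F"
        then obtain \<tau> where t: "\<tau> \<in> aut L F" "b = a \<circ> \<tau>" by blast
        have tK: "\<tau> \<in> aut L K" using t(1) aut_mono[OF KF] by blast
        have "\<rho> b = \<rho> a \<circ> \<rho> \<tau>" using rho_comp[OF a tK] t(2) by simp
        also have "\<dots> = \<rho> a" using ker[OF tK] t(1) by simp
        finally show "b \<in> {b \<in> aut L K. \<rho> b = \<rho> a}" using aut_comp[OF a tK] t(2) by simp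
      qed
    qed
    moreover have "inj_on (\<lambda>\<tau>. a \<circ> \<tau>) (aut L F)"
    proof (rule inj_onI)
      fix t1 t2 assume "a \<circ> t1 = a \<circ> t2"
      then have "ainv L a \<circ> (a \<circ> t1) = ainv L a \<circ> (a \<circ> t2)" by simp
      then show "t1 = t2" using ainv_left[OF a] by (simp add: comp_assoc[symmetric])
    qed
    ultimately show ?thesis by (simp add: card_image)
  qed
  have cA: "card (aut L K) = card (\<rho> ` aut L K) * card (aut L F)"
    using card_fibers[OF fA fib] .
  have G: "group (galgrp F K)" using galgrp_group[OF Fsf] .
  have sub: "subgroup (\<rho> ` aut L K) (galgrp F K)"
  proof (rule group.subgroupI[OF G])
    show "\<rho> ` aut L K \<subseteq> carrier (galgrp F K)" using rho_aut by auto
    show "\<rho> ` aut L K \<noteq> {}" using id_aut by blast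
    fix a assume "a \<in> \<rho> ` aut L K"
    then obtain \<sigma> where s: "\<sigma> \<in> aut L K" "a = \<rho> \<sigma>" by blast
    have ia: "ainv L \<sigma> \<in> aut L K" using ainv_aut[OF s(1) Lsf] .
    have "\<rho> (ainv L \<sigma>) \<circ> \<rho> \<sigma> = \<rho> (ainv L \<sigma> \<circ> \<sigma>)" using rho_comp[OF ia s(1)] by simp
    also have "\<dots> = id" using ainv_left[OF s(1)] unfolding \<rho>_def by (simp add: fun_eq_iff)
    finally have "\<rho> (ainv L \<sigma>) \<circ> \<rho> \<sigma> = id" .
    then have "inv\<^bsub>galgrp F K\<^esub> a = \<rho> (ainv L \<sigma>)"
      using group.inv_equality[OF G, of "\<rho> (ainv L \<sigma>)" "\<rho> \<sigma>"] rho_aut[OF s(1)] rho_aut[OF ia] s(2) by simp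
    then show "inv\<^bsub>galgrp F K\<^esub> a \<in> \<rho> ` aut L K" using ia by blast
  next
    fix a b assume "a \<in> \<rho> ` aut L K" "b \<in> \<rho> ` aut L K"
    then obtain \<sigma> \<tau> where "\<sigma> \<in> aut L K" "a = \<rho> \<sigma>" "\<tau> \<in> aut L K" "b = \<rho> \<tau>" by blast
    then show "a \<otimes>\<^bsub>galgrp F K\<^esub> b \<in> \<rho> ` aut L K" using rho_comp aut_comp by (metis galgrp_mult image_eqI)
  qed
  have "card (rcosets\<^bsub>galgrp F K\<^esub> (\<rho> ` aut L K)) * card (\<rho> ` aut L K) = card (aut F K)"
    using group.lagrange[OF G sub] by (simp add: Coset.order_def)
  then have "card (\<rho> ` aut L K) dvd ext_degree K F" using gal_card[OF gF order_refl]
    by (metis dvd_triv_right)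
  then show ?thesis using cA by (simp add: mult_dvd_mono)
qed

end


primrec gseq :: "('g, 'b) monoid_scheme \<Rightarrow> 'g set \<Rightarrow> nat \<Rightarrow> 'g set" where
  "gseq G H 0 = carrier G"
| "gseq G H (Suc i) = ncl (G\<lparr>carrier := gseq G H i\<rparr>) H"

lemma aut_self: "aut M M = {id}"
proof
  show "aut M M \<subseteq> {id}"
  proof
    fix \<sigma> assume s: "\<sigma> \<in> aut M M"
    have "\<sigma> x = x" for x by (cases "x \<in> M") (use s in \<open>auto simp: aut_def\<close>)
    then show "\<sigma> \<in> {id}" by auto
  qed
  show "{id} \<subseteq> aut M M" using id_aut by auto
qed

lemma fix_field_id: "fix_field M {id} = M"
  unfolding fix_field_def by auto

lemma galgrp_self_update: "(galgrp M E)\<lparr>carrier := aut M E\<rparr> = galgrp M E"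
  by (simp add: galgrp_def)

lemma galgrp_update2: "((galgrp M E)\<lparr>carrier := A\<rparr>)\<lparr>carrier := B\<rparr> = (galgrp M E)\<lparr>carrier := B\<rparr>"
  by simp

locale gsL = gs +
  fixes L :: "'a::field set"
  assumes ext: "finite_ext K L"
begin

abbreviation "LT \<equiv> gal_closure K L"
abbreviation "GR \<equiv> galgrp LT K"
abbreviation "HR \<equiv> aut LT L"
abbreviation "gq \<equiv> gseq GR HR"
abbreviation "fq i \<equiv> fix_field LT (gq i)"

lemma Ksf: "is_subfield K" using K_sf .
lemma Lsf: "is_subfield L" using ext unfolding finite_ext_def by auto
lemma KL: "K \<subseteq> L" using ext unfolding finite_ext_def by auto
lemma gLT: "galois_ext K LT" using gal_closure_props[OF ext order_refl] by blast
lemma LLT: "L \<subseteq> LT" using gal_closure_props[OF ext order_refl] by blast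
lemma LTsf: "is_subfield LT" using gLT unfolding galois_ext_def finite_ext_def by auto
lemma feLT: "finite_ext K LT" using gLT unfolding galois_ext_def by auto

lemma fq_inv: "K \<subseteq> fq i \<and> fq i \<subseteq> L \<and> is_subfield (fq i) \<and> gq i = aut LT (fq i)"
proof (induction i)
  case 0
  have "fq 0 = K" using gal_fix[OF gLT order_refl] by simp
  then show ?case using KL Ksf by simp
next
  case (Suc i)
  let ?Fi = "fq i"
  have Fi: "K \<subseteq> ?Fi" "?Fi \<subseteq> L" "is_subfield ?Fi" "gq i = aut LT ?Fi" using Suc by auto
  have g: "galois_ext ?Fi LT" using gal_upper[OF gLT order_refl Fi(3) Fi(1)] Fi(2) LLT by blast
  have up: "GR\<lparr>carrier := gq i\<rparr> = galgrp LT ?Fi" using Fi(4) galgrp_update by metis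
  note A = keyA[OF g Fi(1) Lsf Fi(2) LLT]
  have eq: "gq (Suc i) = ncl (galgrp LT ?Fi) HR" using up by (simp only: gseq.simps)
  have m: "maxgal ?Fi L (fq (Suc i))" using A(4)[folded eq] .
  have 1: "?Fi \<subseteq> fq (Suc i)" by (rule maxgal_props(1)[OF m])
  have 2: "fq (Suc i) \<subseteq> L" by (rule maxgal_props(2)[OF m])
  have 3: "is_subfield (fq (Suc i))" using A(7)[folded eq] .
  have 4: "gq (Suc i) = aut LT (fq (Suc i))" using A(3)[folded eq] by (rule sym)
  show ?case using Fi(1) 1 2 3 4 by blast
qed

lemma fq_K: "fq 0 = K" using gal_fix[OF gLT order_refl] by simp

lemma step:
  shows "maxgal (fq i) L (fq (Suc i))" "asc_field (fq i) L = fq (Suc i)"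
    "t_idx (fq i) L = idx (GR\<lparr>carrier := gq i\<rparr>) (gq (Suc i))"
    "u_idx (fq i) L = idx (GR\<lparr>carrier := gq (Suc i)\<rparr>) HR"
    "finite_ext (fq i) (fq (Suc i))" "finite_ext (fq i) L"
    "gq (Suc i) \<lhd> GR\<lparr>carrier := gq i\<rparr>" "HR \<subseteq> gq (Suc i)"
proof -
  let ?Fi = "fq i"
  have Fi: "K \<subseteq> ?Fi" "?Fi \<subseteq> L" "is_subfield ?Fi" "gq i = aut LT ?Fi" using fq_inv by auto
  have g: "galois_ext ?Fi LT" using gal_upper[OF gLT order_refl Fi(3) Fi(1)] Fi(2) LLT by blast
  have up: "GR\<lparr>carrier := gq i\<rparr> = galgrp LT ?Fi" using Fi(4) galgrp_update by metis
  note A = keyA[OF g Fi(1) Lsf Fi(2) LLT]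
  have eq: "gq (Suc i) = ncl (galgrp LT ?Fi) HR" using up by (simp only: gseq.simps)
  show mg: "maxgal (fq i) L (fq (Suc i))" using A(4)[folded eq] .
  have FiLT: "?Fi \<subseteq> LT" using Fi(2) LLT by blast
  have "finite_ext ?Fi LT" using intermediate[OF feLT Fi(3) Fi(1) FiLT] by blast
  then show fe: "finite_ext (fq i) L" using intermediate[OF _ Lsf Fi(2) LLT] by blast
  have "maxgal (fq i) L (asc_field (fq i) L)" using asc_field_maxgal[OF fe Fi(1)] .
  then show asc: "asc_field (fq i) L = fq (Suc i)" using maxgal_unique mg by blast
  show "t_idx (fq i) L = idx (GR\<lparr>carrier := gq i\<rparr>) (gq (Suc i))"
    unfolding t_idx_def asc up using A(5)[folded eq] .
  have r: "(galgrp LT ?Fi)\<lparr>carrier := gq (Suc i)\<rparr> = GR\<lparr>carrier := gq (Suc i)\<rparr>" by (simp add: galgrp_def)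
  show "u_idx (fq i) L = idx (GR\<lparr>carrier := gq (Suc i)\<rparr>) HR"
    unfolding u_idx_def asc r[symmetric] using A(6)[folded eq] .
  show "finite_ext (fq i) (fq (Suc i))" using A(8)[folded eq] .
  show "gq (Suc i) \<lhd> GR\<lparr>carrier := gq i\<rparr>" unfolding up using A(1)[folded eq] .
  show "HR \<subseteq> gq (Suc i)" using A(2)[folded eq] .
qed

lemma gq_eq_iff: "gq i = gq j \<longleftrightarrow> fq i = fq j"
  using fq_inv[of i] fq_inv[of j] by metis

lemma gq_dec: "gq (Suc i) \<subseteq> gq i"
proof -
  have "fq i \<subseteq> fq (Suc i)" using maxgal_props(1)[OF step(1)] .
  then show ?thesis using fq_inv[of i] fq_inv[of "Suc i"] aut_mono by metis
qed

lemma gq_finite: "finite (gq i)"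
proof -
  have "gq i \<subseteq> aut LT K" using fq_inv[of i] aut_mono by metis
  then show ?thesis using aut_finite_card[OF feLT order_refl] finite_subset by blast
qed

lemma gq_stable_exists: "\<exists>j. gq (Suc j) = gq j"
proof (rule ccontr)
  assume "\<not> (\<exists>j. gq (Suc j) = gq j)"
  then have ne: "gq (Suc j) \<noteq> gq j" for j by blast
  have "card (gq j) + j \<le> card (gq 0)" for j
  proof (induction j)
    case (Suc j)
    have "gq (Suc j) \<subset> gq j" using gq_dec ne by blast
    then have "card (gq (Suc j)) < card (gq j)" using gq_finite psubset_card_mono by blast
    then show ?case using Suc by simp
  qed simp
  from this[of "Suc (card (gq 0))"] show False by simp
qed

definition kk :: nat where "kk = (LEAST j. gq (Suc j) = gq j)"

lemma kk_stable: "gq (Suc kk) = gq kk"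
  unfolding kk_def using LeastI_ex[OF gq_stable_exists] .

lemma kk_before: "j < kk \<Longrightarrow> gq (Suc j) \<noteq> gq j"
  unfolding kk_def using not_less_Least by blast

lemma kk_le: "gq (Suc j) = gq j \<Longrightarrow> kk \<le> j"
  unfolding kk_def by (rule Least_le)

lemma kk_strict: "j < kk \<Longrightarrow> gq (Suc j) \<subset> gq j"
  using kk_before gq_dec by blast

lemma fq_strict: assumes "j < kk" shows "fq j \<subset> fq (Suc j)"
proof -
  have "fq j \<subseteq> fq (Suc j)" using maxgal_props(1)[OF step(1)[of j]] .
  moreover have "fq j \<noteq> fq (Suc j)" using kk_before[OF assms] gq_eq_iff by metis
  ultimately show ?thesis by blast
qed

definition gsl :: "('a \<Rightarrow> 'a) set list" where "gsl = map gq [0..<Suc kk]"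
definition csl :: "'a set list" where "csl = map fq [0..<Suc kk]"

lemma gsl_len: "length gsl = Suc kk" unfolding gsl_def by simp
lemma csl_len: "length csl = Suc kk" unfolding csl_def by simp
lemma gsl_nth: "i < Suc kk \<Longrightarrow> gsl ! i = gq i" unfolding gsl_def by (simp del: upt_Suc)
lemma csl_nth: "i < Suc kk \<Longrightarrow> csl ! i = fq i" unfolding csl_def by (simp del: upt_Suc)
lemma gsl_last: "last gsl = gq kk"
proof -
  have ne: "gsl \<noteq> []" using gsl_len by auto
  have "last gsl = gsl ! (length gsl - 1)" by (rule last_conv_nth[OF ne])
  then show ?thesis using gsl_nth[of kk] gsl_len by simp
qed
lemma csl_last: "last csl = fq kk"
proof -
  have ne: "csl \<noteq> []" using csl_len by auto
  have "last csl = csl ! (length csl - 1)" by (rule last_conv_nth[OF ne])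
  then show ?thesis using csl_nth[of kk] csl_len by simp
qed

lemma GR_self: "GR\<lparr>carrier := gq 0\<rparr> = GR" by (simp add: galgrp_def)

lemma desc_gsl: "desc_chain GR HR gsl"
proof -
  have a: "gsl \<noteq> []" using gsl_len by auto
  have b: "gsl ! 0 = carrier GR" using gsl_nth[of 0] by simp
  have c: "\<forall>i. Suc i < length gsl \<longrightarrow> gsl ! Suc i = ncl (GR\<lparr>carrier := gsl ! i\<rparr>) HR \<and> gsl ! Suc i \<subset> gsl ! i"
  proof (intro allI impI)
    fix i assume i: "Suc i < length gsl"
    then have ik: "i < kk" using gsl_len by simp
    show "gsl ! Suc i = ncl (GR\<lparr>carrier := gsl ! i\<rparr>) HR \<and> gsl ! Suc i \<subset> gsl ! i"
      using gsl_nth[of i] gsl_nth[of "Suc i"] ik kk_strict[OF ik] by simp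
  qed
  have d: "ncl (GR\<lparr>carrier := last gsl\<rparr>) HR = last gsl" using gsl_last kk_stable by simp
  show ?thesis unfolding desc_chain_def using a b c d by blast
qed

lemma desc_unique:
  assumes d: "desc_chain GR HR gs'"
  shows "gs' = gsl"
proof -
  have ne: "gs' \<noteq> []" and g0: "gs' ! 0 = carrier GR"
    and st: "\<And>i. Suc i < length gs' \<Longrightarrow> gs' ! Suc i = ncl (GR\<lparr>carrier := gs' ! i\<rparr>) HR \<and> gs' ! Suc i \<subset> gs' ! i"
    and la: "ncl (GR\<lparr>carrier := last gs'\<rparr>) HR = last gs'"
    using d unfolding desc_chain_def by auto
  have nth: "gs' ! i = gq i" if "i < length gs'" for i
    using that
  proof (induction i)
    case 0 then show ?case using g0 by simp
  next
    case (Suc i) then show ?case using st[of i] by simp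
  qed
  define n where "n = length gs' - 1"
  have nl: "length gs' = Suc n" using ne unfolding n_def by (cases gs') auto
  have "last gs' = gs' ! (length gs' - 1)" by (rule last_conv_nth[OF ne])
  then have "last gs' = gq n" using nth[of n] nl by simp
  then have "gq (Suc n) = gq n" using la by simp
  then have "kk \<le> n" by (rule kk_le)
  moreover have "\<not> kk < n"
  proof
    assume "kk < n"
    then have "Suc kk < length gs'" using nl by simp
    then have "gs' ! Suc kk \<subset> gs' ! kk" using st by blast
    then show False using nth[of kk] nth[of "Suc kk"] nl \<open>kk < n\<close> kk_stable by simp
  qed
  ultimately have "n = kk" by simp
  then show ?thesis using nth gsl_nth nl gsl_len by (intro nth_equalityI) auto
qed

lemma asc_csl: "asc_chain K L csl"
proof -
  have a: "csl \<noteq> []" using csl_len by auto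
  have b: "csl ! 0 = K" using csl_nth[of 0] fq_K by simp
  have c: "csl ! i \<subset> csl ! Suc i \<and> csl ! Suc i \<subseteq> L \<and> galois_ext (csl ! i) (csl ! Suc i) \<and>
        (\<forall>E. csl ! i \<subseteq> E \<and> E \<subseteq> L \<and> galois_ext (csl ! i) E \<longrightarrow>
              ext_degree (csl ! i) E \<le> ext_degree (csl ! i) (csl ! Suc i))" if i: "Suc i < length csl" for i
  proof (intro conjI)
  have ik: "i < kk" using i csl_len by simp
  have cc: "csl ! i = fq i" "csl ! Suc i = fq (Suc i)" using csl_nth ik by auto
  note mg = step(1)[of i]
  show "csl ! i \<subset> csl ! Suc i" using cc fq_strict[OF ik] by simp
  show "csl ! Suc i \<subseteq> L" using cc maxgal_props(2)[OF mg] by simp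
  show "galois_ext (csl ! i) (csl ! Suc i)" using cc maxgal_props(3)[OF mg] by simp
  show "\<forall>E. csl ! i \<subseteq> E \<and> E \<subseteq> L \<and> galois_ext (csl ! i) E \<longrightarrow>
        ext_degree (csl ! i) E \<le> ext_degree (csl ! i) (csl ! Suc i)"
  proof (intro allI impI)
    fix E assume E: "csl ! i \<subseteq> E \<and> E \<subseteq> L \<and> galois_ext (csl ! i) E"
    then have "E \<subseteq> fq (Suc i)" using maxgal_props(4)[OF mg, of E] cc by simp
    moreover have "is_subfield E" using E unfolding galois_ext_def finite_ext_def by blast
    ultimately show "ext_degree (csl ! i) E \<le> ext_degree (csl ! i) (csl ! Suc i)"
      using degree_mono(1)[OF step(5)[of i]] E cc by simp
  qed
  qed
  have "fq (Suc kk) = fq kk" using kk_stable gq_eq_iff by blast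
  then have "t_idx (fq kk) L = ext_degree (fq kk) (fq kk)"
    unfolding t_idx_def using step(2)[of kk] by simp
  also have "\<dots> = 1" using degree_self fq_inv by blast
  finally have d: "t_idx (last csl) L = 1" using csl_last by simp
  show ?thesis unfolding asc_chain_def using a b c d by blast
qed

lemma asc_unique:
  assumes a: "asc_chain K L cs'"
  shows "cs' = csl"
proof -
  have ne: "cs' \<noteq> []" and c0: "cs' ! 0 = K"
    and st: "\<And>i. Suc i < length cs' \<Longrightarrow>
        cs' ! i \<subset> cs' ! Suc i \<and> cs' ! Suc i \<subseteq> L \<and> galois_ext (cs' ! i) (cs' ! Suc i) \<and>
        (\<forall>E. cs' ! i \<subseteq> E \<and> E \<subseteq> L \<and> galois_ext (cs' ! i) E \<longrightarrow>
              ext_degree (cs' ! i) E \<le> ext_degree (cs' ! i) (cs' ! Suc i))"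
    and la: "t_idx (last cs') L = 1"
    using a unfolding asc_chain_def by auto
  have nth: "cs' ! i = fq i" if "i < length cs'" for i
    using that
  proof (induction i)
    case 0 then show ?case using c0 fq_K by simp
  next
    case (Suc i)
    then have IH: "cs' ! i = fq i" by simp
    note s = st[OF Suc.prems]
    let ?E = "cs' ! Suc i"
    have mg: "maxgal (fq i) L (fq (Suc i))" using step(1) .
    have sub: "?E \<subseteq> fq (Suc i)" using maxgal_props(4)[OF mg, of ?E] s IH by auto
    have "fq i \<subseteq> fq (Suc i) \<and> fq (Suc i) \<subseteq> L \<and> galois_ext (fq i) (fq (Suc i))"
      using maxgal_props(1-3)[OF mg] by blast
    then have le1: "ext_degree (fq i) (fq (Suc i)) \<le> ext_degree (fq i) ?E" using s IH by auto
    have Esf: "is_subfield ?E" using s unfolding galois_ext_def finite_ext_def by blast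
    have FE: "fq i \<subseteq> ?E" using s IH by auto
    have le2: "ext_degree (fq i) ?E \<le> ext_degree (fq i) (fq (Suc i))"
      using degree_mono(1)[OF step(5)[of i] Esf FE sub] .
    have "?E = fq (Suc i)"
      using degree_eq_imp_eq[OF step(5)[of i] Esf FE sub] le1 le2 by simp
    then show ?case .
  qed
  define n where "n = length cs' - 1"
  have nl: "length cs' = Suc n" using ne unfolding n_def by (cases cs') auto
  have "last cs' = cs' ! (length cs' - 1)" by (rule last_conv_nth[OF ne])
  then have "last cs' = fq n" using nth[of n] nl by simp
  then have "ext_degree (fq n) (fq (Suc n)) = 1" using la step(2)[of n] unfolding t_idx_def by simp
  then have "fq (Suc n) = fq n" using degree_one[OF step(5)[of n]] by simp
  then have "gq (Suc n) = gq n" using gq_eq_iff by blast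
  then have "kk \<le> n" by (rule kk_le)
  moreover have "\<not> kk < n"
  proof
    assume "kk < n"
    then have "Suc kk < length cs'" using nl by simp
    then have "cs' ! kk \<subset> cs' ! Suc kk" using st by blast
    then have "fq kk \<noteq> fq (Suc kk)" using nth[of kk] nth[of "Suc kk"] nl \<open>kk < n\<close> by simp
    then show False using kk_stable gq_eq_iff by metis
  qed
  ultimately have "n = kk" by simp
  then show ?thesis using nth csl_nth nl csl_len by (intro nth_equalityI) auto
qed

end


context gsL
begin

lemma HG1: "ncl GR HR = gq (Suc 0)"
proof -
  have e: "GR\<lparr>carrier := aut LT K\<rparr> = GR" by (simp add: galgrp_def)
  show ?thesis by (simp add: e)
qed

lemma fq1: "fix_field LT (ncl GR HR) = fq (Suc 0)" using HG1 by simp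

lemma GRgrp: "group GR" using galgrp_group[OF LTsf] .

lemma HRsub: "subgroup HR GR" using aut_subgroup[OF KL LTsf] .

lemma gq_sub: "subgroup (gq i) GR"
  using fq_inv[of i] aut_subgroup[OF _ LTsf] by metis

lemma self_normal: "subgroup S GR \<Longrightarrow> S \<lhd> GR\<lparr>carrier := S\<rparr>"
  using group.normal_self[OF group.subgroup_imp_group[OF GRgrp]] by fastforce

lemma kk_of_len: "length csl = n \<Longrightarrow> kk = n - 1" using csl_len by simp

lemma fix_HR: "fix_field LT HR = L" using gal_fix_aut[OF gLT order_refl Lsf KL LLT] .

lemma main:
  assumes nontriv: "L \<noteq> K"
  defines "F \<equiv> fix_field LT (ncl GR HR)"
  shows
    "K \<subseteq> F \<and> F \<subseteq> L \<and> galois_ext K F \<and>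
     (\<forall>E. K \<subseteq> E \<and> E \<subseteq> L \<and> galois_ext K E \<longrightarrow> ext_degree K E \<le> ext_degree K F) \<and>
     (\<forall>E. K \<subseteq> E \<and> E \<subseteq> L \<and> galois_ext K E \<and> ext_degree K E = ext_degree K F \<longrightarrow> E = F)
   \<and>
     t_idx K L = ext_degree K F \<and> u_idx K L = ext_degree F L \<and>
     t_idx K L * u_idx K L = ext_degree K L \<and>
     t_idx K L = idx GR (ncl GR HR) \<and> u_idx K L = idx (GR\<lparr>carrier := ncl GR HR\<rparr>) HR \<and>
     cluster_size K L dvd t_idx K L * cluster_size F L
   \<and>
     (\<exists>cs gs.
        asc_chain K L cs \<and> (\<forall>cs'. asc_chain K L cs' \<longrightarrow> cs' = cs) \<and>
        desc_chain GR HR gs \<and> (\<forall>gs'. desc_chain GR HR gs' \<longrightarrow> gs' = gs) \<and>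
        length cs = length gs \<and>
        (\<forall>i < length cs. cs ! i = fix_field LT (gs ! i) \<and>
            t_idx (cs ! i) L = idx (GR\<lparr>carrier := gs ! i\<rparr>) (ncl (GR\<lparr>carrier := gs ! i\<rparr>) HR) \<and>
            u_idx (cs ! i) L = idx (GR\<lparr>carrier := ncl (GR\<lparr>carrier := gs ! i\<rparr>) HR\<rparr>) HR) \<and>
        (last cs = L \<longleftrightarrow> (2 \<le> length cs \<and> galois_ext (cs ! (length cs - 2)) L)) \<and>
        (t_idx K L = 1 \<longleftrightarrow> ncl GR HR = carrier GR) \<and> (ncl GR HR = carrier GR \<longleftrightarrow> cs = [K]) \<and>
        (galois_ext K L \<longleftrightarrow> ncl GR HR = {\<one>\<^bsub>GR\<^esub>}) \<and> (ncl GR HR = {\<one>\<^bsub>GR\<^esub>} \<longleftrightarrow> ncl GR HR = HR) \<and>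
        (ncl GR HR = HR \<longleftrightarrow> cs = [K, L]) \<and>
        ((HR \<lhd> GR\<lparr>carrier := ncl GR HR\<rparr> \<and> HR \<noteq> ncl GR HR) \<longleftrightarrow>
           (ncl GR HR \<noteq> carrier GR \<and> ncl GR HR \<noteq> HR \<and> HR \<lhd> GR\<lparr>carrier := ncl GR HR\<rparr>)) \<and>
        ((ncl GR HR \<noteq> carrier GR \<and> ncl GR HR \<noteq> HR \<and> HR \<lhd> GR\<lparr>carrier := ncl GR HR\<rparr>) \<longleftrightarrow> cs = [K, F, L]))"
proof -
  let ?HG = "ncl GR HR"
  note KA = keyA[OF gLT order_refl Lsf KL LLT, folded F_def]
  have asc: "asc_field K L = F" unfolding asc_field_def Let_def F_def by simp
  have t: "t_idx K L = ext_degree K F" unfolding t_idx_def asc ..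
  have u: "u_idx K L = ext_degree F L" unfolding u_idx_def asc ..
  have mg: "maxgal K L F" using KA(4) .
  have KF: "K \<subseteq> F" and FL: "F \<subseteq> L" and gF: "galois_ext K F" using maxgal_props(1-3)[OF mg] by auto
  have fKF: "finite_ext K F" and fFL: "finite_ext F L" using KA(8,9) by auto
  have F1: "F = fq (Suc 0)" unfolding F_def using fq1 .
  have HG1': "?HG = gq (Suc 0)" using HG1 .
  have one: "\<one>\<^bsub>GR\<^esub> = id" by simp
  have p1: "K \<subseteq> F \<and> F \<subseteq> L \<and> galois_ext K F \<and>
     (\<forall>E. K \<subseteq> E \<and> E \<subseteq> L \<and> galois_ext K E \<longrightarrow> ext_degree K E \<le> ext_degree K F) \<and>
     (\<forall>E. K \<subseteq> E \<and> E \<subseteq> L \<and> galois_ext K E \<and> ext_degree K E = ext_degree K F \<longrightarrow> E = F)"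
  proof (intro conjI allI impI)
    show "K \<subseteq> F" "F \<subseteq> L" "galois_ext K F" using KF FL gF by auto
    fix E assume E: "K \<subseteq> E \<and> E \<subseteq> L \<and> galois_ext K E"
    then have EF: "E \<subseteq> F" using maxgal_props(4)[OF mg] by blast
    have Esf: "is_subfield E" using E unfolding galois_ext_def finite_ext_def by blast
    show "ext_degree K E \<le> ext_degree K F" using degree_mono(1)[OF fKF Esf _ EF] E by blast
  next
    fix E assume E: "K \<subseteq> E \<and> E \<subseteq> L \<and> galois_ext K E \<and> ext_degree K E = ext_degree K F"
    then have EF: "E \<subseteq> F" using maxgal_props(4)[OF mg] by blast
    have Esf: "is_subfield E" using E unfolding galois_ext_def finite_ext_def by blast
    show "E = F" using degree_eq_imp_eq[OF fKF Esf _ EF] E by blast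
  qed
  have p2: "t_idx K L = ext_degree K F \<and> u_idx K L = ext_degree F L \<and>
     t_idx K L * u_idx K L = ext_degree K L \<and>
     t_idx K L = idx GR ?HG \<and> u_idx K L = idx (GR\<lparr>carrier := ?HG\<rparr>) HR \<and>
     cluster_size K L dvd t_idx K L * cluster_size F L"
  proof (intro conjI)
    show "t_idx K L = ext_degree K F" "u_idx K L = ext_degree F L" using t u by auto
    show "t_idx K L * u_idx K L = ext_degree K L" using tower[OF fKF fFL] t u by simp
    show "t_idx K L = idx GR ?HG" using KA(5) t by simp
    show "u_idx K L = idx (GR\<lparr>carrier := ?HG\<rparr>) HR" using KA(6) u by simp
    have "cluster_size K L = card (aut L K)" using cluster_aut[OF ext order_refl] .
    moreover have "cluster_size F L = card (aut L F)" using cluster_aut[OF fFL KF] .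
    ultimately show "cluster_size K L dvd t_idx K L * cluster_size F L"
      using restr_dvd[OF ext gF KF FL] t by simp
  qed
  have g0: "gq 0 = carrier GR" by simp
  have f0: "fq 0 = K" using fq_K .
  have LTL_if: "galois_ext K L \<Longrightarrow> LT = L"
    using gal_closure_props(3)[OF ext order_refl order_refl] LLT by blast
  have gal_HG: "galois_ext K L \<longleftrightarrow> ?HG = {id}"
  proof
    assume g: "galois_ext K L"
    then have "LT = L" using LTL_if by blast
    then have "HR = {id}" using aut_self by simp
    moreover have "{id} \<lhd> GR" using group.one_is_normal[OF GRgrp] by simp
    ultimately show "?HG = {id}" using ncl_normal_eq[OF GRgrp] by simp
  next
    assume "?HG = {id}"
    then have "F = LT" unfolding F_def using fix_field_id by simp
    then have "L = F" using FL LLT by blast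
    then show "galois_ext K L" using gF by simp
  qed
  have HG_HR: "?HG = HR \<Longrightarrow> F = L" unfolding F_def using fix_HR by simp
  have HGid_iff: "?HG = {id} \<longleftrightarrow> ?HG = HR"
  proof
    assume a: "?HG = {id}"
    have "HR \<subseteq> {id}" using KA(2) a by simp
    moreover have "id \<in> HR" using id_aut by blast
    ultimately have "HR = {id}" by auto
    then show "?HG = HR" using a by simp
  next
    assume "?HG = HR"
    then have "F = L" using HG_HR by blast
    then have "galois_ext K L" using gF by simp
    then show "?HG = {id}" using gal_HG by blast
  qed
  have normHR_self: "HR \<lhd> GR\<lparr>carrier := HR\<rparr>" using self_normal[OF HRsub] .
  have ncl_HR_self: "ncl (GR\<lparr>carrier := HR\<rparr>) HR = HR"
    using ncl_normal_eq[OF group.subgroup_imp_group[OF GRgrp HRsub] normHR_self] .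
  have csl1: "kk = 0 \<Longrightarrow> csl = [fq 0]" unfolding csl_def by simp
  have csl2: "kk = Suc 0 \<Longrightarrow> csl = [fq 0, fq (Suc 0)]" unfolding csl_def by simp
  have csl3: "kk = Suc (Suc 0) \<Longrightarrow> csl = [fq 0, fq (Suc 0), fq (Suc (Suc 0))]" unfolding csl_def by simp
  have t1: "t_idx K L = 1 \<longleftrightarrow> ?HG = carrier GR"
  proof
    assume "t_idx K L = 1"
    then have "F = K" using degree_one[OF fKF] t by simp
    then have "fq (Suc 0) = fq 0" using F1 f0 by simp
    then have "gq (Suc 0) = gq 0" using gq_eq_iff by blast
    then show "?HG = carrier GR" using HG1' by simp
  next
    assume "?HG = carrier GR"
    then have "gq (Suc 0) = gq 0" using HG1' by simp
    then have "fq (Suc 0) = fq 0" using gq_eq_iff by blast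
    then have "F = K" using F1 f0 by simp
    then show "t_idx K L = 1" using t degree_self[OF K_sf] by simp
  qed
  have HGG: "?HG = carrier GR \<longleftrightarrow> csl = [K]"
  proof
    assume "?HG = carrier GR"
    then have "gq (Suc 0) = gq 0" using HG1' by simp
    then have "kk = 0" using kk_le[of 0] by simp
    then show "csl = [K]" using csl1 f0 by simp
  next
    assume "csl = [K]"
    then have "kk = 0" using csl_len by simp
    then show "?HG = carrier GR" using kk_stable HG1' by simp
  qed
  have HGHR: "?HG = HR \<longleftrightarrow> csl = [K, L]"
  proof
    assume a: "?HG = HR"
    then have FL': "F = L" using HG_HR by blast
    have "gq (Suc 0) \<noteq> gq 0"
    proof
      assume "gq (Suc 0) = gq 0"
      then have "fq (Suc 0) = fq 0" using gq_eq_iff by blast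
      then show False using F1 FL' f0 nontriv by simp
    qed
    then have k0: "kk \<noteq> 0" using kk_stable by auto
    have "gq (Suc (Suc 0)) = ncl (GR\<lparr>carrier := gq (Suc 0)\<rparr>) HR" by simp
    also have "\<dots> = HR" using a HG1' ncl_HR_self by simp
    also have "\<dots> = gq (Suc 0)" using a HG1' by simp
    finally have "kk \<le> Suc 0" using kk_le by blast
    then have "kk = Suc 0" using k0 by simp
    then show "csl = [K, L]" using csl2 f0 F1 FL' by simp
  next
    assume a: "csl = [K, L]"
    then have k1: "kk = Suc 0" using csl_len by simp
    have "fq (Suc 0) = L" using csl_nth[of "Suc 0"] a k1 by simp
    then have "gq (Suc 0) = HR" using fq_inv[of "Suc 0"] by simp
    then show "?HG = HR" using HG1' by simp
  qed
  have p7a: "(HR \<lhd> GR\<lparr>carrier := ?HG\<rparr> \<and> HR \<noteq> ?HG) \<longleftrightarrow>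
           (?HG \<noteq> carrier GR \<and> ?HG \<noteq> HR \<and> HR \<lhd> GR\<lparr>carrier := ?HG\<rparr>)"
  proof
    assume a: "HR \<lhd> GR\<lparr>carrier := ?HG\<rparr> \<and> HR \<noteq> ?HG"
    have "?HG \<noteq> carrier GR"
    proof
      assume e: "?HG = carrier GR"
      have r: "GR\<lparr>carrier := aut LT K\<rparr> = GR" by (simp add: galgrp_def)
      have "HR \<lhd> GR\<lparr>carrier := ?HG\<rparr>" using a by blast
      then have "HR \<lhd> GR\<lparr>carrier := aut LT K\<rparr>" using e by simp
      then have "HR \<lhd> GR" unfolding r .
      then have "?HG \<subseteq> HR" using ncl_props(3)[OF GRgrp HRsub] by blast
      then show False using a KA(2) by blast
    qed
    then show "?HG \<noteq> carrier GR \<and> ?HG \<noteq> HR \<and> HR \<lhd> GR\<lparr>carrier := ?HG\<rparr>" using a by auto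
  qed auto
  have p7b: "(?HG \<noteq> carrier GR \<and> ?HG \<noteq> HR \<and> HR \<lhd> GR\<lparr>carrier := ?HG\<rparr>) \<longleftrightarrow> csl = [K, F, L]"
  proof
    assume a: "?HG \<noteq> carrier GR \<and> ?HG \<noteq> HR \<and> HR \<lhd> GR\<lparr>carrier := ?HG\<rparr>"
    have HGs: "subgroup ?HG GR" using KA(1) normal_imp_subgroup by blast
    have g1: "gq (Suc 0) \<noteq> gq 0" using a HG1' by simp
    have g2: "gq (Suc (Suc 0)) = HR"
    proof -
      have "gq (Suc (Suc 0)) = ncl (GR\<lparr>carrier := ?HG\<rparr>) HR" using HG1' by simp
      also have "\<dots> = HR" using ncl_normal_eq[OF group.subgroup_imp_group[OF GRgrp HGs]] a by blast
      finally show ?thesis .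
    qed
    have g3: "gq (Suc (Suc (Suc 0))) = HR" using g2 ncl_HR_self by simp
    have "kk \<noteq> 0" using g1 kk_stable by auto
    moreover have "kk \<noteq> Suc 0" using kk_stable g2 a HG1' by auto
    moreover have "kk \<le> Suc (Suc 0)" using kk_le g2 g3 by simp
    ultimately have k2: "kk = Suc (Suc 0)" by simp
    have "fq (Suc (Suc 0)) = L" using g2 fix_HR by simp
    then show "csl = [K, F, L]" using csl3[OF k2] f0 F1 by simp
  next
    assume a: "csl = [K, F, L]"
    then have k2: "kk = Suc (Suc 0)" using csl_len by simp
    have "gq (Suc 0) \<noteq> gq 0" using kk_before[of 0] k2 by simp
    then have n1: "?HG \<noteq> carrier GR" using HG1' by simp
    have "fq (Suc (Suc 0)) = L" using csl_nth[of "Suc (Suc 0)"] a k2 by simp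
    then have g2: "gq (Suc (Suc 0)) = HR" using fq_inv[of "Suc (Suc 0)"] by simp
    have "gq (Suc (Suc 0)) \<noteq> gq (Suc 0)" using kk_before[of "Suc 0"] k2 by simp
    then have n2: "?HG \<noteq> HR" using g2 HG1' by simp
    have "gq (Suc (Suc 0)) \<lhd> GR\<lparr>carrier := gq (Suc 0)\<rparr>" using step(7)[of "Suc 0"] .
    then have "HR \<lhd> GR\<lparr>carrier := ?HG\<rparr>" using g2 HG1' by simp
    then show "?HG \<noteq> carrier GR \<and> ?HG \<noteq> HR \<and> HR \<lhd> GR\<lparr>carrier := ?HG\<rparr>" using n1 n2 by blast
  qed
  have p4: "last csl = L \<longleftrightarrow> (2 \<le> length csl \<and> galois_ext (csl ! (length csl - 2)) L)"
  proof
    assume a: "last csl = L"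
    then have fk: "fq kk = L" using csl_last by simp
    have "kk \<noteq> 0" using fk f0 nontriv by auto
    then obtain j where j: "kk = Suc j" by (cases kk) auto
    have "galois_ext (fq j) (fq (Suc j))" using maxgal_props(3)[OF step(1)[of j]] .
    moreover have "csl ! (length csl - 2) = fq j" using csl_nth[of j] csl_len j by simp
    ultimately show "2 \<le> length csl \<and> galois_ext (csl ! (length csl - 2)) L" using fk j csl_len by simp
  next
    assume a: "2 \<le> length csl \<and> galois_ext (csl ! (length csl - 2)) L"
    then obtain j where j: "kk = Suc j" using csl_len by (cases kk) auto
    have c: "csl ! (length csl - 2) = fq j" using csl_nth[of j] csl_len j by simp
    have "L \<subseteq> fq (Suc j)"
      using maxgal_props(4)[OF step(1)[of j], of L] fq_inv[of j] a c by simp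
    moreover have "fq (Suc j) \<subseteq> L" using fq_inv by blast
    ultimately show "last csl = L" using csl_last j by simp
  qed
  have p3: "\<forall>i < length csl. csl ! i = fix_field LT (gsl ! i) \<and>
            t_idx (csl ! i) L = idx (GR\<lparr>carrier := gsl ! i\<rparr>) (ncl (GR\<lparr>carrier := gsl ! i\<rparr>) HR) \<and>
            u_idx (csl ! i) L = idx (GR\<lparr>carrier := ncl (GR\<lparr>carrier := gsl ! i\<rparr>) HR\<rparr>) HR"
  proof (intro allI impI)
    fix i assume i: "i < length csl"
    then have c: "csl ! i = fq i" "gsl ! i = gq i" using csl_nth gsl_nth csl_len by auto
    show "csl ! i = fix_field LT (gsl ! i) \<and>
            t_idx (csl ! i) L = idx (GR\<lparr>carrier := gsl ! i\<rparr>) (ncl (GR\<lparr>carrier := gsl ! i\<rparr>) HR) \<and>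
            u_idx (csl ! i) L = idx (GR\<lparr>carrier := ncl (GR\<lparr>carrier := gsl ! i\<rparr>) HR\<rparr>) HR"
      using c step(3)[of i] step(4)[of i] by simp
  qed
  have ex: "\<exists>cs gs.
        asc_chain K L cs \<and> (\<forall>cs'. asc_chain K L cs' \<longrightarrow> cs' = cs) \<and>
        desc_chain GR HR gs \<and> (\<forall>gs'. desc_chain GR HR gs' \<longrightarrow> gs' = gs) \<and>
        length cs = length gs \<and>
        (\<forall>i < length cs. cs ! i = fix_field LT (gs ! i) \<and>
            t_idx (cs ! i) L = idx (GR\<lparr>carrier := gs ! i\<rparr>) (ncl (GR\<lparr>carrier := gs ! i\<rparr>) HR) \<and>
            u_idx (cs ! i) L = idx (GR\<lparr>carrier := ncl (GR\<lparr>carrier := gs ! i\<rparr>) HR\<rparr>) HR) \<and>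
        (last cs = L \<longleftrightarrow> (2 \<le> length cs \<and> galois_ext (cs ! (length cs - 2)) L)) \<and>
        (t_idx K L = 1 \<longleftrightarrow> ?HG = carrier GR) \<and> (?HG = carrier GR \<longleftrightarrow> cs = [K]) \<and>
        (galois_ext K L \<longleftrightarrow> ?HG = {\<one>\<^bsub>GR\<^esub>}) \<and> (?HG = {\<one>\<^bsub>GR\<^esub>} \<longleftrightarrow> ?HG = HR) \<and>
        (?HG = HR \<longleftrightarrow> cs = [K, L]) \<and>
        ((HR \<lhd> GR\<lparr>carrier := ?HG\<rparr> \<and> HR \<noteq> ?HG) \<longleftrightarrow>
           (?HG \<noteq> carrier GR \<and> ?HG \<noteq> HR \<and> HR \<lhd> GR\<lparr>carrier := ?HG\<rparr>)) \<and>
        ((?HG \<noteq> carrier GR \<and> ?HG \<noteq> HR \<and> HR \<lhd> GR\<lparr>carrier := ?HG\<rparr>) \<longleftrightarrow> cs = [K, F, L])"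
    apply (rule exI[of _ csl], rule exI[of _ gsl], intro conjI)
    apply (rule asc_csl)
    apply (use asc_unique in blast)
    apply (rule desc_gsl)
    apply (use desc_unique in blast)
    apply (simp only: csl_len gsl_len)
    apply (rule p3)
    apply (rule p4)
    apply (rule t1)
    apply (rule HGG)
    apply (simp only: one gal_HG)
    apply (simp only: one HGid_iff)
    apply (rule HGHR)
    apply (rule p7a)
    apply (rule p7b)
    done
  show ?thesis using p1 p2 ex by (elim conjE) (intro conjI; assumption)
qed

end

lemma gsL_inst: "perfect_subfield K \<Longrightarrow> is_alg_closure_of K \<Longrightarrow> finite_ext K L \<Longrightarrow> gsL K L"
  by (simp add: gsL_def gsL_axioms_def gs_def)

theorem theorem7p5:
  fixes K L :: "'a::field set"
  assumes perfect: "perfect_subfield K"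
    and closure: "is_alg_closure_of K"
    and ext: "finite_ext K L"
    and nontriv: "L \<noteq> K"
  defines "Lt \<equiv> gal_closure K L"
    and "G \<equiv> galgrp (gal_closure K L) K"
    and "H \<equiv> aut (gal_closure K L) L"
    and "HG \<equiv> ncl (galgrp (gal_closure K L) K) (aut (gal_closure K L) L)"
    and "F \<equiv> fix_field (gal_closure K L) (ncl (galgrp (gal_closure K L) K) (aut (gal_closure K L) L))"
  shows
    \<comment> \<open>(1)\<close>
    "K \<subseteq> F \<and> F \<subseteq> L \<and> galois_ext K F \<and>
     (\<forall>E. K \<subseteq> E \<and> E \<subseteq> L \<and> galois_ext K E \<longrightarrow> ext_degree K E \<le> ext_degree K F) \<and>
     (\<forall>E. K \<subseteq> E \<and> E \<subseteq> L \<and> galois_ext K E \<and> ext_degree K E = ext_degree K F \<longrightarrow> E = F)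
   \<and> \<comment> \<open>(2)\<close>
     t_idx K L = ext_degree K F \<and> u_idx K L = ext_degree F L \<and>
     t_idx K L * u_idx K L = ext_degree K L \<and>
     t_idx K L = idx G HG \<and> u_idx K L = idx (G\<lparr>carrier := HG\<rparr>) H \<and>
     cluster_size K L dvd t_idx K L * cluster_size F L
   \<and> \<comment> \<open>(3)--(7)\<close>
     (\<exists>cs gs.
        asc_chain K L cs \<and> (\<forall>cs'. asc_chain K L cs' \<longrightarrow> cs' = cs) \<and>
        desc_chain G H gs \<and> (\<forall>gs'. desc_chain G H gs' \<longrightarrow> gs' = gs) \<and>
        length cs = length gs \<and>
        (\<forall>i < length cs. cs ! i = fix_field Lt (gs ! i) \<and>
            t_idx (cs ! i) L = idx (G\<lparr>carrier := gs ! i\<rparr>) (ncl (G\<lparr>carrier := gs ! i\<rparr>) H) \<and>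
            u_idx (cs ! i) L = idx (G\<lparr>carrier := ncl (G\<lparr>carrier := gs ! i\<rparr>) H\<rparr>) H) \<and>
        \<comment> \<open>(4)\<close>
        (last cs = L \<longleftrightarrow> (2 \<le> length cs \<and> galois_ext (cs ! (length cs - 2)) L)) \<and>
        \<comment> \<open>(5)\<close>
        (t_idx K L = 1 \<longleftrightarrow> HG = carrier G) \<and> (HG = carrier G \<longleftrightarrow> cs = [K]) \<and>
        \<comment> \<open>(6)\<close>
        (galois_ext K L \<longleftrightarrow> HG = {\<one>\<^bsub>G\<^esub>}) \<and> (HG = {\<one>\<^bsub>G\<^esub>} \<longleftrightarrow> HG = H) \<and>
        (HG = H \<longleftrightarrow> cs = [K, L]) \<and>
        \<comment> \<open>(7)\<close>
        ((H \<lhd> G\<lparr>carrier := HG\<rparr> \<and> H \<noteq> HG) \<longleftrightarrow>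
           (HG \<noteq> carrier G \<and> HG \<noteq> H \<and> H \<lhd> G\<lparr>carrier := HG\<rparr>)) \<and>
        ((HG \<noteq> carrier G \<and> HG \<noteq> H \<and> H \<lhd> G\<lparr>carrier := HG\<rparr>) \<longleftrightarrow> cs = [K, F, L]))"
proof -
  interpret gsL K L using gsL_inst[OF perfect closure ext] .
  show ?thesis using main[OF nontriv] unfolding Lt_def G_def H_def HG_def F_def .
qed


end
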